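(* The metric space $(\mathcal{I}_\alpha,d_\alpha)$ is path-connected and separable.
   Context: Fix $\alpha\in(0,1)$. An interval partition is a set $\beta$ of disjoint open subintervals (blocks) of some interval $[0,L]$ that cover $[0,L]$ up to a Lebesgue-null set (the empty partition with $L=0$ included); write $\|\beta\|:=L$ and $\mathrm{Leb}(U)$ for the length of a block $U$. $\beta$ has the $\alpha$-diversity property if for every $t\in[0,\|\beta\|]$ the limit $\mathscr{D}_\beta(t):=\Gamma(1-\alpha)\lim_{h\downarrow0}h^\alpha\#\{(a,b)\in\beta\colon b-a>h,\ b\le t\}$ exists; $\mathcal{I}_\alpha$ is the set of such partitions. For $U\in\beta$, $\mathscr{D}_\beta(U):=\mathscr{D}_\beta(t)$ for $t\in U$; $\mathscr{D}_\beta(\infty):=\mathscr{D}_\beta(\|\beta\|)$. A correspondence between $\beta,\gamma\in\mathcal{I}_\alpha$ is a finite sequence $(U_j,V_j)_{j\in[n]}$, $n\ge0$, of pairs in $\beta\times\gamma$ with $(U_j)_j$ and $(V_j)_j$ each strictly increasing in left-to-right order. Its $\alpha$-distortion is the maximum of $\sum_{j}|\mathrm{Leb}(U_j)-\mathrm{Leb}(V_j)|+\|\beta\|-\sum_j\mathrm{Leb}(U_j)$, $\sum_{j}|\mathrm{Leb}(U_j)-\mathrm{Leb}(V_j)|+\|\gamma\|-\sum_j\mathrm{Leb}(V_j)$, $\sup_j|\mathscr{D}_\beta(U_j)-\mathscr{D}_\gamma(V_j)|$ and $|\mathscr{D}_\beta(\infty)-\mathscr{D}_\gamma(\infty)|$.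 $d_\alpha(\beta,\gamma)$ is the infimum of the $\alpha$-distortion over all correspondences. *)

theory Defs
  imports "HOL-Analysis.Analysis"
begin

text \<open>A block (a,b) stands for the open interval {a<..<b}. An interval partition of [0,L]
 is a set of pairwise disjoint nonempty open subintervals of [0,L] covering [0,L] up to a
 Lebesgue-null set.\<close>

definition IP_of :: "(real \<times> real) set \<Rightarrow> real \<Rightarrow> bool" where
  "IP_of \<beta> L \<longleftrightarrow> 0 \<le> L \<and>
     (\<forall>(a,b)\<in>\<beta>. 0 \<le> a \<and> a < b \<and> b \<le> L) \<and>
     (\<forall>U\<in>\<beta>. \<forall>V\<in>\<beta>. U \<noteq> V \<longrightarrow> {fst U<..<snd U} \<inter> {fst V<..<snd V} = {}) \<and>
     {0..L} - (\<Union>(a,b)\<in>\<beta>. {a<..<b}) \<in> null_sets lborel"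

definition interval_partition :: "(real \<times> real) set \<Rightarrow> bool" where
  "interval_partition \<beta> \<longleftrightarrow> (\<exists>L. IP_of \<beta> L)"

text \<open>The total length ||beta|| (the L with IP_of beta L; it is unique).\<close>
definition IPlen :: "(real \<times> real) set \<Rightarrow> real" where
  "IPlen \<beta> = (THE L. IP_of \<beta> L)"

definition blen :: "real \<times> real \<Rightarrow> real" where
  "blen U = snd U - fst U"

definition div_count :: "(real \<times> real) set \<Rightarrow> real \<Rightarrow> real \<Rightarrow> real" where
  "div_count \<beta> t h = real (card {(a,b)\<in>\<beta>. b - a > h \<and> b \<le> t})"

definition has_diversity :: "real \<Rightarrow> (real \<times> real) set \<Rightarrow> bool" where
  "has_diversity \<alpha> \<beta> \<longleftrightarrow> (\<forall>t\<in>{0..IPlen \<beta>}.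
      \<exists>l. ((\<lambda>h. h powr \<alpha> * div_count \<beta> t h) \<longlongrightarrow> l) (at_right 0))"

definition diversity :: "real \<Rightarrow> (real \<times> real) set \<Rightarrow> real \<Rightarrow> real" where
  "diversity \<alpha> \<beta> t = Gamma (1 - \<alpha>) * Lim (at_right 0) (\<lambda>h. h powr \<alpha> * div_count \<beta> t h)"

text \<open>Diversity of a block U: value at any point of U (we take the midpoint);
  diversity at infinity: value at ||beta||.\<close>
definition div_block :: "real \<Rightarrow> (real \<times> real) set \<Rightarrow> real \<times> real \<Rightarrow> real" where
  "div_block \<alpha> \<beta> U = diversity \<alpha> \<beta> ((fst U + snd U) / 2)"

definition div_inf :: "real \<Rightarrow> (real \<times> real) set \<Rightarrow> real" where
  "div_inf \<alpha> \<beta> = diversity \<alpha> \<beta> (IPlen \<beta>)"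

definition IPalpha :: "real \<Rightarrow> (real \<times> real) set set" where
  "IPalpha \<alpha> = {\<beta>. interval_partition \<beta> \<and> has_diversity \<alpha> \<beta>}"

definition correspondence ::
  "(real \<times> real) set \<Rightarrow> (real \<times> real) set \<Rightarrow> ((real \<times> real) \<times> (real \<times> real)) list \<Rightarrow> bool" where
  "correspondence \<beta> \<gamma> \<sigma> \<longleftrightarrow> (\<forall>(U,V)\<in>set \<sigma>. U \<in> \<beta> \<and> V \<in> \<gamma>) \<and>
     sorted_wrt (\<lambda>(U,V) (U',V'). fst U < fst U' \<and> fst V < fst V') \<sigma>"

definition distortion ::
  "real \<Rightarrow> (real \<times> real) set \<Rightarrow> (real \<times> real) set \<Rightarrow> ((real \<times> real) \<times> (real \<times> real)) list \<Rightarrow> real" where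
  "distortion \<alpha> \<beta> \<gamma> \<sigma> = Max (
     {(\<Sum>(U,V)\<leftarrow>\<sigma>. \<bar>blen U - blen V\<bar>) + IPlen \<beta> - (\<Sum>(U,V)\<leftarrow>\<sigma>. blen U),
      (\<Sum>(U,V)\<leftarrow>\<sigma>. \<bar>blen U - blen V\<bar>) + IPlen \<gamma> - (\<Sum>(U,V)\<leftarrow>\<sigma>. blen V),
      \<bar>div_inf \<alpha> \<beta> - div_inf \<alpha> \<gamma>\<bar>}
     \<union> (\<lambda>(U,V). \<bar>div_block \<alpha> \<beta> U - div_block \<alpha> \<gamma> V\<bar>) ` set \<sigma>)"

definition d_alpha :: "real \<Rightarrow> (real \<times> real) set \<Rightarrow> (real \<times> real) set \<Rightarrow> real" where
  "d_alpha \<alpha> \<beta> \<gamma> = Inf {distortion \<alpha> \<beta> \<gamma> \<sigma> | \<sigma>. correspondence \<beta> \<gamma> \<sigma>}"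

end

theory Submission
  imports Defs
begin

definition blk :: "real \<times> real \<Rightarrow> real set" where
  "blk U = {fst U<..<snd U}"

lemma open_blk[simp]: "open (blk U)" by (simp add: blk_def)
lemma blk_borel[simp, measurable]: "blk U \<in> sets borel" by (simp add: blk_def)
lemma measure_blk: "fst U \<le> snd U \<Longrightarrow> measure lborel (blk U) = blen U"
  by (simp add: blk_def blen_def)
lemma emeasure_blk_fin: "emeasure lborel (blk U) \<noteq> \<infinity>"
  by (cases "fst U \<le> snd U") (auto simp: blk_def)

lemma IP_ofD:
  assumes "IP_of \<beta> L"
  shows "0 \<le> L" "\<And>U. U \<in> \<beta> \<Longrightarrow> 0 \<le> fst U \<and> fst U < snd U \<and> snd U \<le> L"
    "\<And>U V. U \<in> \<beta> \<Longrightarrow> V \<in> \<beta> \<Longrightarrow> U \<noteq> V \<Longrightarrow> blk U \<inter> blk V = {}"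
    "{0..L} - (\<Union>U\<in>\<beta>. blk U) \<in> null_sets lborel"
proof -
  show "0 \<le> L" using assms by (simp add: IP_of_def)
  show "0 \<le> fst U \<and> fst U < snd U \<and> snd U \<le> L" if "U \<in> \<beta>" for U
  proof -
    have "\<forall>(a,b)\<in>\<beta>. 0 \<le> a \<and> a < b \<and> b \<le> L" using assms by (simp add: IP_of_def)
    then have "case U of (a,b) \<Rightarrow> 0 \<le> a \<and> a < b \<and> b \<le> L" using that by blast
    then show ?thesis by (cases U) simp
  qed
  show "blk U \<inter> blk V = {}" if "U \<in> \<beta>" "V \<in> \<beta>" "U \<noteq> V" for U V
  proof -
    have "\<forall>U\<in>\<beta>. \<forall>V\<in>\<beta>. U \<noteq> V \<longrightarrow> {fst U<..<snd U} \<inter> {fst V<..<snd V} = {}"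
      using assms by (simp add: IP_of_def)
    then show ?thesis using that unfolding blk_def by blast
  qed
  have "(\<Union>(a,b)\<in>\<beta>. {a<..<b}) = (\<Union>U\<in>\<beta>. blk U)" by (auto simp: blk_def)
  moreover have "{0..L} - (\<Union>(a,b)\<in>\<beta>. {a<..<b}) \<in> null_sets lborel"
    using assms by (simp add: IP_of_def)
  ultimately show "{0..L} - (\<Union>U\<in>\<beta>. blk U) \<in> null_sets lborel" by simp
qed

lemma IP_ofI:
  assumes "0 \<le> L" "\<And>U. U \<in> \<beta> \<Longrightarrow> 0 \<le> fst U \<and> fst U < snd U \<and> snd U \<le> L"
    "\<And>U V. U \<in> \<beta> \<Longrightarrow> V \<in> \<beta> \<Longrightarrow> U \<noteq> V \<Longrightarrow> blk U \<inter> blk V = {}"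
    "{0..L} - (\<Union>U\<in>\<beta>. blk U) \<in> null_sets lborel"
  shows "IP_of \<beta> L"
proof -
  have e: "(\<Union>(a,b)\<in>\<beta>. {a<..<b}) = (\<Union>U\<in>\<beta>. blk U)" by (auto simp: blk_def)
  have 1: "\<forall>(a,b)\<in>\<beta>. 0 \<le> a \<and> a < b \<and> b \<le> L" using assms(2) by auto
  have 2: "\<forall>U\<in>\<beta>. \<forall>V\<in>\<beta>. U \<noteq> V \<longrightarrow> {fst U<..<snd U} \<inter> {fst V<..<snd V} = {}"
    using assms(3) unfolding blk_def by blast
  show ?thesis unfolding IP_of_def using assms(1,4) 1 2 e by simp
qed

lemma IP_of_unique:
  assumes "IP_of \<beta> L" "IP_of \<beta> L'" shows "L = L'"
proof (rule ccontr)
  assume "L \<noteq> L'"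
  then obtain A B where AB: "IP_of \<beta> A" "IP_of \<beta> B" "A < B"
    using assms by (metis linorder_neqE)
  have sub: "{A<..<B} \<subseteq> {0..B} - (\<Union>U\<in>\<beta>. blk U)"
  proof
    fix x assume x: "x \<in> {A<..<B}"
    have "x \<notin> blk U" if "U \<in> \<beta>" for U
      using IP_ofD(2)[OF AB(1) that] x by (simp add: blk_def)
    then show "x \<in> {0..B} - (\<Union>U\<in>\<beta>. blk U)" using x IP_ofD(1)[OF AB(1)] by auto
  qed
  have "{A<..<B} \<in> null_sets lborel"
    using null_sets_subset[OF IP_ofD(4)[OF AB(2)] _ sub] by simp
  then show False using AB(3) by (simp add: null_sets_def)
qed

lemma IPlen_eq: "IP_of \<beta> L \<Longrightarrow> IPlen \<beta> = L"
  unfolding IPlen_def using IP_of_unique by blast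


lemma sum_blen_le:
  assumes "finite F" "\<And>U. U \<in> F \<Longrightarrow> a \<le> fst U \<and> fst U \<le> snd U \<and> snd U \<le> b"
    "\<And>U V. U \<in> F \<Longrightarrow> V \<in> F \<Longrightarrow> U \<noteq> V \<Longrightarrow> blk U \<inter> blk V = {}" "a \<le> b"
  shows "(\<Sum>U\<in>F. blen U) \<le> b - a"
proof -
  have "measure lborel (\<Union>U\<in>F. blk U) = (\<Sum>U\<in>F. measure lborel (blk U))"
  proof (rule measure_finite_Union)
    show "finite F" by (rule assms(1))
    show "blk ` F \<subseteq> sets lborel" by auto
    show "disjoint_family_on blk F" using assms(3) unfolding disjoint_family_on_def by blast
    show "\<And>i. i \<in> F \<Longrightarrow> emeasure lborel (blk i) \<noteq> \<infinity>" by (rule emeasure_blk_fin)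
  qed
  also have "\<dots> = (\<Sum>U\<in>F. blen U)" using assms(2) by (intro sum.cong refl) (simp add: measure_blk)
  finally have e: "measure lborel (\<Union>U\<in>F. blk U) = (\<Sum>U\<in>F. blen U)" .
  have sub: "(\<Union>U\<in>F. blk U) \<subseteq> {a..b}"
  proof
    fix x assume "x \<in> (\<Union>U\<in>F. blk U)"
    then obtain U where "U \<in> F" "x \<in> blk U" by blast
    then show "x \<in> {a..b}" using assms(2)[of U] by (simp add: blk_def)
  qed
  have "measure lborel (\<Union>U\<in>F. blk U) \<le> measure lborel {a..b}"
  proof (rule measure_mono_fmeasurable[OF sub])
    show "(\<Union>U\<in>F. blk U) \<in> sets lborel" by (auto intro!: borel_open)
    show "{a..b} \<in> fmeasurable lborel" using assms(4) by (simp add: fmeasurable_def)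
  qed
  then show ?thesis using e assms(4) by simp
qed

lemma IP_sum_le:
  assumes "IP_of \<beta> L" "finite F" "F \<subseteq> \<beta>"
  shows "(\<Sum>U\<in>F. blen U) \<le> L"
proof -
  have "(\<Sum>U\<in>F. blen U) \<le> L - 0"
  proof (rule sum_blen_le[OF assms(2)])
    show "0 \<le> fst U \<and> fst U \<le> snd U \<and> snd U \<le> L" if "U \<in> F" for U
      using IP_ofD(2)[OF assms(1), of U] that assms(3) by auto
    show "blk U \<inter> blk V = {}" if "U \<in> F" "V \<in> F" "U \<noteq> V" for U V
      using IP_ofD(3)[OF assms(1), of U V] that assms(3) by auto
    show "0 \<le> L" by (rule IP_ofD(1)[OF assms(1)])
  qed
  then show ?thesis by simp
qed

lemma blen_pos: "IP_of \<beta> L \<Longrightarrow> U \<in> \<beta> \<Longrightarrow> 0 < blen U"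
  using IP_ofD(2) by (simp add: blen_def)

lemma finite_big:
  assumes "IP_of \<beta> L" "0 < h"
  shows "finite {U\<in>\<beta>. h < blen U}"
proof -
  have "card G \<le> nat \<lfloor>L / h\<rfloor>" if "G \<subseteq> {U\<in>\<beta>. h < blen U}" "finite G" for G
  proof -
    have "real (card G) * h = (\<Sum>U\<in>G. h)" by simp
    also have "\<dots> \<le> (\<Sum>U\<in>G. blen U)" using that by (intro sum_mono) auto
    also have "\<dots> \<le> L" using IP_sum_le[OF assms(1) that(2)] that(1) by auto
    finally have "real (card G) \<le> L / h" using assms(2) by (simp add: field_simps)
    then show ?thesis by linarith
  qed
  then show ?thesis using finite_if_finite_subsets_card_bdd by blast
qed

lemma finite_div_set:
  assumes "IP_of \<beta> L" "0 < h"
  shows "finite {(a,b)\<in>\<beta>. b - a > h \<and> b \<le> t}"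
  by (rule finite_subset[OF _ finite_big[OF assms]]) (auto simp: blen_def)

lemma measure_Union_blocks:
  assumes "IP_of \<beta> L"
  shows "measure lborel (\<Union>U\<in>\<beta>. blk U) = L"
proof -
  let ?B = "\<Union>U\<in>\<beta>. blk U"
  have sub: "?B \<subseteq> {0..L}" using IP_ofD(2)[OF assms] by (force simp: blk_def)
  have "?B \<union> ({0..L} - ?B) = {0..L}" using sub by blast
  moreover have "measure lborel (?B \<union> ({0..L} - ?B)) = measure lborel ?B"
    using IP_ofD(4)[OF assms] by (intro measure_Un_null_set) (auto intro!: borel_open)
  ultimately show ?thesis using IP_ofD(1)[OF assms] by simp
qed

lemma coverage:
  assumes "IP_of \<beta> L" "0 < \<eta>"
  shows "\<exists>F. finite F \<and> F \<subseteq> \<beta> \<and> L - \<eta> < (\<Sum>U\<in>F. blen U)"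
proof -
  define F where "F n = {U\<in>\<beta>. 1 / (real n + 1) < blen U}" for n :: nat
  define A where "A n = (\<Union>U\<in>F n. blk U)" for n
  have finF: "finite (F n)" for n unfolding F_def by (rule finite_big[OF assms(1)]) simp
  have mA: "measure lborel (A n) = (\<Sum>U\<in>F n. blen U)" for n
  proof -
    have "measure lborel (A n) = (\<Sum>U\<in>F n. measure lborel (blk U))"
      unfolding A_def
    proof (rule measure_finite_Union)
      show "finite (F n)" by (rule finF)
      show "blk ` F n \<subseteq> sets lborel" by auto
      show "disjoint_family_on blk (F n)" using IP_ofD(3)[OF assms(1)]
        unfolding disjoint_family_on_def F_def by blast
      show "\<And>i. i \<in> F n \<Longrightarrow> emeasure lborel (blk i) \<noteq> \<infinity>" by (rule emeasure_blk_fin)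
    qed
    also have "\<dots> = (\<Sum>U\<in>F n. blen U)"
    proof (rule sum.cong[OF refl])
      fix U assume "U \<in> F n"
      then have "fst U \<le> snd U" using IP_ofD(2)[OF assms(1), of U] by (auto simp: F_def)
      then show "measure lborel (blk U) = blen U" by (rule measure_blk)
    qed
    finally show ?thesis .
  qed
  have inc: "incseq A"
  proof (rule incseq_SucI)
    fix n
    have "1 / (real (Suc n) + 1) \<le> 1 / (real n + 1)" by (simp add: frac_le)
    then have "F n \<subseteq> F (Suc n)" unfolding F_def by auto
    then show "A n \<subseteq> A (Suc n)" unfolding A_def by blast
  qed
  have UA: "(\<Union>n. A n) = (\<Union>U\<in>\<beta>. blk U)"
  proof
    show "(\<Union>n. A n) \<subseteq> (\<Union>U\<in>\<beta>. blk U)" unfolding A_def F_def by blast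
    show "(\<Union>U\<in>\<beta>. blk U) \<subseteq> (\<Union>n. A n)"
    proof
      fix x assume "x \<in> (\<Union>U\<in>\<beta>. blk U)"
      then obtain U where U: "U \<in> \<beta>" "x \<in> blk U" by blast
      have "0 < blen U" using blen_pos[OF assms(1) U(1)] .
      then obtain n :: nat where "1 / (real n + 1) < blen U"
        by (metis nat_approx_posE of_nat_Suc add.commute)
      then show "x \<in> (\<Union>n. A n)" using U unfolding A_def F_def by blast
    qed
  qed
  have "(\<lambda>n. measure lborel (A n)) \<longlonglongrightarrow> measure lborel (\<Union>n. A n)"
  proof (rule Lim_measure_incseq)
    show "range A \<subseteq> sets lborel" unfolding A_def by (auto intro!: borel_open)
    show "incseq A" by (rule inc)
    have "(\<Union>n. A n) \<subseteq> {0..L}" unfolding UA using IP_ofD(2)[OF assms(1)] by (force simp: blk_def)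
    then have "emeasure lborel (\<Union>n. A n) \<le> emeasure lborel {0..L}"
      by (intro emeasure_mono) auto
    moreover have "emeasure lborel {0..L} < \<infinity>" using IP_ofD(1)[OF assms(1)] by simp
    ultimately have "emeasure lborel (\<Union>n. A n) < \<infinity>" by (rule le_less_trans)
    then show "emeasure lborel (\<Union>n. A n) \<noteq> \<infinity>" by simp
  qed
  then have "(\<lambda>n. measure lborel (A n)) \<longlonglongrightarrow> L" using UA measure_Union_blocks[OF assms(1)] by simp
  then have "eventually (\<lambda>n. L - \<eta> < measure lborel (A n)) sequentially"
    using assms(2) by (intro order_tendstoD) auto
  then obtain n where "L - \<eta> < measure lborel (A n)" by (meson eventually_sequentially order_refl)
  then show ?thesis using mA finF by (intro exI[of _ "F n"]) (auto simp: F_def)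
qed

lemma fst_inj:
  assumes "IP_of \<beta> L" "U \<in> \<beta>" "V \<in> \<beta>" "fst U = fst V"
  shows "U = V"
proof (rule ccontr)
  assume ne: "U \<noteq> V"
  have u: "fst U < snd U" and v: "fst V < snd V" using IP_ofD(2)[OF assms(1)] assms(2,3) by auto
  define x where "x = fst U + min (snd U - fst U) (snd V - fst V) / 2"
  have "x \<in> blk U" "x \<in> blk V" using u v assms(4) by (auto simp: x_def blk_def min_def field_simps)
  then show False using IP_ofD(3)[OF assms(1) assms(2,3) ne] by blast
qed

lemma left_of:
  assumes "IP_of \<beta> L" "U \<in> \<beta>" "V \<in> \<beta>" "fst V < fst U"
  shows "snd V \<le> fst U"
proof (rule ccontr)
  assume "\<not> snd V \<le> fst U"
  then have lt: "fst U < snd V" by simp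
  have ne: "U \<noteq> V" using assms(4) by auto
  have u: "fst U < snd U" using IP_ofD(2)[OF assms(1)] assms(2) by auto
  define x where "x = fst U + min (snd U - fst U) (snd V - fst U) / 2"
  have "x \<in> blk U" "x \<in> blk V" using u lt assms(4) by (auto simp: x_def blk_def min_def field_simps)
  then show False using IP_ofD(3)[OF assms(1) assms(2,3) ne] by blast
qed

definition chain :: "((real \<times> real) \<times> (real \<times> real)) set \<Rightarrow> bool" where
  "chain S \<longleftrightarrow> (\<forall>p\<in>S. \<forall>q\<in>S. p \<noteq> q \<longrightarrow>
     (fst (fst p) < fst (fst q) \<and> fst (snd p) < fst (snd q)) \<or>
     (fst (fst q) < fst (fst p) \<and> fst (snd q) < fst (snd p)))"

definition good :: "(real \<times> real) set \<Rightarrow> (real \<times> real) set \<Rightarrow> ((real \<times> real) \<times> (real \<times> real)) set \<Rightarrow> bool" where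
  "good \<beta> \<gamma> S \<longleftrightarrow> finite S \<and> S \<subseteq> \<beta> \<times> \<gamma> \<and> chain S"

definition distS :: "real \<Rightarrow> (real \<times> real) set \<Rightarrow> (real \<times> real) set \<Rightarrow> ((real \<times> real) \<times> (real \<times> real)) set \<Rightarrow> real" where
  "distS \<alpha> \<beta> \<gamma> S = Max (
     {(\<Sum>p\<in>S. \<bar>blen (fst p) - blen (snd p)\<bar>) + IPlen \<beta> - (\<Sum>p\<in>S. blen (fst p)),
      (\<Sum>p\<in>S. \<bar>blen (fst p) - blen (snd p)\<bar>) + IPlen \<gamma> - (\<Sum>p\<in>S. blen (snd p)),
      \<bar>div_inf \<alpha> \<beta> - div_inf \<alpha> \<gamma>\<bar>}
     \<union> (\<lambda>p. \<bar>div_block \<alpha> \<beta> (fst p) - div_block \<alpha> \<gamma> (snd p)\<bar>) ` S)"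

lemma chainD:
  assumes "chain S" "p \<in> S" "q \<in> S" "p \<noteq> q"
  shows "(fst (fst p) < fst (fst q) \<and> fst (snd p) < fst (snd q)) \<or>
     (fst (fst q) < fst (fst p) \<and> fst (snd q) < fst (snd p))"
  using assms unfolding chain_def by blast

lemma chain_iff:
  assumes "chain S" "p \<in> S" "q \<in> S"
  shows "fst (fst p) < fst (fst q) \<longleftrightarrow> fst (snd p) < fst (snd q)"
proof (cases "p = q")
  case True then show ?thesis by simp
next
  case False
  from chainD[OF assms False] show ?thesis by linarith
qed

lemma chain_inj1: "chain S \<Longrightarrow> inj_on fst S"
proof (rule inj_onI)
  fix p q assume a: "chain S" "p \<in> S" "q \<in> S" "fst p = fst q"
  show "p = q"
  proof (rule ccontr)
    assume "p \<noteq> q"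
    from chainD[OF a(1-3) this] a(4) show False by auto
  qed
qed

lemma chain_inj2: "chain S \<Longrightarrow> inj_on snd S"
proof (rule inj_onI)
  fix p q assume a: "chain S" "p \<in> S" "q \<in> S" "snd p = snd q"
  show "p = q"
  proof (rule ccontr)
    assume "p \<noteq> q"
    from chainD[OF a(1-3) this] a(4) show False by auto
  qed
qed

lemma chain_subset: "chain S \<Longrightarrow> T \<subseteq> S \<Longrightarrow> chain T"
  unfolding chain_def by blast

lemma good_subset: "good \<beta> \<gamma> S \<Longrightarrow> T \<subseteq> S \<Longrightarrow> good \<beta> \<gamma> T"
  unfolding good_def using chain_subset finite_subset by blast

lemma good_empty: "good \<beta> \<gamma> {}"
  by (simp add: good_def chain_def)

lemma distS_fin: "finite S \<Longrightarrow> finite ({a, b, c} \<union> (f ` S))"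
  by simp

lemma distS_ge:
  assumes "finite S"
  shows "(\<Sum>p\<in>S. \<bar>blen (fst p) - blen (snd p)\<bar>) + IPlen \<beta> - (\<Sum>p\<in>S. blen (fst p)) \<le> distS \<alpha> \<beta> \<gamma> S"
    "(\<Sum>p\<in>S. \<bar>blen (fst p) - blen (snd p)\<bar>) + IPlen \<gamma> - (\<Sum>p\<in>S. blen (snd p)) \<le> distS \<alpha> \<beta> \<gamma> S"
    "\<bar>div_inf \<alpha> \<beta> - div_inf \<alpha> \<gamma>\<bar> \<le> distS \<alpha> \<beta> \<gamma> S"
    "\<And>p. p \<in> S \<Longrightarrow> \<bar>div_block \<alpha> \<beta> (fst p) - div_block \<alpha> \<gamma> (snd p)\<bar> \<le> distS \<alpha> \<beta> \<gamma> S"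
  unfolding distS_def
     apply (rule Max_ge, simp add: assms, simp)
    apply (rule Max_ge, simp add: assms, simp)
   apply (rule Max_ge, simp add: assms, simp)
  apply (rule Max_ge, simp add: assms, simp)
  done

lemma distS_nonneg: "finite S \<Longrightarrow> 0 \<le> distS \<alpha> \<beta> \<gamma> S"
  using distS_ge(3)[of S] abs_ge_zero order_trans by blast

lemma distS_le:
  assumes "finite S"
    "(\<Sum>p\<in>S. \<bar>blen (fst p) - blen (snd p)\<bar>) + IPlen \<beta> - (\<Sum>p\<in>S. blen (fst p)) \<le> c"
    "(\<Sum>p\<in>S. \<bar>blen (fst p) - blen (snd p)\<bar>) + IPlen \<gamma> - (\<Sum>p\<in>S. blen (snd p)) \<le> c"
    "\<bar>div_inf \<alpha> \<beta> - div_inf \<alpha> \<gamma>\<bar> \<le> c"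
    "\<And>p. p \<in> S \<Longrightarrow> \<bar>div_block \<alpha> \<beta> (fst p) - div_block \<alpha> \<gamma> (snd p)\<bar> \<le> c"
  shows "distS \<alpha> \<beta> \<gamma> S \<le> c"
  unfolding distS_def using assms by (subst Max_le_iff) auto

lemma sorted_wrt_distinct_irrefl:
  assumes "sorted_wrt R xs" "\<And>x. \<not> R x x"
  shows "distinct xs"
  using assms by (induction xs) auto

lemma sorted_chain:
  assumes "sorted_wrt (\<lambda>(U,V) (U',V'). fst U < fst U' \<and> fst V < fst V') \<sigma>"
  shows "chain (set \<sigma>)"
  using assms
proof (induction \<sigma>)
  case Nil then show ?case by (simp add: chain_def)
next
  case (Cons x xs)
  then have ch: "chain (set xs)" and r: "\<forall>y\<in>set xs. fst (fst x) < fst (fst y) \<and> fst (snd x) < fst (snd y)"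
    by (auto simp: split_def)
  show ?case unfolding chain_def
  proof (intro ballI impI)
    fix p q assume pq: "p \<in> set (x # xs)" "q \<in> set (x # xs)" "p \<noteq> q"
    show "(fst (fst p) < fst (fst q) \<and> fst (snd p) < fst (snd q)) \<or>
       (fst (fst q) < fst (fst p) \<and> fst (snd q) < fst (snd p))"
    proof (cases "p = x")
      case True then show ?thesis using pq r by auto
    next
      case False
      show ?thesis
      proof (cases "q = x")
        case True then show ?thesis using pq r False by auto
      next
        case False2: False
        then show ?thesis using chainD[OF ch _ _ pq(3)] pq False by simp
      qed
    qed
  qed
qed

lemma corr_good:
  assumes "correspondence \<beta> \<gamma> \<sigma>"
  shows "good \<beta> \<gamma> (set \<sigma>)" "distortion \<alpha> \<beta> \<gamma> \<sigma> = distS \<alpha> \<beta> \<gamma> (set \<sigma>)"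
proof -
  have sw: "sorted_wrt (\<lambda>(U,V) (U',V'). fst U < fst U' \<and> fst V < fst V') \<sigma>"
    using assms by (simp add: correspondence_def)
  have "set \<sigma> \<subseteq> \<beta> \<times> \<gamma>" using assms by (auto simp: correspondence_def)
  then show "good \<beta> \<gamma> (set \<sigma>)" using sorted_chain[OF sw] by (simp add: good_def)
  have d: "distinct \<sigma>" by (rule sorted_wrt_distinct_irrefl[OF sw]) auto
  show "distortion \<alpha> \<beta> \<gamma> \<sigma> = distS \<alpha> \<beta> \<gamma> (set \<sigma>)"
    unfolding distortion_def distS_def sum_list_distinct_conv_sum_set[OF d]
    by (simp add: split_def)
qed

lemma good_corr:
  assumes "good \<beta> \<gamma> S"
  shows "\<exists>\<sigma>. correspondence \<beta> \<gamma> \<sigma> \<and> set \<sigma> = S"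
proof -
  have "finite S" using assms by (simp add: good_def)
  then show ?thesis using assms
  proof (induction S rule: finite_psubset_induct)
    case (psubset S)
    show ?case
    proof (cases "S = {}")
      case True then show ?thesis by (intro exI[of _ "[]"]) (simp add: correspondence_def)
    next
      case False
      define m where "m = Min ((\<lambda>p. fst (fst p)) ` S)"
      have "m \<in> (\<lambda>p. fst (fst p)) ` S" unfolding m_def using psubset(1) False by (intro Min_in) auto
      then obtain p where p: "p \<in> S" "fst (fst p) = m" by auto
      have pmin: "m \<le> fst (fst q)" if "q \<in> S" for q unfolding m_def using psubset(1) that by auto
      have g: "good \<beta> \<gamma> (S - {p})" using good_subset[OF psubset(3)] by blast
      obtain \<sigma> where \<sigma>: "correspondence \<beta> \<gamma> \<sigma>" "set \<sigma> = S - {p}"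
        using psubset(2)[OF _ g] p(1) by blast
      have ch: "chain S" using psubset(3) by (simp add: good_def)
      have rel: "fst (fst p) < fst (fst q) \<and> fst (snd p) < fst (snd q)" if "q \<in> set \<sigma>" for q
      proof -
        have q: "q \<in> S" "q \<noteq> p" using that \<sigma>(2) by auto
        then show ?thesis using chainD[OF ch p(1) q(1)] p(2) pmin[OF q(1)] by auto
      qed
      have "p \<in> \<beta> \<times> \<gamma>" using psubset(3) p(1) by (auto simp: good_def)
      then have "correspondence \<beta> \<gamma> (p # \<sigma>)"
        using \<sigma>(1) rel unfolding correspondence_def by (auto simp: split_def)
      moreover have "set (p # \<sigma>) = S" using \<sigma>(2) p(1) by auto
      ultimately show ?thesis by blast
    qed
  qed
qed

lemma d_alpha_good: "d_alpha \<alpha> \<beta> \<gamma> = Inf {distS \<alpha> \<beta> \<gamma> S | S. good \<beta> \<gamma> S}"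
proof -
  have "{distortion \<alpha> \<beta> \<gamma> \<sigma> | \<sigma>. correspondence \<beta> \<gamma> \<sigma>} = {distS \<alpha> \<beta> \<gamma> S | S. good \<beta> \<gamma> S}"
  proof (intro equalityI subsetI)
    fix x assume "x \<in> {distortion \<alpha> \<beta> \<gamma> \<sigma> | \<sigma>. correspondence \<beta> \<gamma> \<sigma>}"
    then obtain \<sigma> where s: "correspondence \<beta> \<gamma> \<sigma>" "x = distortion \<alpha> \<beta> \<gamma> \<sigma>" by blast
    have "x = distS \<alpha> \<beta> \<gamma> (set \<sigma>)" using s corr_good(2)[OF s(1)] by simp
    moreover have "good \<beta> \<gamma> (set \<sigma>)" by (rule corr_good(1)[OF s(1)])
    ultimately show "x \<in> {distS \<alpha> \<beta> \<gamma> S | S. good \<beta> \<gamma> S}" by blast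
  next
    fix x assume "x \<in> {distS \<alpha> \<beta> \<gamma> S | S. good \<beta> \<gamma> S}"
    then obtain S where "good \<beta> \<gamma> S" "x = distS \<alpha> \<beta> \<gamma> S" by blast
    then have xS: "x = distS \<alpha> \<beta> \<gamma> S" by simp
    obtain \<sigma> where s: "correspondence \<beta> \<gamma> \<sigma>" "set \<sigma> = S" using good_corr \<open>good \<beta> \<gamma> S\<close> by blast
    have "x = distortion \<alpha> \<beta> \<gamma> \<sigma>" using xS corr_good(2)[OF s(1)] s(2) by simp
    then show "x \<in> {distortion \<alpha> \<beta> \<gamma> \<sigma> | \<sigma>. correspondence \<beta> \<gamma> \<sigma>}"
      using s(1) by blast
  qed
  then show ?thesis unfolding d_alpha_def by simp
qed

lemma distS_set_nonneg: "x \<in> {distS \<alpha> \<beta> \<gamma> S | S. good \<beta> \<gamma> S} \<Longrightarrow> 0 \<le> x"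
proof -
  assume "x \<in> {distS \<alpha> \<beta> \<gamma> S | S. good \<beta> \<gamma> S}"
  then obtain S where "good \<beta> \<gamma> S" "x = distS \<alpha> \<beta> \<gamma> S" by blast
  then show "0 \<le> x" using distS_nonneg[of S] by (simp add: good_def)
qed

lemma d_alpha_nonneg: "0 \<le> d_alpha \<alpha> \<beta> \<gamma>"
  unfolding d_alpha_good
proof (rule cInf_greatest)
  show "{distS \<alpha> \<beta> \<gamma> S | S. good \<beta> \<gamma> S} \<noteq> {}" using good_empty by blast
  show "\<And>x. x \<in> {distS \<alpha> \<beta> \<gamma> S | S. good \<beta> \<gamma> S} \<Longrightarrow> 0 \<le> x" by (rule distS_set_nonneg)
qed

lemma d_alpha_le: "good \<beta> \<gamma> S \<Longrightarrow> d_alpha \<alpha> \<beta> \<gamma> \<le> distS \<alpha> \<beta> \<gamma> S"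
  unfolding d_alpha_good
proof (rule cInf_lower)
  assume "good \<beta> \<gamma> S"
  then show "distS \<alpha> \<beta> \<gamma> S \<in> {distS \<alpha> \<beta> \<gamma> S | S. good \<beta> \<gamma> S}" by blast
  show "bdd_below {distS \<alpha> \<beta> \<gamma> S | S. good \<beta> \<gamma> S}"
    by (rule bdd_belowI[of _ 0]) (rule distS_set_nonneg)
qed

lemma d_alpha_lessD:
  assumes "d_alpha \<alpha> \<beta> \<gamma> < e"
  shows "\<exists>S. good \<beta> \<gamma> S \<and> distS \<alpha> \<beta> \<gamma> S < e"
proof -
  have "{distS \<alpha> \<beta> \<gamma> S | S. good \<beta> \<gamma> S} \<noteq> {}" using good_empty by blast
  from cInf_lessD[OF this] assms show ?thesis unfolding d_alpha_good by blast
qed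

lemma swap_good: "good \<beta> \<gamma> S \<Longrightarrow> good \<gamma> \<beta> (prod.swap ` S)"
proof -
  assume g: "good \<beta> \<gamma> S"
  have "chain (prod.swap ` S)" unfolding chain_def
  proof (intro ballI impI)
    fix p' q' assume a: "p' \<in> prod.swap ` S" "q' \<in> prod.swap ` S" "p' \<noteq> q'"
    then obtain p q where pq: "p \<in> S" "q \<in> S" "p' = prod.swap p" "q' = prod.swap q" by blast
    then have "p \<noteq> q" using a(3) by blast
    from chainD[OF _ pq(1,2) this] g have "(fst (fst p) < fst (fst q) \<and> fst (snd p) < fst (snd q)) \<or>
     (fst (fst q) < fst (fst p) \<and> fst (snd q) < fst (snd p))" by (simp add: good_def)
    then show "(fst (fst p') < fst (fst q') \<and> fst (snd p') < fst (snd q')) \<or>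
     (fst (fst q') < fst (fst p') \<and> fst (snd q') < fst (snd p'))" using pq(3,4) by auto
  qed
  moreover have "prod.swap ` S \<subseteq> \<gamma> \<times> \<beta>" using g by (auto simp: good_def)
  moreover have "finite (prod.swap ` S)" using g by (simp add: good_def)
  ultimately show ?thesis by (simp add: good_def)
qed

lemma distS_swap: "finite S \<Longrightarrow> distS \<alpha> \<gamma> \<beta> (prod.swap ` S) = distS \<alpha> \<beta> \<gamma> S"
proof -
  assume f: "finite S"
  have inj: "inj_on prod.swap S" by (rule inj_onI) (metis swap_swap)
  have s1: "(\<Sum>p\<in>prod.swap ` S. \<bar>blen (fst p) - blen (snd p)\<bar>) = (\<Sum>p\<in>S. \<bar>blen (fst p) - blen (snd p)\<bar>)"
    by (subst sum.reindex[OF inj]) (simp add: abs_minus_commute)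
  have s2: "(\<Sum>p\<in>prod.swap ` S. blen (fst p)) = (\<Sum>p\<in>S. blen (snd p))"
    by (subst sum.reindex[OF inj]) simp
  have s3: "(\<Sum>p\<in>prod.swap ` S. blen (snd p)) = (\<Sum>p\<in>S. blen (fst p))"
    by (subst sum.reindex[OF inj]) simp
  have i: "(\<lambda>p. \<bar>div_block \<alpha> \<gamma> (fst p) - div_block \<alpha> \<beta> (snd p)\<bar>) ` prod.swap ` S
      = (\<lambda>p. \<bar>div_block \<alpha> \<beta> (fst p) - div_block \<alpha> \<gamma> (snd p)\<bar>) ` S"
    by (auto simp: image_image abs_minus_commute)
  have j: "\<bar>div_inf \<alpha> \<gamma> - div_inf \<alpha> \<beta>\<bar> = \<bar>div_inf \<alpha> \<beta> - div_inf \<alpha> \<gamma>\<bar>" by (rule abs_minus_commute)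
  have k: "{x, y, z} = {y, x, z}" for x y z :: real by blast
  show ?thesis unfolding distS_def s1 s2 s3 i j by (subst k) (rule refl)
qed

lemma d_alpha_commute: "d_alpha \<alpha> \<beta> \<gamma> = d_alpha \<alpha> \<gamma> \<beta>"
proof -
  have sub: "{distS \<alpha> \<beta> \<gamma> S | S. good \<beta> \<gamma> S} \<subseteq> {distS \<alpha> \<gamma> \<beta> S | S. good \<gamma> \<beta> S}"
    for \<beta> \<gamma>
  proof
    fix x assume "x \<in> {distS \<alpha> \<beta> \<gamma> S | S. good \<beta> \<gamma> S}"
    then obtain S where S: "good \<beta> \<gamma> S" "x = distS \<alpha> \<beta> \<gamma> S" by blast
    then have "x = distS \<alpha> \<gamma> \<beta> (prod.swap ` S)" using distS_swap[of S] by (simp add: good_def)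
    then show "x \<in> {distS \<alpha> \<gamma> \<beta> S | S. good \<gamma> \<beta> S}" using swap_good[OF S(1)] by blast
  qed
  have "{distS \<alpha> \<beta> \<gamma> S | S. good \<beta> \<gamma> S} = {distS \<alpha> \<gamma> \<beta> S | S. good \<gamma> \<beta> S}"
    by (rule equalityI[OF sub[of \<beta> \<gamma>] sub[of \<gamma> \<beta>]])
  then show ?thesis unfolding d_alpha_good by simp
qed

lemma sum_fst_img:
  assumes "chain S" "T \<subseteq> S"
  shows "(\<Sum>p\<in>T. blen (fst p)) = (\<Sum>U\<in>fst ` T. blen U)"
proof -
  have "inj_on fst T" using chain_inj1[OF assms(1)] assms(2) by (rule inj_on_subset)
  then show ?thesis by (simp add: sum.reindex)
qed

lemma sum_snd_img:
  assumes "chain S" "T \<subseteq> S"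
  shows "(\<Sum>p\<in>T. blen (snd p)) = (\<Sum>U\<in>snd ` T. blen U)"
proof -
  have "inj_on snd T" using chain_inj2[OF assms(1)] assms(2) by (rule inj_on_subset)
  then show ?thesis by (simp add: sum.reindex)
qed

lemma good_sum1_le:
  assumes "IP_of \<beta> L" "good \<beta> \<gamma> S" "T \<subseteq> S"
  shows "(\<Sum>p\<in>T. blen (fst p)) \<le> L"
proof -
  have fin: "finite T" using assms(2,3) finite_subset by (auto simp: good_def)
  have "(\<Sum>p\<in>T. blen (fst p)) = (\<Sum>U\<in>fst ` T. blen U)"
    using assms(2,3) by (intro sum_fst_img) (auto simp: good_def)
  also have "\<dots> \<le> L" using assms(2,3) fin by (intro IP_sum_le[OF assms(1)]) (auto simp: good_def)
  finally show ?thesis .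
qed

lemma good_sum2_le:
  assumes "IP_of \<gamma> L" "good \<beta> \<gamma> S" "T \<subseteq> S"
  shows "(\<Sum>p\<in>T. blen (snd p)) \<le> L"
proof -
  have fin: "finite T" using assms(2,3) finite_subset by (auto simp: good_def)
  have "(\<Sum>p\<in>T. blen (snd p)) = (\<Sum>U\<in>snd ` T. blen U)"
    using assms(2,3) by (intro sum_snd_img) (auto simp: good_def)
  also have "\<dots> \<le> L" using assms(2,3) fin by (intro IP_sum_le[OF assms(1)]) (auto simp: good_def)
  finally show ?thesis .
qed

lemma sum_abs_ge0: "0 \<le> (\<Sum>p\<in>T. \<bar>blen (fst p) - blen (snd p)\<bar>)"
  by (rule sum_nonneg) simp

lemma d_alpha_self:
  assumes "IP_of \<beta> L"
  shows "d_alpha \<alpha> \<beta> \<beta> = 0"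
proof -
  have "d_alpha \<alpha> \<beta> \<beta> \<le> 0 + \<eta>" if eta: "0 < \<eta>" for \<eta>
  proof -
    obtain F where F: "finite F" "F \<subseteq> \<beta>" "L - \<eta> < (\<Sum>U\<in>F. blen U)"
      using coverage[OF assms eta] by blast
    define S where "S = (\<lambda>U. (U,U)) ` F"
    have ch: "chain S" unfolding chain_def
    proof (intro ballI impI)
      fix p q assume pq: "p \<in> S" "q \<in> S" "p \<noteq> q"
      then obtain U V where UV: "U \<in> F" "V \<in> F" "p = (U,U)" "q = (V,V)" "U \<noteq> V" unfolding S_def by blast
      then have "fst U \<noteq> fst V" using fst_inj[OF assms] F(2) by blast
      then show "(fst (fst p) < fst (fst q) \<and> fst (snd p) < fst (snd q)) \<or>
          (fst (fst q) < fst (fst p) \<and> fst (snd q) < fst (snd p))" using UV by auto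
    qed
    have g: "good \<beta> \<beta> S" unfolding good_def using F ch by (auto simp: S_def)
    have inj: "inj_on (\<lambda>U. (U,U)) F" by (simp add: inj_on_def)
    have s0: "(\<Sum>p\<in>S. \<bar>blen (fst p) - blen (snd p)\<bar>) = 0" unfolding S_def by (simp add: sum.reindex[OF inj])
    have s1: "(\<Sum>p\<in>S. blen (fst p)) = (\<Sum>U\<in>F. blen U)" unfolding S_def by (simp add: sum.reindex[OF inj])
    have s2: "(\<Sum>p\<in>S. blen (snd p)) = (\<Sum>U\<in>F. blen U)" unfolding S_def by (simp add: sum.reindex[OF inj])
    have "distS \<alpha> \<beta> \<beta> S \<le> \<eta>"
    proof (rule distS_le)
      show "finite S" using g by (simp add: good_def)
      show "(\<Sum>p\<in>S. \<bar>blen (fst p) - blen (snd p)\<bar>) + IPlen \<beta> - (\<Sum>p\<in>S. blen (fst p)) \<le> \<eta>"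
        using s0 s1 F(3) IPlen_eq[OF assms] by simp
      show "(\<Sum>p\<in>S. \<bar>blen (fst p) - blen (snd p)\<bar>) + IPlen \<beta> - (\<Sum>p\<in>S. blen (snd p)) \<le> \<eta>"
        using s0 s2 F(3) IPlen_eq[OF assms] by simp
      show "\<bar>div_inf \<alpha> \<beta> - div_inf \<alpha> \<beta>\<bar> \<le> \<eta>" using eta by simp
      show "\<And>p. p \<in> S \<Longrightarrow> \<bar>div_block \<alpha> \<beta> (fst p) - div_block \<alpha> \<beta> (snd p)\<bar> \<le> \<eta>"
        using eta by (auto simp: S_def)
    qed
    then show ?thesis using d_alpha_le[OF g, of \<alpha>] by simp
  qed
  then have "d_alpha \<alpha> \<beta> \<beta> \<le> 0" by (rule field_le_epsilon)
  then show ?thesis using d_alpha_nonneg[of \<alpha> \<beta> \<beta>] by simp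
qed

lemma pos_bound:
  assumes b: "IP_of \<beta> Lb" and c: "IP_of \<gamma> Lg" and g: "good \<beta> \<gamma> S" and UV: "(U,V) \<in> S"
  shows "fst U - fst V \<le> distS \<alpha> \<beta> \<gamma> S" "fst V - fst U \<le> distS \<alpha> \<beta> \<gamma> S"
    "\<bar>blen U - blen V\<bar> \<le> distS \<alpha> \<beta> \<gamma> S"
proof -
  have fin: "finite S" and ch: "chain S" and sub: "S \<subseteq> \<beta> \<times> \<gamma>" using g by (auto simp: good_def)
  define Le where "Le = {p\<in>S. fst (fst p) < fst U}"
  define Ri where "Ri = S - Le"
  have Le2: "Le = {p\<in>S. fst (snd p) < fst V}"
    unfolding Le_def using chain_iff[OF ch _ UV] by auto
  have LeS: "Le \<subseteq> S" and RiS: "Ri \<subseteq> S" unfolding Le_def Ri_def by auto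
  have finL: "finite Le" and finR: "finite Ri" using finite_subset[OF LeS fin] finite_subset[OF RiS fin] .
  have U: "U \<in> \<beta>" and V: "V \<in> \<gamma>" using sub UV by auto
  have Ub: "0 \<le> fst U \<and> fst U < snd U \<and> snd U \<le> Lb" using IP_ofD(2)[OF b U] .
  have Vb: "0 \<le> fst V \<and> fst V < snd V \<and> snd V \<le> Lg" using IP_ofD(2)[OF c V] .
  have fstL: "fst ` Le \<subseteq> \<beta>" "fst ` Ri \<subseteq> \<beta>" "snd ` Le \<subseteq> \<gamma>" "snd ` Ri \<subseteq> \<gamma>"
    using sub LeS RiS by auto
  have a1: "(\<Sum>p\<in>Le. blen (fst p)) \<le> fst U"
  proof -
    have "(\<Sum>W\<in>fst ` Le. blen W) \<le> fst U - 0"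
    proof (rule sum_blen_le)
      show "finite (fst ` Le)" using finL by simp
      fix W assume "W \<in> fst ` Le"
      then obtain p where "p \<in> Le" "W = fst p" by blast
      then have W: "W \<in> \<beta>" "fst W < fst U" using sub unfolding Le_def by auto
      show "0 \<le> fst W \<and> fst W \<le> snd W \<and> snd W \<le> fst U"
        using IP_ofD(2)[OF b W(1)] left_of[OF b U W] by auto
    next
      fix W W' assume "W \<in> fst ` Le" "W' \<in> fst ` Le" "W \<noteq> W'"
      then show "blk W \<inter> blk W' = {}" using IP_ofD(3)[OF b, of W W'] subsetD[OF fstL(1)] by blast
    next
      show "0 \<le> fst U" using Ub by simp
    qed
    then show ?thesis using sum_fst_img[OF ch LeS] by simp
  qed
  have r1: "(\<Sum>p\<in>Ri. blen (fst p)) \<le> Lb - fst U"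
  proof -
    have "(\<Sum>W\<in>fst ` Ri. blen W) \<le> Lb - fst U"
    proof (rule sum_blen_le)
      show "finite (fst ` Ri)" using finR by simp
      fix W assume "W \<in> fst ` Ri"
      then obtain p where "p \<in> Ri" "W = fst p" by blast
      then have W: "W \<in> \<beta>" "fst U \<le> fst W" using sub unfolding Ri_def Le_def by auto
      show "fst U \<le> fst W \<and> fst W \<le> snd W \<and> snd W \<le> Lb"
        using IP_ofD(2)[OF b W(1)] W(2) by auto
    next
      fix W W' assume "W \<in> fst ` Ri" "W' \<in> fst ` Ri" "W \<noteq> W'"
      then show "blk W \<inter> blk W' = {}" using IP_ofD(3)[OF b, of W W'] subsetD[OF fstL(2)] by blast
    next
      show "fst U \<le> Lb" using Ub by simp
    qed
    then show ?thesis using sum_fst_img[OF ch RiS] by simp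
  qed
  have a2: "(\<Sum>p\<in>Le. blen (snd p)) \<le> fst V"
  proof -
    have "(\<Sum>W\<in>snd ` Le. blen W) \<le> fst V - 0"
    proof (rule sum_blen_le)
      show "finite (snd ` Le)" using finL by simp
      fix W assume "W \<in> snd ` Le"
      then obtain p where "p \<in> Le" "W = snd p" by blast
      then have W: "W \<in> \<gamma>" "fst W < fst V" using sub unfolding Le2 by auto
      show "0 \<le> fst W \<and> fst W \<le> snd W \<and> snd W \<le> fst V"
        using IP_ofD(2)[OF c W(1)] left_of[OF c V W] by auto
    next
      fix W W' assume "W \<in> snd ` Le" "W' \<in> snd ` Le" "W \<noteq> W'"
      then show "blk W \<inter> blk W' = {}" using IP_ofD(3)[OF c, of W W'] subsetD[OF fstL(3)] by blast
    next
      show "0 \<le> fst V" using Vb by simp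
    qed
    then show ?thesis using sum_snd_img[OF ch LeS] by simp
  qed
  have r2: "(\<Sum>p\<in>Ri. blen (snd p)) \<le> Lg - fst V"
  proof -
    have "(\<Sum>W\<in>snd ` Ri. blen W) \<le> Lg - fst V"
    proof (rule sum_blen_le)
      show "finite (snd ` Ri)" using finR by simp
      fix W assume "W \<in> snd ` Ri"
      then obtain p where "p \<in> Ri" "W = snd p" by blast
      then have W: "W \<in> \<gamma>" "fst V \<le> fst W" using sub unfolding Ri_def Le2 by auto
      show "fst V \<le> fst W \<and> fst W \<le> snd W \<and> snd W \<le> Lg"
        using IP_ofD(2)[OF c W(1)] W(2) by auto
    next
      fix W W' assume "W \<in> snd ` Ri" "W' \<in> snd ` Ri" "W \<noteq> W'"
      then show "blk W \<inter> blk W' = {}" using IP_ofD(3)[OF c, of W W'] subsetD[OF fstL(4)] by blast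
    next
      show "fst V \<le> Lg" using Vb by simp
    qed
    then show ?thesis using sum_snd_img[OF ch RiS] by simp
  qed
  have split: "(\<Sum>p\<in>S. f p) = (\<Sum>p\<in>Le. f p) + (\<Sum>p\<in>Ri. f p)" for f :: "_ \<Rightarrow> real"
  proof -
    have "S = Le \<union> Ri" "Le \<inter> Ri = {}" using LeS unfolding Ri_def by auto
    then show ?thesis using finL finR by (simp add: sum.union_disjoint)
  qed
  have d1: "(\<Sum>p\<in>Le. blen (fst p)) - (\<Sum>p\<in>Le. blen (snd p)) \<le> (\<Sum>p\<in>S. \<bar>blen (fst p) - blen (snd p)\<bar>)"
  proof -
    have "(\<Sum>p\<in>Le. blen (fst p)) - (\<Sum>p\<in>Le. blen (snd p)) = (\<Sum>p\<in>Le. blen (fst p) - blen (snd p))"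
      by (simp add: sum_subtractf)
    also have "\<dots> \<le> (\<Sum>p\<in>Le. \<bar>blen (fst p) - blen (snd p)\<bar>)" by (rule sum_mono) simp
    also have "\<dots> \<le> (\<Sum>p\<in>S. \<bar>blen (fst p) - blen (snd p)\<bar>)" by (rule sum_mono2[OF fin LeS]) simp
    finally show ?thesis .
  qed
  have d2: "(\<Sum>p\<in>Le. blen (snd p)) - (\<Sum>p\<in>Le. blen (fst p)) \<le> (\<Sum>p\<in>S. \<bar>blen (fst p) - blen (snd p)\<bar>)"
  proof -
    have "(\<Sum>p\<in>Le. blen (snd p)) - (\<Sum>p\<in>Le. blen (fst p)) = (\<Sum>p\<in>Le. blen (snd p) - blen (fst p))"
      by (simp add: sum_subtractf)
    also have "\<dots> \<le> (\<Sum>p\<in>Le. \<bar>blen (fst p) - blen (snd p)\<bar>)" by (rule sum_mono) simp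
    also have "\<dots> \<le> (\<Sum>p\<in>S. \<bar>blen (fst p) - blen (snd p)\<bar>)" by (rule sum_mono2[OF fin LeS]) simp
    finally show ?thesis .
  qed
  have T1: "(\<Sum>p\<in>S. \<bar>blen (fst p) - blen (snd p)\<bar>) + Lb - (\<Sum>p\<in>S. blen (fst p)) \<le> distS \<alpha> \<beta> \<gamma> S"
    using distS_ge(1)[OF fin, where \<alpha>=\<alpha> and \<beta>=\<beta> and \<gamma>=\<gamma>] IPlen_eq[OF b] by simp
  have T2: "(\<Sum>p\<in>S. \<bar>blen (fst p) - blen (snd p)\<bar>) + Lg - (\<Sum>p\<in>S. blen (snd p)) \<le> distS \<alpha> \<beta> \<gamma> S"
    using distS_ge(2)[OF fin, where \<alpha>=\<alpha> and \<beta>=\<beta> and \<gamma>=\<gamma>] IPlen_eq[OF c] by simp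
  show "fst U - fst V \<le> distS \<alpha> \<beta> \<gamma> S"
    using T1 d1 a2 r1 split[of "\<lambda>p. blen (fst p)"] by linarith
  show "fst V - fst U \<le> distS \<alpha> \<beta> \<gamma> S"
    using T2 d2 a1 r2 split[of "\<lambda>p. blen (snd p)"] by linarith
  have "\<bar>blen U - blen V\<bar> \<le> (\<Sum>p\<in>S. \<bar>blen (fst p) - blen (snd p)\<bar>)"
    using member_le_sum[OF UV, of "\<lambda>p. \<bar>blen (fst p) - blen (snd p)\<bar>"] fin by simp
  then show "\<bar>blen U - blen V\<bar> \<le> distS \<alpha> \<beta> \<gamma> S"
    using T1 good_sum1_le[OF b g subset_refl] by linarith
qed

lemma unmatched:
  assumes b: "IP_of \<beta> Lb" and g: "good \<beta> \<gamma> S" and U: "U \<in> \<beta>" "U \<notin> fst ` S"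
  shows "blen U \<le> distS \<alpha> \<beta> \<gamma> S"
proof -
  have fin: "finite S" and ch: "chain S" and sub: "S \<subseteq> \<beta> \<times> \<gamma>" using g by (auto simp: good_def)
  have "(\<Sum>W\<in>insert U (fst ` S). blen W) \<le> Lb"
    using sub U fin by (intro IP_sum_le[OF b]) auto
  then have "blen U + (\<Sum>p\<in>S. blen (fst p)) \<le> Lb"
    using U(2) fin sum_fst_img[OF ch subset_refl] by simp
  moreover have "(\<Sum>p\<in>S. \<bar>blen (fst p) - blen (snd p)\<bar>) + Lb - (\<Sum>p\<in>S. blen (fst p)) \<le> distS \<alpha> \<beta> \<gamma> S"
    using distS_ge(1)[OF fin, where \<alpha>=\<alpha> and \<beta>=\<beta> and \<gamma>=\<gamma>] IPlen_eq[OF b] by simp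
  ultimately show ?thesis using sum_abs_ge0[of S] by linarith
qed

lemma approx_match:
  assumes b: "IP_of \<beta> Lb" and c: "IP_of \<gamma> Lg" and z: "d_alpha \<alpha> \<beta> \<gamma> = 0"
    and U: "U \<in> \<beta>" and e: "0 < e" "e < blen U"
  shows "\<exists>V\<in>\<gamma>. \<bar>fst U - fst V\<bar> \<le> e \<and> \<bar>snd U - snd V\<bar> \<le> 2 * e"
proof -
  obtain S where S: "good \<beta> \<gamma> S" "distS \<alpha> \<beta> \<gamma> S < e" using d_alpha_lessD[of \<alpha> \<beta> \<gamma> e] z e by auto
  have "U \<in> fst ` S"
  proof (rule ccontr)
    assume "U \<notin> fst ` S"
    then have "blen U \<le> distS \<alpha> \<beta> \<gamma> S" using unmatched[OF b S(1) U] by blast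
    then show False using S(2) e by simp
  qed
  then obtain V where UV: "(U,V) \<in> S" by force
  then have V: "V \<in> \<gamma>" using S(1) by (auto simp: good_def)
  have "fst U - fst V \<le> distS \<alpha> \<beta> \<gamma> S" "fst V - fst U \<le> distS \<alpha> \<beta> \<gamma> S"
    "\<bar>blen U - blen V\<bar> \<le> distS \<alpha> \<beta> \<gamma> S" using pos_bound[OF b c S(1) UV] by auto
  then have "\<bar>fst U - fst V\<bar> \<le> e \<and> \<bar>snd U - snd V\<bar> \<le> 2 * e"
    using S(2) unfolding blen_def by linarith
  then show ?thesis using V by blast
qed

lemma small_zero:
  fixes x :: real
  assumes "0 < e0" "\<And>e. 0 < e \<Longrightarrow> e \<le> e0 \<Longrightarrow> \<bar>x\<bar> \<le> 2 * e"
  shows "x = 0"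
proof (rule ccontr)
  assume "x \<noteq> 0"
  define e where "e = min e0 (\<bar>x\<bar> / 4)"
  have "0 < e" "e \<le> e0" "e \<le> \<bar>x\<bar> / 4" using assms(1) \<open>x \<noteq> 0\<close> by (auto simp: e_def)
  with assms(2)[of e] show False using \<open>x \<noteq> 0\<close> by linarith
qed

lemma d_zero_sub:
  assumes b: "IP_of \<beta> Lb" and c: "IP_of \<gamma> Lg" and z: "d_alpha \<alpha> \<beta> \<gamma> = 0"
  shows "\<beta> \<subseteq> \<gamma>"
proof
  fix U assume U: "U \<in> \<beta>"
  define l where "l = blen U"
  have l: "0 < l" unfolding l_def by (rule blen_pos[OF b U])
  define e0 where "e0 = l / 8"
  have e0: "0 < e0" "e0 < blen U" using l by (auto simp: e0_def l_def)
  obtain V0 where V0: "V0 \<in> \<gamma>" "\<bar>fst U - fst V0\<bar> \<le> e0" "\<bar>snd U - snd V0\<bar> \<le> 2 * e0"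
    using approx_match[OF b c z U e0] by blast
  define m where "m = (fst U + snd U) / 2"
  have inblk: "m \<in> blk V" if "\<bar>fst U - fst V\<bar> \<le> e0" "\<bar>snd U - snd V\<bar> \<le> 2 * e0" for V
  proof -
    have "fst V \<le> fst U + e0" "snd U - 2 * e0 \<le> snd V" using that by (auto simp: abs_le_iff)
    then have "fst V < m" using l unfolding m_def e0_def l_def blen_def by (simp add: field_simps)
    moreover have "m < snd V" using l \<open>snd U - 2 * e0 \<le> snd V\<close> unfolding m_def e0_def l_def blen_def by (simp add: field_simps)
    ultimately have "fst V < m" "m < snd V" by auto
    then show ?thesis unfolding blk_def by simp
  qed
  have close: "\<bar>fst U - fst V0\<bar> \<le> 2 * e \<and> \<bar>snd U - snd V0\<bar> \<le> 2 * e" if ee: "0 < e" "e \<le> e0" for e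
  proof -
    have elt: "e < blen U" using ee e0 by simp
    then obtain V where V: "V \<in> \<gamma>" "\<bar>fst U - fst V\<bar> \<le> e" "\<bar>snd U - snd V\<bar> \<le> 2 * e"
      using approx_match[OF b c z U ee(1) elt] by blast
    have "m \<in> blk V" using inblk V ee by auto
    moreover have "m \<in> blk V0" using inblk V0 by auto
    ultimately have "V = V0" using IP_ofD(3)[OF c V(1) V0(1)] by blast
    then show ?thesis using V ee by auto
  qed
  have "fst U - fst V0 = 0" using small_zero[OF e0(1)] close by blast
  moreover have "snd U - snd V0 = 0" using small_zero[OF e0(1)] close by blast
  ultimately have "U = V0" by (simp add: prod_eq_iff)
  then show "U \<in> \<gamma>" using V0 by simp
qed

lemma d_zero_eq:
  assumes b: "IP_of \<beta> Lb" and c: "IP_of \<gamma> Lg" and z: "d_alpha \<alpha> \<beta> \<gamma> = 0"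
  shows "\<beta> = \<gamma>"
  using d_zero_sub[OF b c z] d_zero_sub[OF c b] z d_alpha_commute[of \<alpha> \<beta> \<gamma>] by auto

lemma chain_snd_unique: "chain S \<Longrightarrow> (U,V) \<in> S \<Longrightarrow> (U',V) \<in> S \<Longrightarrow> U = U'"
  using chain_inj2 unfolding inj_on_def by fastforce

lemma chain_fst_unique: "chain S \<Longrightarrow> (U,V) \<in> S \<Longrightarrow> (U,V') \<in> S \<Longrightarrow> V = V'"
  using chain_inj1 unfolding inj_on_def by fastforce

lemma sum_diff_abs: "(\<Sum>p\<in>T. f p) \<le> (\<Sum>p\<in>T. \<bar>f p - g p\<bar>) + (\<Sum>p\<in>T. g p)" for f g :: "_ \<Rightarrow> real"
proof -
  have "(\<Sum>p\<in>T. f p) \<le> (\<Sum>p\<in>T. \<bar>f p - g p\<bar> + g p)" by (rule sum_mono) linarith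
  then show ?thesis by (simp add: sum.distrib)
qed

lemma triangle_S:
  assumes b: "IP_of \<beta> Lb" and c: "IP_of \<gamma> Lg" and d: "IP_of \<delta> Ld"
    and g1: "good \<beta> \<gamma> S1" and g2: "good \<gamma> \<delta> S2"
  shows "\<exists>S. good \<beta> \<delta> S \<and> distS \<alpha> \<beta> \<delta> S \<le> distS \<alpha> \<beta> \<gamma> S1 + distS \<alpha> \<gamma> \<delta> S2"
proof -
  have fin1: "finite S1" and ch1: "chain S1" and sub1: "S1 \<subseteq> \<beta> \<times> \<gamma>" using g1 by (auto simp: good_def)
  have fin2: "finite S2" and ch2: "chain S2" and sub2: "S2 \<subseteq> \<gamma> \<times> \<delta>" using g2 by (auto simp: good_def)
  define K where "K = snd ` S1 \<inter> fst ` S2"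
  define u where "u V = (THE U. (U,V) \<in> S1)" for V
  define w where "w V = (THE W. (V,W) \<in> S2)" for V
  have uI: "u V = U" if "(U,V) \<in> S1" for U V
    unfolding u_def using that chain_snd_unique[OF ch1] by blast
  have wI: "w V = W" if "(V,W) \<in> S2" for V W
    unfolding w_def using that chain_fst_unique[OF ch2] by blast
  have uK: "(u V, V) \<in> S1" if VK: "V \<in> K" for V
  proof -
    have "V \<in> snd ` S1" using VK unfolding K_def by simp
    then obtain p where "p \<in> S1" "snd p = V" by (metis imageE)
    then have "(fst p, V) \<in> S1" by auto
    then show ?thesis using uI by simp
  qed
  have wK: "(V, w V) \<in> S2" if VK: "V \<in> K" for V
  proof -
    have "V \<in> fst ` S2" using VK unfolding K_def by simp
    then obtain p where "p \<in> S2" "fst p = V" by (metis imageE)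
    then have "(V, snd p) \<in> S2" by auto
    then show ?thesis using wI by simp
  qed
  have finK: "finite K" unfolding K_def using fin1 by simp
  define S where "S = (\<lambda>V. (u V, w V)) ` K"
  define P1 where "P1 = (\<lambda>V. (u V, V)) ` K"
  define P2 where "P2 = (\<lambda>V. (V, w V)) ` K"
  define R1 where "R1 = S1 - P1"
  define R2 where "R2 = S2 - P2"
  have P1S: "P1 \<subseteq> S1" unfolding P1_def using uK by auto
  have P2S: "P2 \<subseteq> S2" unfolding P2_def using wK by auto
  have injS: "inj_on (\<lambda>V. (u V, w V)) K"
  proof (rule inj_onI)
    fix V V' assume "V \<in> K" "V' \<in> K" "(u V, w V) = (u V', w V')"
    then have "(u V, V) \<in> S1" "(u V, V') \<in> S1" using uK[of V] uK[of V'] by auto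
    then show "V = V'" using chain_fst_unique[OF ch1] by blast
  qed
  have injP1: "inj_on (\<lambda>V. (u V, V)) K" by (rule inj_onI) simp
  have injP2: "inj_on (\<lambda>V. (V, w V)) K" by (rule inj_onI) simp
  have sumS: "(\<Sum>p\<in>S. f p) = (\<Sum>V\<in>K. f (u V, w V))" for f :: "_ \<Rightarrow> real"
    unfolding S_def by (simp add: sum.reindex[OF injS])
  have sumP1: "(\<Sum>p\<in>P1. f p) = (\<Sum>V\<in>K. f (u V, V))" for f :: "_ \<Rightarrow> real"
    unfolding P1_def by (simp add: sum.reindex[OF injP1])
  have sumP2: "(\<Sum>p\<in>P2. f p) = (\<Sum>V\<in>K. f (V, w V))" for f :: "_ \<Rightarrow> real"
    unfolding P2_def by (simp add: sum.reindex[OF injP2])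
  have split1: "(\<Sum>p\<in>S1. f p) = (\<Sum>p\<in>P1. f p) + (\<Sum>p\<in>R1. f p)" for f :: "_ \<Rightarrow> real"
    unfolding R1_def using fin1 P1S by (metis sum.subset_diff add.commute)
  have split2: "(\<Sum>p\<in>S2. f p) = (\<Sum>p\<in>P2. f p) + (\<Sum>p\<in>R2. f p)" for f :: "_ \<Rightarrow> real"
    unfolding R2_def using fin2 P2S by (metis sum.subset_diff add.commute)
  have R1K: "snd p \<notin> K" if "p \<in> R1" for p
  proof
    assume "snd p \<in> K"
    have "p \<in> S1" using that unfolding R1_def by simp
    then have "u (snd p) = fst p" using uI[of "fst p" "snd p"] by simp
    then have "p \<in> P1" unfolding P1_def using \<open>snd p \<in> K\<close> by (metis (no_types, lifting) image_eqI prod.collapse)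
    then show False using that unfolding R1_def by simp
  qed
  have R2K: "fst p \<notin> K" if "p \<in> R2" for p
  proof
    assume "fst p \<in> K"
    have "p \<in> S2" using that unfolding R2_def by simp
    then have "w (fst p) = snd p" using wI[of "fst p" "snd p"] by simp
    then have "p \<in> P2" unfolding P2_def using \<open>fst p \<in> K\<close> by (metis (no_types, lifting) image_eqI prod.collapse)
    then show False using that unfolding R2_def by simp
  qed
  have R1S: "R1 \<subseteq> S1" and R2S: "R2 \<subseteq> S2" unfolding R1_def R2_def by auto
  have finR1: "finite R1" using finite_subset[OF R1S fin1] .
  have finR2: "finite R2" using finite_subset[OF R2S fin2] .
  \<comment> \<open>middle blocks: unmatched V's of S1 and all V's of S2 are distinct blocks of gamma\<close>
  have mid1: "(\<Sum>p\<in>R1. blen (snd p)) + (\<Sum>p\<in>S2. blen (fst p)) \<le> Lg"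
  proof -
    have disj: "snd ` R1 \<inter> fst ` S2 = {}"
    proof (rule ccontr)
      assume "snd ` R1 \<inter> fst ` S2 \<noteq> {}"
      then obtain p where p: "p \<in> R1" "snd p \<in> fst ` S2" by blast
      then have "snd p \<in> K" unfolding K_def using R1S by auto
      then show False using R1K[OF p(1)] by simp
    qed
    have "(\<Sum>p\<in>R1. blen (snd p)) = (\<Sum>V\<in>snd ` R1. blen V)" by (rule sum_snd_img[OF ch1 R1S])
    moreover have "(\<Sum>p\<in>S2. blen (fst p)) = (\<Sum>V\<in>fst ` S2. blen V)" by (rule sum_fst_img[OF ch2 subset_refl])
    moreover have "(\<Sum>V\<in>snd ` R1 \<union> fst ` S2. blen V) = (\<Sum>V\<in>snd ` R1. blen V) + (\<Sum>V\<in>fst ` S2. blen V)"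
      using disj finR1 fin2 by (simp add: sum.union_disjoint)
    moreover have "(\<Sum>V\<in>snd ` R1 \<union> fst ` S2. blen V) \<le> Lg"
    proof (rule IP_sum_le[OF c])
      show "finite (snd ` R1 \<union> fst ` S2)" using finR1 fin2 by simp
      show "snd ` R1 \<union> fst ` S2 \<subseteq> \<gamma>" using R1S sub1 sub2 by auto
    qed
    ultimately show ?thesis by simp
  qed
  have mid2: "(\<Sum>p\<in>R2. blen (fst p)) + (\<Sum>p\<in>S1. blen (snd p)) \<le> Lg"
  proof -
    have disj: "fst ` R2 \<inter> snd ` S1 = {}"
    proof (rule ccontr)
      assume "fst ` R2 \<inter> snd ` S1 \<noteq> {}"
      then obtain p where p: "p \<in> R2" "fst p \<in> snd ` S1" by blast
      then have "fst p \<in> K" unfolding K_def using R2S by auto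
      then show False using R2K[OF p(1)] by simp
    qed
    have "(\<Sum>p\<in>R2. blen (fst p)) = (\<Sum>V\<in>fst ` R2. blen V)" by (rule sum_fst_img[OF ch2 R2S])
    moreover have "(\<Sum>p\<in>S1. blen (snd p)) = (\<Sum>V\<in>snd ` S1. blen V)" by (rule sum_snd_img[OF ch1 subset_refl])
    moreover have "(\<Sum>V\<in>fst ` R2 \<union> snd ` S1. blen V) = (\<Sum>V\<in>fst ` R2. blen V) + (\<Sum>V\<in>snd ` S1. blen V)"
      using disj finR2 fin1 by (simp add: sum.union_disjoint)
    moreover have "(\<Sum>V\<in>fst ` R2 \<union> snd ` S1. blen V) \<le> Lg"
    proof (rule IP_sum_le[OF c])
      show "finite (fst ` R2 \<union> snd ` S1)" using finR2 fin1 by simp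
      show "fst ` R2 \<union> snd ` S1 \<subseteq> \<gamma>" using R2S sub1 sub2 by auto
    qed
    ultimately show ?thesis by simp
  qed
  have gS: "good \<beta> \<delta> S"
  proof -
    have "finite S" unfolding S_def using finK by simp
    moreover have "S \<subseteq> \<beta> \<times> \<delta>" unfolding S_def using uK wK sub1 sub2 by blast
    moreover have "chain S" unfolding chain_def
    proof (intro ballI impI)
      fix p q assume pq: "p \<in> S" "q \<in> S" "p \<noteq> q"
      then obtain V V' where VV: "V \<in> K" "V' \<in> K" "p = (u V, w V)" "q = (u V', w V')"
        unfolding S_def by blast
      then have ne: "V \<noteq> V'" using pq(3) by auto
      have "(u V, V) \<noteq> (u V', V')" "(V, w V) \<noteq> (V', w V')" using ne by auto
      from chainD[OF ch1 uK[OF VV(1)] uK[OF VV(2)] this(1)] chainD[OF ch2 wK[OF VV(1)] wK[OF VV(2)] this(2)]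
      show "(fst (fst p) < fst (fst q) \<and> fst (snd p) < fst (snd q)) \<or>
          (fst (fst q) < fst (fst p) \<and> fst (snd q) < fst (snd p))" using VV(3,4) by auto
    qed
    ultimately show ?thesis by (simp add: good_def)
  qed
  define D1 where "D1 = distS \<alpha> \<beta> \<gamma> S1"
  define D2 where "D2 = distS \<alpha> \<gamma> \<delta> S2"
  define ad where "ad p = \<bar>blen (fst p) - blen (snd p)\<bar>" for p :: "(real \<times> real) \<times> (real \<times> real)"
  have A1: "(\<Sum>p\<in>S1. ad p) + Lb - (\<Sum>p\<in>S1. blen (fst p)) \<le> D1"
    using distS_ge(1)[OF fin1, where \<alpha>=\<alpha> and \<beta>=\<beta> and \<gamma>=\<gamma>] IPlen_eq[OF b] unfolding D1_def ad_def by simp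
  have B1: "(\<Sum>p\<in>S1. ad p) + Lg - (\<Sum>p\<in>S1. blen (snd p)) \<le> D1"
    using distS_ge(2)[OF fin1, where \<alpha>=\<alpha> and \<beta>=\<beta> and \<gamma>=\<gamma>] IPlen_eq[OF c] unfolding D1_def ad_def by simp
  have A2: "(\<Sum>p\<in>S2. ad p) + Lg - (\<Sum>p\<in>S2. blen (fst p)) \<le> D2"
    using distS_ge(1)[OF fin2, where \<alpha>=\<alpha> and \<beta>=\<gamma> and \<gamma>=\<delta>] IPlen_eq[OF c] unfolding D2_def ad_def by simp
  have B2: "(\<Sum>p\<in>S2. ad p) + Ld - (\<Sum>p\<in>S2. blen (snd p)) \<le> D2"
    using distS_ge(2)[OF fin2, where \<alpha>=\<alpha> and \<beta>=\<gamma> and \<gamma>=\<delta>] IPlen_eq[OF d] unfolding D2_def ad_def by simp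
  have tri: "(\<Sum>p\<in>S. ad p) \<le> (\<Sum>p\<in>P1. ad p) + (\<Sum>p\<in>P2. ad p)"
  proof -
    have "(\<Sum>p\<in>S. ad p) = (\<Sum>V\<in>K. \<bar>blen (u V) - blen (w V)\<bar>)" unfolding sumS ad_def by simp
    also have "\<dots> \<le> (\<Sum>V\<in>K. \<bar>blen (u V) - blen V\<bar> + \<bar>blen V - blen (w V)\<bar>)"
      by (rule sum_mono) arith
    also have "\<dots> = (\<Sum>p\<in>P1. ad p) + (\<Sum>p\<in>P2. ad p)" unfolding sumP1 sumP2 ad_def by (simp add: sum.distrib)
    finally show ?thesis .
  qed
  have adnn: "0 \<le> (\<Sum>p\<in>T. ad p)" for T unfolding ad_def by (rule sum_nonneg) simp
  have R1le: "(\<Sum>p\<in>R1. blen (fst p)) \<le> (\<Sum>p\<in>R1. ad p) + (\<Sum>p\<in>R1. blen (snd p))"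
    unfolding ad_def by (rule sum_diff_abs)
  have R2le: "(\<Sum>p\<in>R2. blen (snd p)) \<le> (\<Sum>p\<in>R2. ad p) + (\<Sum>p\<in>R2. blen (fst p))"
  proof -
    have "(\<Sum>p\<in>R2. blen (snd p)) \<le> (\<Sum>p\<in>R2. \<bar>blen (snd p) - blen (fst p)\<bar>) + (\<Sum>p\<in>R2. blen (fst p))"
      by (rule sum_diff_abs)
    then show ?thesis unfolding ad_def by (simp add: abs_minus_commute)
  qed
  have sS1: "(\<Sum>p\<in>S. blen (fst p)) = (\<Sum>p\<in>P1. blen (fst p))" unfolding sumS sumP1 by simp
  have sS2: "(\<Sum>p\<in>S. blen (snd p)) = (\<Sum>p\<in>P2. blen (snd p))" unfolding sumS sumP2 by simp
  have side1: "(\<Sum>p\<in>S. ad p) + Lb - (\<Sum>p\<in>S. blen (fst p)) \<le> D1 + D2"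
  proof -
    have "(\<Sum>p\<in>P2. ad p) \<le> (\<Sum>p\<in>S2. ad p)" using split2[of ad] adnn[of R2] by linarith
    then show ?thesis using tri sS1 A1 A2 mid1 R1le split1[of ad] split1[of "\<lambda>p. blen (fst p)"] by linarith
  qed
  have side2: "(\<Sum>p\<in>S. ad p) + Ld - (\<Sum>p\<in>S. blen (snd p)) \<le> D1 + D2"
  proof -
    have "(\<Sum>p\<in>P1. ad p) \<le> (\<Sum>p\<in>S1. ad p)" using split1[of ad] adnn[of R1] by linarith
    then show ?thesis using tri sS2 B1 B2 mid2 R2le split2[of ad] split2[of "\<lambda>p. blen (snd p)"] by linarith
  qed
  have "distS \<alpha> \<beta> \<delta> S \<le> D1 + D2"
  proof (rule distS_le)
    show "finite S" using gS by (simp add: good_def)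
    show "(\<Sum>p\<in>S. \<bar>blen (fst p) - blen (snd p)\<bar>) + IPlen \<beta> - (\<Sum>p\<in>S. blen (fst p)) \<le> D1 + D2"
      using side1 IPlen_eq[OF b] unfolding ad_def by simp
    show "(\<Sum>p\<in>S. \<bar>blen (fst p) - blen (snd p)\<bar>) + IPlen \<delta> - (\<Sum>p\<in>S. blen (snd p)) \<le> D1 + D2"
      using side2 IPlen_eq[OF d] unfolding ad_def by simp
    show "\<bar>div_inf \<alpha> \<beta> - div_inf \<alpha> \<delta>\<bar> \<le> D1 + D2"
      using distS_ge(3)[OF fin1, where \<alpha>=\<alpha> and \<beta>=\<beta> and \<gamma>=\<gamma>]
        distS_ge(3)[OF fin2, where \<alpha>=\<alpha> and \<beta>=\<gamma> and \<gamma>=\<delta>] unfolding D1_def D2_def by linarith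
    fix p assume "p \<in> S"
    then obtain V where V: "V \<in> K" "p = (u V, w V)" unfolding S_def by blast
    have "\<bar>div_block \<alpha> \<beta> (u V) - div_block \<alpha> \<gamma> V\<bar> \<le> D1"
      using distS_ge(4)[OF fin1 uK[OF V(1)], where \<alpha>=\<alpha> and \<beta>=\<beta> and \<gamma>=\<gamma>] unfolding D1_def by simp
    moreover have "\<bar>div_block \<alpha> \<gamma> V - div_block \<alpha> \<delta> (w V)\<bar> \<le> D2"
      using distS_ge(4)[OF fin2 wK[OF V(1)], where \<alpha>=\<alpha> and \<beta>=\<gamma> and \<gamma>=\<delta>] unfolding D2_def by simp
    ultimately show "\<bar>div_block \<alpha> \<beta> (fst p) - div_block \<alpha> \<delta> (snd p)\<bar> \<le> D1 + D2"
      using V(2) by simp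
  qed
  then show ?thesis using gS unfolding D1_def D2_def by blast
qed

lemma inf_add_le:
  fixes A B :: "real set"
  assumes "A \<noteq> {}" "B \<noteq> {}" "\<And>a b. a \<in> A \<Longrightarrow> b \<in> B \<Longrightarrow> x \<le> a + b"
  shows "x \<le> Inf A + Inf B"
proof -
  have "x - b \<le> Inf A" if "b \<in> B" for b
    using assms(1) by (rule cInf_greatest) (use assms(3) that in force)
  then have "x - Inf A \<le> Inf B" using assms(2) by (intro cInf_greatest) force+
  then show ?thesis by simp
qed

lemma d_alpha_triangle:
  assumes b: "IP_of \<beta> Lb" and c: "IP_of \<gamma> Lg" and d: "IP_of \<delta> Ld"
  shows "d_alpha \<alpha> \<beta> \<delta> \<le> d_alpha \<alpha> \<beta> \<gamma> + d_alpha \<alpha> \<gamma> \<delta>"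
  unfolding d_alpha_good[of \<alpha> \<beta> \<gamma>] d_alpha_good[of \<alpha> \<gamma> \<delta>]
proof (rule inf_add_le)
  show "{distS \<alpha> \<beta> \<gamma> S |S. good \<beta> \<gamma> S} \<noteq> {}" using good_empty by blast
  show "{distS \<alpha> \<gamma> \<delta> S |S. good \<gamma> \<delta> S} \<noteq> {}" using good_empty by blast
  fix x y assume "x \<in> {distS \<alpha> \<beta> \<gamma> S |S. good \<beta> \<gamma> S}" "y \<in> {distS \<alpha> \<gamma> \<delta> S |S. good \<gamma> \<delta> S}"
  then obtain S1 S2 where S: "good \<beta> \<gamma> S1" "x = distS \<alpha> \<beta> \<gamma> S1" "good \<gamma> \<delta> S2" "y = distS \<alpha> \<gamma> \<delta> S2"
    by blast
  obtain S where "good \<beta> \<delta> S" "distS \<alpha> \<beta> \<delta> S \<le> x + y"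
    using triangle_S[OF b c d S(1) S(3), of \<alpha>] S(2,4) by blast
  then show "d_alpha \<alpha> \<beta> \<delta> \<le> x + y" using d_alpha_le[of \<beta> \<delta> S \<alpha>] by simp
qed

lemma null_scale:
  fixes N :: "real set"
  assumes N: "N \<in> null_sets lborel" and c: "0 < c"
  shows "{x. x / c \<in> N} \<in> null_sets lborel"
proof -
  have Nb[measurable]: "N \<in> sets borel" using N by (auto dest: null_setsD2)
  have "AE x in lborel. x \<notin> N" using N by (rule AE_not_in)
  then have "AE x in lborel. 0 + (1 / c) * x \<notin> N"
    using c by (intro AE_borel_affine) auto
  then have "AE x in lborel. x \<notin> {x. x / c \<in> N}" by simp
  moreover have "{x. x / c \<in> N} \<in> sets lborel" by measurable
  ultimately show ?thesis by (simp add: AE_iff_null_sets)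
qed

lemma filterlim_div_right:
  assumes "0 < (c::real)"
  shows "filterlim (\<lambda>h. h / c) (at_right 0) (at_right 0)"
proof -
  have "((\<lambda>h. h / c) \<longlongrightarrow> 0 / c) (at_right 0)"
    using assms by (intro tendsto_intros) auto
  moreover have "eventually (\<lambda>h. h / c \<in> {0<..} \<and> h / c \<noteq> 0) (at_right (0::real))"
    using eventually_at_right_less[of "0::real"] by eventually_elim (use assms in auto)
  ultimately show ?thesis unfolding filterlim_at by simp
qed

lemma lim_scale:
  fixes f :: "real \<Rightarrow> real" and c \<alpha> l :: real
  assumes lim: "((\<lambda>h. h powr \<alpha> * f h) \<longlongrightarrow> l) (at_right 0)" and c: "0 < c"
  shows "((\<lambda>h. h powr \<alpha> * f (h / c)) \<longlongrightarrow> c powr \<alpha> * l) (at_right 0)"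
proof -
  have "((\<lambda>h. (h / c) powr \<alpha> * f (h / c)) \<longlongrightarrow> l) (at_right 0)"
    using filterlim_compose[OF lim filterlim_div_right[OF c]] by simp
  then have "((\<lambda>h. c powr \<alpha> * ((h / c) powr \<alpha> * f (h / c))) \<longlongrightarrow> c powr \<alpha> * l) (at_right 0)"
    by (intro tendsto_intros)
  moreover have "eventually (\<lambda>h. c powr \<alpha> * ((h / c) powr \<alpha> * f (h / c)) = h powr \<alpha> * f (h / c)) (at_right 0)"
  proof -
    have eq: "c powr \<alpha> * (h / c) powr \<alpha> = h powr \<alpha>" if h: "0 < h" for h
    proof -
      have "c powr \<alpha> * (h / c) powr \<alpha> = (c * (h / c)) powr \<alpha>"
        using c h by (subst powr_mult) auto
      also have "\<dots> = h powr \<alpha>" using c by simp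
      finally show ?thesis .
    qed
    show ?thesis using eventually_at_right_less[of "0::real"]
      by (rule eventually_mono) (simp add: eq mult.assoc[symmetric])
  qed
  ultimately show ?thesis by (rule Lim_transform_eventually)
qed

lemma diversity_eq:
  assumes "((\<lambda>h. h powr \<alpha> * div_count \<beta> t h) \<longlongrightarrow> l) (at_right 0)"
  shows "diversity \<alpha> \<beta> t = Gamma (1 - \<alpha>) * l"
  unfolding diversity_def using tendsto_Lim[OF _ assms] by simp

definition scaleP :: "real \<Rightarrow> (real \<times> real) set \<Rightarrow> (real \<times> real) set" where
  "scaleP c \<beta> = (\<lambda>U. (c * fst U, c * snd U)) ` \<beta>"

lemma blk_scale: "0 < c \<Longrightarrow> x \<in> blk (c * fst U, c * snd U) \<longleftrightarrow> x / c \<in> blk U"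
  by (auto simp: blk_def field_simps)

lemma IP_scale:
  assumes b: "IP_of \<beta> L" and c: "0 < c"
  shows "IP_of (scaleP c \<beta>) (c * L)"
proof (rule IP_ofI)
  show "0 \<le> c * L" using IP_ofD(1)[OF b] c by simp
next
  fix W assume "W \<in> scaleP c \<beta>"
  then obtain U where U: "U \<in> \<beta>" "W = (c * fst U, c * snd U)" unfolding scaleP_def by blast
  then show "0 \<le> fst W \<and> fst W < snd W \<and> snd W \<le> c * L"
    using IP_ofD(2)[OF b U(1)] c by (auto intro: mult_left_mono)
next
  fix W W' assume W: "W \<in> scaleP c \<beta>" "W' \<in> scaleP c \<beta>" "W \<noteq> W'"
  then obtain U U' where U: "U \<in> \<beta>" "W = (c * fst U, c * snd U)" "U' \<in> \<beta>" "W' = (c * fst U', c * snd U')"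
    unfolding scaleP_def by blast
  then have ne: "U \<noteq> U'" using W(3) by auto
  show "blk W \<inter> blk W' = {}"
  proof (rule ccontr)
    assume "blk W \<inter> blk W' \<noteq> {}"
    then obtain x where "x \<in> blk W" "x \<in> blk W'" by blast
    then have "x / c \<in> blk U" "x / c \<in> blk U'" using U blk_scale[OF c] by auto
    then show False using IP_ofD(3)[OF b U(1) U(3) ne] by blast
  qed
next
  have "{0..c * L} - (\<Union>W\<in>scaleP c \<beta>. blk W) = {x. x / c \<in> {0..L} - (\<Union>U\<in>\<beta>. blk U)}"
  proof (intro equalityI subsetI)
    fix x assume x: "x \<in> {0..c * L} - (\<Union>W\<in>scaleP c \<beta>. blk W)"
    have "x / c \<notin> blk U" if "U \<in> \<beta>" for U
    proof
      assume "x / c \<in> blk U"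
      then have "x \<in> blk (c * fst U, c * snd U)" using blk_scale[OF c] by simp
      moreover have "(c * fst U, c * snd U) \<in> scaleP c \<beta>" using that unfolding scaleP_def by blast
      ultimately show False using x by blast
    qed
    moreover have "x / c \<in> {0..L}" using x c by (auto simp: field_simps)
    ultimately show "x \<in> {x. x / c \<in> {0..L} - (\<Union>U\<in>\<beta>. blk U)}" by blast
  next
    fix x assume x: "x \<in> {x. x / c \<in> {0..L} - (\<Union>U\<in>\<beta>. blk U)}"
    have "x \<notin> blk W" if Wm: "W \<in> scaleP c \<beta>" for W
    proof
      assume xW: "x \<in> blk W"
      obtain U where "U \<in> \<beta>" "W = (c * fst U, c * snd U)" using Wm unfolding scaleP_def by blast
      then show False using xW x blk_scale[OF c] by blast
    qed
    moreover have "x \<in> {0..c * L}" using x c by (auto simp: field_simps)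
    ultimately show "x \<in> {0..c * L} - (\<Union>W\<in>scaleP c \<beta>. blk W)" by blast
  qed
  then show "{0..c * L} - (\<Union>W\<in>scaleP c \<beta>. blk W) \<in> null_sets lborel"
    using null_scale[OF IP_ofD(4)[OF b] c] by simp
qed

lemma IPlen_scale: "IP_of \<beta> L \<Longrightarrow> 0 < c \<Longrightarrow> IPlen (scaleP c \<beta>) = c * L"
  using IP_scale IPlen_eq by blast

lemma div_count_scale:
  assumes c: "0 < c"
  shows "div_count (scaleP c \<beta>) (c * t) h = div_count \<beta> t (h / c)"
proof -
  let ?f = "\<lambda>U::real\<times>real. (c * fst U, c * snd U)"
  have inj: "inj_on ?f A" for A using c by (auto simp: inj_on_def prod_eq_iff)
  have "{(a,b)\<in>scaleP c \<beta>. b - a > h \<and> b \<le> c * t} = ?f ` {(a,b)\<in>\<beta>. b - a > h / c \<and> b \<le> t}"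
  proof (intro equalityI subsetI)
    fix W assume "W \<in> {(a,b)\<in>scaleP c \<beta>. b - a > h \<and> b \<le> c * t}"
    then obtain U where U: "U \<in> \<beta>" "W = ?f U" "c * snd U - c * fst U > h" "c * snd U \<le> c * t"
      unfolding scaleP_def by auto
    then have "snd U - fst U > h / c" "snd U \<le> t" using c by (auto simp: field_simps)
    then show "W \<in> ?f ` {(a,b)\<in>\<beta>. b - a > h / c \<and> b \<le> t}" using U(1,2)
      by (intro image_eqI[of _ _ U]) (auto simp: case_prod_beta)
  next
    fix W assume "W \<in> ?f ` {(a,b)\<in>\<beta>. b - a > h / c \<and> b \<le> t}"
    then obtain U where U: "U \<in> \<beta>" "W = ?f U" "snd U - fst U > h / c" "snd U \<le> t"
      by (auto simp: case_prod_beta)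
    then have "c * snd U - c * fst U > h" "c * snd U \<le> c * t" using c by (auto simp: field_simps)
    then show "W \<in> {(a,b)\<in>scaleP c \<beta>. b - a > h \<and> b \<le> c * t}" using U(1,2)
      unfolding scaleP_def by auto
  qed
  then show ?thesis unfolding div_count_def by (simp add: card_image[OF inj])
qed

lemma lim_scale_div:
  assumes "((\<lambda>h. h powr \<alpha> * div_count \<beta> t h) \<longlongrightarrow> l) (at_right 0)" "0 < c"
  shows "((\<lambda>h. h powr \<alpha> * div_count (scaleP c \<beta>) (c * t) h) \<longlongrightarrow> c powr \<alpha> * l) (at_right 0)"
  using lim_scale[OF assms] by (simp add: div_count_scale[OF assms(2)])

lemma has_div_scale:
  assumes b: "IP_of \<beta> L" and hd: "has_diversity \<alpha> \<beta>" and c: "0 < c"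
  shows "has_diversity \<alpha> (scaleP c \<beta>)"
  unfolding has_diversity_def
proof
  fix t assume t: "t \<in> {0..IPlen (scaleP c \<beta>)}"
  then have "t / c \<in> {0..IPlen \<beta>}" using c IPlen_scale[OF b c] IPlen_eq[OF b] by (auto simp: field_simps)
  then obtain l where "((\<lambda>h. h powr \<alpha> * div_count \<beta> (t / c) h) \<longlongrightarrow> l) (at_right 0)"
    using hd unfolding has_diversity_def by blast
  from lim_scale_div[OF this c] c show "\<exists>l. ((\<lambda>h. h powr \<alpha> * div_count (scaleP c \<beta>) t h) \<longlongrightarrow> l) (at_right 0)"
    by auto
qed

lemma has_div_lim:
  assumes "has_diversity \<alpha> \<beta>" "t \<in> {0..IPlen \<beta>}"
  shows "((\<lambda>h. h powr \<alpha> * div_count \<beta> t h) \<longlongrightarrow> Lim (at_right 0) (\<lambda>h. h powr \<alpha> * div_count \<beta> t h)) (at_right 0)"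
proof -
  obtain l where l: "((\<lambda>h. h powr \<alpha> * div_count \<beta> t h) \<longlongrightarrow> l) (at_right 0)"
    using assms unfolding has_diversity_def by blast
  have "Lim (at_right 0) (\<lambda>h. h powr \<alpha> * div_count \<beta> t h) = l"
    by (rule tendsto_Lim[OF _ l]) simp
  then show ?thesis using l by simp
qed

lemma diversity_scale:
  assumes b: "IP_of \<beta> L" and hd: "has_diversity \<alpha> \<beta>" and c: "0 < c" and t: "t \<in> {0..L}"
  shows "diversity \<alpha> (scaleP c \<beta>) (c * t) = c powr \<alpha> * diversity \<alpha> \<beta> t"
proof -
  have t': "t \<in> {0..IPlen \<beta>}" using t IPlen_eq[OF b] by simp
  show ?thesis
    unfolding diversity_eq[OF lim_scale_div[OF has_div_lim[OF hd t'] c]]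
    by (simp add: diversity_def)
qed

lemma IPalpha_IP: "\<beta> \<in> IPalpha \<alpha> \<Longrightarrow> IP_of \<beta> (IPlen \<beta>)"
  unfolding IPalpha_def interval_partition_def using IPlen_eq by auto

lemma IPalpha_scale:
  assumes "\<beta> \<in> IPalpha \<alpha>" "0 < c"
  shows "scaleP c \<beta> \<in> IPalpha \<alpha>"
proof -
  have b: "IP_of \<beta> (IPlen \<beta>)" by (rule IPalpha_IP[OF assms(1)])
  have "has_diversity \<alpha> \<beta>" using assms(1) by (simp add: IPalpha_def)
  then show ?thesis using IP_scale[OF b assms(2)] has_div_scale[OF b _ assms(2)]
    unfolding IPalpha_def interval_partition_def by blast
qed

lemma IP_empty: "IP_of {} 0"
  by (rule IP_ofI) auto

lemma IPlen_empty: "IPlen {} = 0"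
  using IPlen_eq[OF IP_empty] .

lemma div_count_empty: "div_count {} t h = 0"
  by (simp add: div_count_def)

lemma IPalpha_empty: "{} \<in> IPalpha \<alpha>"
  unfolding IPalpha_def interval_partition_def has_diversity_def
  using IP_empty by (auto simp: div_count_empty intro!: exI[of _ 0])

lemma diversity_empty: "diversity \<alpha> {} t = 0"
  unfolding diversity_def div_count_empty by (simp add: Lim_ident_at tendsto_Lim)

lemma div_inf_empty: "div_inf \<alpha> {} = 0"
  by (simp add: div_inf_def diversity_empty)

lemma scaleP_1: "scaleP 1 \<beta> = \<beta>"
  by (simp add: scaleP_def)

lemma div_count_mono:
  assumes b: "IP_of \<beta> L" and h: "0 < h" and tt: "t \<le> t'"
  shows "div_count \<beta> t h \<le> div_count \<beta> t' h"
  unfolding div_count_def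
  by (rule of_nat_mono, rule card_mono[OF finite_div_set[OF b h]]) (use tt in auto)

lemma diversity_mono:
  assumes b: "IP_of \<beta> L" and hd: "has_diversity \<alpha> \<beta>" and a: "\<alpha> < 1"
    and t: "0 \<le> t" "t \<le> t'" "t' \<le> L"
  shows "0 \<le> diversity \<alpha> \<beta> t" "diversity \<alpha> \<beta> t \<le> diversity \<alpha> \<beta> t'"
proof -
  have t1: "t \<in> {0..IPlen \<beta>}" and t2: "t' \<in> {0..IPlen \<beta>}" using t IPlen_eq[OF b] by auto
  note l1 = has_div_lim[OF hd t1] and l2 = has_div_lim[OF hd t2]
  have G: "0 < Gamma (1 - \<alpha>)" using a by (intro Gamma_real_pos) simp
  have ev: "eventually (\<lambda>h. 0 < h) (at_right (0::real))" by (rule eventually_at_right_less)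
  have "0 \<le> Lim (at_right 0) (\<lambda>h. h powr \<alpha> * div_count \<beta> t h)"
  proof (rule tendsto_lowerbound[OF l1])
    show "eventually (\<lambda>h. 0 \<le> h powr \<alpha> * div_count \<beta> t h) (at_right 0)"
      using ev by (rule eventually_mono) (simp add: div_count_def)
  qed simp
  then show "0 \<le> diversity \<alpha> \<beta> t" unfolding diversity_def using G by simp
  have "Lim (at_right 0) (\<lambda>h. h powr \<alpha> * div_count \<beta> t h) \<le> Lim (at_right 0) (\<lambda>h. h powr \<alpha> * div_count \<beta> t' h)"
  proof (rule tendsto_le[OF _ l2 l1])
    show "eventually (\<lambda>h. h powr \<alpha> * div_count \<beta> t h \<le> h powr \<alpha> * div_count \<beta> t' h) (at_right 0)"
      using ev by (rule eventually_mono) (intro mult_left_mono div_count_mono[OF b _ t(2)], auto)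
  qed simp
  then show "diversity \<alpha> \<beta> t \<le> diversity \<alpha> \<beta> t'" unfolding diversity_def using G by simp
qed

lemma div_block_bounds:
  assumes b: "IP_of \<beta> L" and hd: "has_diversity \<alpha> \<beta>" and a: "\<alpha> < 1" and U: "U \<in> \<beta>"
  shows "0 \<le> div_block \<alpha> \<beta> U" "div_block \<alpha> \<beta> U \<le> div_inf \<alpha> \<beta>"
proof -
  have m: "0 \<le> (fst U + snd U) / 2" "(fst U + snd U) / 2 \<le> L" using IP_ofD(2)[OF b U] by auto
  show "0 \<le> div_block \<alpha> \<beta> U" unfolding div_block_def
    using diversity_mono(1)[OF b hd a m(1) order_refl m(2)] .
  show "div_block \<alpha> \<beta> U \<le> div_inf \<alpha> \<beta>" unfolding div_block_def div_inf_def IPlen_eq[OF b]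
    using diversity_mono(2)[OF b hd a m(1) m(2) order_refl] .
qed

lemma div_inf_nonneg:
  assumes b: "IP_of \<beta> L" and hd: "has_diversity \<alpha> \<beta>" and a: "\<alpha> < 1"
  shows "0 \<le> div_inf \<alpha> \<beta>"
  unfolding div_inf_def IPlen_eq[OF b] using diversity_mono(1)[OF b hd a _ order_refl order_refl] IP_ofD(1)[OF b] by simp

definition sc :: "real \<Rightarrow> real \<times> real \<Rightarrow> real \<times> real" where
  "sc s U = (s * fst U, s * snd U)"

lemma scaleP_sc: "scaleP s \<beta> = sc s ` \<beta>"
  by (simp add: scaleP_def sc_def)

lemma blen_sc: "blen (sc s U) = s * blen U"
  by (simp add: blen_def sc_def algebra_simps)

lemma div_block_scale:
  assumes b: "IP_of \<beta> L" and hd: "has_diversity \<alpha> \<beta>" and c: "0 < c" and U: "U \<in> \<beta>"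
  shows "div_block \<alpha> (scaleP c \<beta>) (sc c U) = c powr \<alpha> * div_block \<alpha> \<beta> U"
proof -
  have m: "(fst U + snd U) / 2 \<in> {0..L}" using IP_ofD(2)[OF b U] by auto
  have e: "(fst (sc c U) + snd (sc c U)) / 2 = c * ((fst U + snd U) / 2)" by (simp add: sc_def algebra_simps)
  show ?thesis unfolding div_block_def e by (rule diversity_scale[OF b hd c m])
qed

lemma div_inf_scale:
  assumes b: "IP_of \<beta> L" and hd: "has_diversity \<alpha> \<beta>" and c: "0 < c"
  shows "div_inf \<alpha> (scaleP c \<beta>) = c powr \<alpha> * div_inf \<alpha> \<beta>"
proof -
  have m: "L \<in> {0..L}" using IP_ofD(1)[OF b] by auto
  show ?thesis unfolding div_inf_def IPlen_scale[OF b c] IPlen_eq[OF b]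
    using diversity_scale[OF b hd c m] by simp
qed

lemma d_scale_pos:
  assumes b: "IP_of \<beta> L" and hd: "has_diversity \<alpha> \<beta>" and a: "\<alpha> < 1"
    and s: "0 < s" "s \<le> 1" and s': "0 < s'" "s' \<le> 1"
  shows "d_alpha \<alpha> (scaleP s \<beta>) (scaleP s' \<beta>) \<le> \<bar>s - s'\<bar> * L + \<bar>s powr \<alpha> - s' powr \<alpha>\<bar> * div_inf \<alpha> \<beta>"
proof -
  define B where "B = \<bar>s - s'\<bar> * L + \<bar>s powr \<alpha> - s' powr \<alpha>\<bar> * div_inf \<alpha> \<beta>"
  have D0: "0 \<le> div_inf \<alpha> \<beta>" by (rule div_inf_nonneg[OF b hd a])
  have "d_alpha \<alpha> (scaleP s \<beta>) (scaleP s' \<beta>) \<le> B + \<eta>" if eta: "0 < \<eta>" for \<eta>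
  proof -
    obtain F where F: "finite F" "F \<subseteq> \<beta>" "L - \<eta> < (\<Sum>U\<in>F. blen U)"
      using coverage[OF b eta] by blast
    have FL: "(\<Sum>U\<in>F. blen U) \<le> L" using IP_sum_le[OF b F(1,2)] .
    define S where "S = (\<lambda>U. (sc s U, sc s' U)) ` F"
    have inj: "inj_on (\<lambda>U. (sc s U, sc s' U)) F"
      using s by (auto simp: inj_on_def sc_def prod_eq_iff)
    have ch: "chain S" unfolding chain_def
    proof (intro ballI impI)
      fix p q assume pq: "p \<in> S" "q \<in> S" "p \<noteq> q"
      then obtain U V where UV: "U \<in> F" "V \<in> F" "p = (sc s U, sc s' U)" "q = (sc s V, sc s' V)"
        unfolding S_def by blast
      then have "U \<noteq> V" using pq(3) by auto
      then have "fst U \<noteq> fst V" using fst_inj[OF b] UV(1,2) F(2) by blast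
      then show "(fst (fst p) < fst (fst q) \<and> fst (snd p) < fst (snd q)) \<or>
          (fst (fst q) < fst (fst p) \<and> fst (snd q) < fst (snd p))"
        using UV(3,4) s s' by (auto simp: sc_def)
    qed
    have g: "good (scaleP s \<beta>) (scaleP s' \<beta>) S"
      unfolding good_def S_def scaleP_sc using ch F(1,2) S_def by auto
    have sum0: "(\<Sum>p\<in>S. \<bar>blen (fst p) - blen (snd p)\<bar>) = \<bar>s - s'\<bar> * (\<Sum>U\<in>F. blen U)"
    proof -
      have "(\<Sum>p\<in>S. \<bar>blen (fst p) - blen (snd p)\<bar>) = (\<Sum>U\<in>F. \<bar>s - s'\<bar> * blen U)"
        unfolding S_def sum.reindex[OF inj]
      proof (intro sum.cong refl)
        fix U assume "U \<in> F"
        then have "0 < blen U" using blen_pos[OF b] F(2) by blast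
        then show "((\<lambda>p. \<bar>blen (fst p) - blen (snd p)\<bar>) \<circ> (\<lambda>U. (sc s U, sc s' U))) U = \<bar>s - s'\<bar> * blen U"
          by (simp add: blen_sc abs_mult left_diff_distrib[symmetric])
      qed
      then show ?thesis by (simp add: sum_distrib_left)
    qed
    have sum1: "(\<Sum>p\<in>S. blen (fst p)) = s * (\<Sum>U\<in>F. blen U)"
      unfolding S_def sum.reindex[OF inj] by (simp add: blen_sc sum_distrib_left)
    have sum2: "(\<Sum>p\<in>S. blen (snd p)) = s' * (\<Sum>U\<in>F. blen U)"
      unfolding S_def sum.reindex[OF inj] by (simp add: blen_sc sum_distrib_left)
    have A: "\<bar>s - s'\<bar> * (\<Sum>U\<in>F. blen U) \<le> \<bar>s - s'\<bar> * L" using FL by (simp add: mult_left_mono)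
    have P: "0 \<le> \<bar>s powr \<alpha> - s' powr \<alpha>\<bar> * div_inf \<alpha> \<beta>" using D0 by simp
    have "distS \<alpha> (scaleP s \<beta>) (scaleP s' \<beta>) S \<le> B + \<eta>"
    proof (rule distS_le)
      show "finite S" using g by (simp add: good_def)
      have "s * L - s * (\<Sum>U\<in>F. blen U) \<le> \<eta>"
      proof -
        have "s * (L - (\<Sum>U\<in>F. blen U)) \<le> 1 * (L - (\<Sum>U\<in>F. blen U))"
          using s FL by (intro mult_right_mono) auto
        then show ?thesis using F(3) by (simp add: algebra_simps)
      qed
      then show "(\<Sum>p\<in>S. \<bar>blen (fst p) - blen (snd p)\<bar>) + IPlen (scaleP s \<beta>) - (\<Sum>p\<in>S. blen (fst p)) \<le> B + \<eta>"
        unfolding sum0 sum1 IPlen_scale[OF b s(1)] B_def using A P by linarith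
      have "s' * L - s' * (\<Sum>U\<in>F. blen U) \<le> \<eta>"
      proof -
        have "s' * (L - (\<Sum>U\<in>F. blen U)) \<le> 1 * (L - (\<Sum>U\<in>F. blen U))"
          using s' FL by (intro mult_right_mono) auto
        then show ?thesis using F(3) by (simp add: algebra_simps)
      qed
      then show "(\<Sum>p\<in>S. \<bar>blen (fst p) - blen (snd p)\<bar>) + IPlen (scaleP s' \<beta>) - (\<Sum>p\<in>S. blen (snd p)) \<le> B + \<eta>"
        unfolding sum0 sum2 IPlen_scale[OF b s'(1)] B_def using A P by linarith
      have "\<bar>div_inf \<alpha> (scaleP s \<beta>) - div_inf \<alpha> (scaleP s' \<beta>)\<bar> = \<bar>s powr \<alpha> - s' powr \<alpha>\<bar> * div_inf \<alpha> \<beta>"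
        unfolding div_inf_scale[OF b hd s(1)] div_inf_scale[OF b hd s'(1)] using D0
        by (simp add: left_diff_distrib[symmetric] abs_mult)
      then show "\<bar>div_inf \<alpha> (scaleP s \<beta>) - div_inf \<alpha> (scaleP s' \<beta>)\<bar> \<le> B + \<eta>"
        unfolding B_def using eta IP_ofD(1)[OF b] by (simp add: mult_nonneg_nonneg)
      fix p assume "p \<in> S"
      then obtain U where U: "U \<in> F" "p = (sc s U, sc s' U)" unfolding S_def by blast
      have Ub: "U \<in> \<beta>" using U(1) F(2) by blast
      have "\<bar>div_block \<alpha> (scaleP s \<beta>) (fst p) - div_block \<alpha> (scaleP s' \<beta>) (snd p)\<bar>
          = \<bar>s powr \<alpha> - s' powr \<alpha>\<bar> * div_block \<alpha> \<beta> U"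
        unfolding U(2) fst_conv snd_conv div_block_scale[OF b hd s(1) Ub] div_block_scale[OF b hd s'(1) Ub]
        using div_block_bounds(1)[OF b hd a Ub] by (simp add: left_diff_distrib[symmetric] abs_mult)
      also have "\<dots> \<le> \<bar>s powr \<alpha> - s' powr \<alpha>\<bar> * div_inf \<alpha> \<beta>"
        using div_block_bounds(2)[OF b hd a Ub] by (simp add: mult_left_mono)
      finally have "\<bar>div_block \<alpha> (scaleP s \<beta>) (fst p) - div_block \<alpha> (scaleP s' \<beta>) (snd p)\<bar>
          \<le> \<bar>s powr \<alpha> - s' powr \<alpha>\<bar> * div_inf \<alpha> \<beta>" .
      moreover have "0 \<le> \<bar>s - s'\<bar> * L" using IP_ofD(1)[OF b] by simp
      ultimately show "\<bar>div_block \<alpha> (scaleP s \<beta>) (fst p) - div_block \<alpha> (scaleP s' \<beta>) (snd p)\<bar> \<le> B + \<eta>"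
        unfolding B_def using eta by linarith
    qed
    then show ?thesis using d_alpha_le[OF g, of \<alpha>] by simp
  qed
  then have "d_alpha \<alpha> (scaleP s \<beta>) (scaleP s' \<beta>) \<le> B" by (rule field_le_epsilon)
  then show ?thesis unfolding B_def .
qed

lemma d_scale_zero:
  assumes b: "IP_of \<beta> L" and hd: "has_diversity \<alpha> \<beta>" and a: "\<alpha> < 1" and s: "0 < s"
  shows "d_alpha \<alpha> (scaleP s \<beta>) {} \<le> \<bar>s - 0\<bar> * L + \<bar>s powr \<alpha> - 0 powr \<alpha>\<bar> * div_inf \<alpha> \<beta>"
proof -
  have D0: "0 \<le> div_inf \<alpha> \<beta>" by (rule div_inf_nonneg[OF b hd a])
  have L0: "0 \<le> L" by (rule IP_ofD(1)[OF b])
  have "distS \<alpha> (scaleP s \<beta>) {} {} \<le> \<bar>s - 0\<bar> * L + \<bar>s powr \<alpha> - 0 powr \<alpha>\<bar> * div_inf \<alpha> \<beta>"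
  proof (rule distS_le)
    show "(\<Sum>p\<in>{}. \<bar>blen (fst p) - blen (snd p)\<bar>) + IPlen (scaleP s \<beta>) - (\<Sum>p\<in>{}. blen (fst p))
        \<le> \<bar>s - 0\<bar> * L + \<bar>s powr \<alpha> - 0 powr \<alpha>\<bar> * div_inf \<alpha> \<beta>"
      using IPlen_scale[OF b s] s D0 by simp
    show "(\<Sum>p\<in>{}. \<bar>blen (fst p) - blen (snd p)\<bar>) + IPlen {} - (\<Sum>p\<in>{}. blen (snd p))
        \<le> \<bar>s - 0\<bar> * L + \<bar>s powr \<alpha> - 0 powr \<alpha>\<bar> * div_inf \<alpha> \<beta>"
      using IPlen_empty s D0 L0 by simp
    show "\<bar>div_inf \<alpha> (scaleP s \<beta>) - div_inf \<alpha> {}\<bar> \<le> \<bar>s - 0\<bar> * L + \<bar>s powr \<alpha> - 0 powr \<alpha>\<bar> * div_inf \<alpha> \<beta>"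
      using div_inf_scale[OF b hd s] div_inf_empty s D0 L0 by (simp add: abs_mult)
  qed auto
  then show ?thesis using d_alpha_le[OF good_empty, of \<alpha> "scaleP s \<beta>" "{}"] by simp
qed

definition pth :: "(real \<times> real) set \<Rightarrow> real \<Rightarrow> (real \<times> real) set" where
  "pth \<beta> s = (if s = 0 then {} else scaleP s \<beta>)"

lemma d_pth:
  assumes b: "IP_of \<beta> L" and hd: "has_diversity \<alpha> \<beta>" and a: "\<alpha> < 1"
    and s: "0 \<le> s" "s \<le> 1" and s': "0 \<le> s'" "s' \<le> 1"
  shows "d_alpha \<alpha> (pth \<beta> s) (pth \<beta> s') \<le> \<bar>s - s'\<bar> * L + \<bar>s powr \<alpha> - s' powr \<alpha>\<bar> * div_inf \<alpha> \<beta>"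
proof (cases "s = 0")
  case True
  show ?thesis
  proof (cases "s' = 0")
    case True
    then show ?thesis using \<open>s = 0\<close> d_alpha_self[OF IP_empty, of \<alpha>] div_inf_nonneg[OF b hd a] IP_ofD(1)[OF b]
      by (simp add: pth_def)
  next
    case False
    then have "d_alpha \<alpha> (scaleP s' \<beta>) {} \<le> \<bar>s' - 0\<bar> * L + \<bar>s' powr \<alpha> - 0 powr \<alpha>\<bar> * div_inf \<alpha> \<beta>"
      using s' by (intro d_scale_zero[OF b hd a]) auto
    then show ?thesis using True False d_alpha_commute[of \<alpha> "{}" "scaleP s' \<beta>"]
      by (simp add: pth_def abs_minus_commute)
  qed
next
  case False
  show ?thesis
  proof (cases "s' = 0")
    case True
    then show ?thesis using False d_scale_zero[OF b hd a, of s] s by (simp add: pth_def)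
  next
    case False2: False
    then show ?thesis using False d_scale_pos[OF b hd a, of s s'] s s' by (simp add: pth_def)
  qed
qed

lemma IPalpha_metric: "Metric_space (IPalpha \<alpha>) (d_alpha \<alpha>)"
proof
  show "0 \<le> d_alpha \<alpha> x y" for x y by (rule d_alpha_nonneg)
  show "d_alpha \<alpha> x y = d_alpha \<alpha> y x" for x y by (rule d_alpha_commute)
  fix x y assume x: "x \<in> IPalpha \<alpha>" and y: "y \<in> IPalpha \<alpha>"
  show "d_alpha \<alpha> x y = 0 \<longleftrightarrow> x = y"
    using d_zero_eq[OF IPalpha_IP[OF x] IPalpha_IP[OF y]] d_alpha_self[OF IPalpha_IP[OF x]] by auto
  fix z assume z: "z \<in> IPalpha \<alpha>"
  show "d_alpha \<alpha> x z \<le> d_alpha \<alpha> x y + d_alpha \<alpha> y z"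
    by (rule d_alpha_triangle[OF IPalpha_IP[OF x] IPalpha_IP[OF y] IPalpha_IP[OF z]])
qed

lemma pth_in:
  assumes "\<beta> \<in> IPalpha \<alpha>" "0 \<le> s"
  shows "pth \<beta> s \<in> IPalpha \<alpha>"
  using assms IPalpha_empty IPalpha_scale by (auto simp: pth_def)

lemma pathin_pth:
  assumes a: "0 < \<alpha>" "\<alpha> < 1" and b: "\<beta> \<in> IPalpha \<alpha>"
  shows "pathin (Metric_space.mtopology (IPalpha \<alpha>) (d_alpha \<alpha>)) (pth \<beta>)"
proof -
  interpret M: Metric_space "IPalpha \<alpha>" "d_alpha \<alpha>" by (rule IPalpha_metric)
  have bI: "IP_of \<beta> (IPlen \<beta>)" by (rule IPalpha_IP[OF b])
  have hd: "has_diversity \<alpha> \<beta>" using b by (simp add: IPalpha_def)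
  define L where "L = IPlen \<beta>"
  define D where "D = div_inf \<alpha> \<beta>"
  show ?thesis unfolding pathin_def M.continuous_map_to_metric
  proof (intro ballI allI impI)
    fix x e assume x: "x \<in> topspace (subtopology euclideanreal {0..1})" and e: "(0::real) < e"
    then have x01: "0 \<le> x" "x \<le> 1" by auto
    define \<phi> where "\<phi> y = \<bar>y - x\<bar> * L + \<bar>y powr \<alpha> - x powr \<alpha>\<bar> * D" for y
    have c1: "continuous_on {0..1} (\<lambda>y::real. y powr \<alpha>)"
      by (rule continuous_on_powr') (auto intro: continuous_on_id continuous_on_const simp: a)
    have c2: "continuous_on {0..1} (\<lambda>y::real. y powr \<alpha> - x powr \<alpha>)"
      by (rule continuous_on_diff[OF c1 continuous_on_const])
    have "continuous_on {0..1} \<phi>"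
      unfolding \<phi>_def
      by (intro continuous_on_add continuous_on_mult_right continuous_on_rabs c2 continuous_on_diff
          continuous_on_id continuous_on_const)
    then obtain \<delta> where \<delta>: "\<delta> > 0" "\<And>y. y \<in> {0..1} \<Longrightarrow> dist y x < \<delta> \<Longrightarrow> dist (\<phi> y) (\<phi> x) < e"
      using x01 e unfolding continuous_on_iff by (metis atLeastAtMost_iff)
    have \<phi>x: "\<phi> x = 0" by (simp add: \<phi>_def)
    show "\<exists>U. openin (subtopology euclideanreal {0..1}) U \<and> x \<in> U \<and>
        (\<forall>y\<in>U. pth \<beta> y \<in> M.mball (pth \<beta> x) e)"
    proof (intro exI conjI ballI)
      show "openin (subtopology euclideanreal {0..1}) ({0..1} \<inter> ball x \<delta>)"
        by (rule openin_open_Int) simp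
      show "x \<in> {0..1} \<inter> ball x \<delta>" using x01 \<delta>(1) by simp
      fix y assume y: "y \<in> {0..1} \<inter> ball x \<delta>"
      then have y01: "0 \<le> y" "y \<le> 1" and "dist y x < \<delta>" by (auto simp: dist_commute)
      then have "\<bar>\<phi> y\<bar> < e" using \<delta>(2)[of y] \<phi>x by (simp add: dist_real_def)
      moreover have "d_alpha \<alpha> (pth \<beta> x) (pth \<beta> y) \<le> \<phi> y"
        using d_pth[OF bI hd a(2) x01 y01] unfolding \<phi>_def L_def D_def
        by (simp add: abs_minus_commute)
      ultimately have "d_alpha \<alpha> (pth \<beta> x) (pth \<beta> y) < e" by simp
      then show "pth \<beta> y \<in> M.mball (pth \<beta> x) e"
        using pth_in[OF b x01(1)] pth_in[OF b y01(1)] by simp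
    qed
  qed
qed

lemma path_component_empty:
  assumes a: "0 < \<alpha>" "\<alpha> < 1" and b: "\<beta> \<in> IPalpha \<alpha>"
  shows "path_component_of (Metric_space.mtopology (IPalpha \<alpha>) (d_alpha \<alpha>)) {} \<beta>"
  unfolding path_component_of_def
  by (intro exI[of _ "pth \<beta>"] conjI pathin_pth[OF a b]) (simp_all add: pth_def scaleP_1)

lemma IPalpha_path_connected:
  assumes a: "0 < \<alpha>" "\<alpha> < 1"
  shows "path_connected_space (Metric_space.mtopology (IPalpha \<alpha>) (d_alpha \<alpha>))"
proof -
  interpret M: Metric_space "IPalpha \<alpha>" "d_alpha \<alpha>" by (rule IPalpha_metric)
  show ?thesis unfolding path_connected_space_iff_path_component M.topspace_mtopology
  proof (intro ballI)
    fix x y assume "x \<in> IPalpha \<alpha>" "y \<in> IPalpha \<alpha>"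
    then show "path_component_of M.mtopology x y"
      using path_component_empty[OF a] path_component_of_sym path_component_of_trans by metis
  qed
qed

definition sh :: "real \<Rightarrow> real \<times> real \<Rightarrow> real \<times> real" where
  "sh x U = (fst U + x, snd U + x)"

definition catP :: "(real \<times> real) set \<Rightarrow> (real \<times> real) set \<Rightarrow> (real \<times> real) set" where
  "catP \<beta> \<gamma> = \<beta> \<union> sh (IPlen \<beta>) ` \<gamma>"

lemma blk_sh: "x \<in> blk (sh a U) \<longleftrightarrow> x - a \<in> blk U"
  by (auto simp: blk_def sh_def)

lemma blen_sh: "blen (sh a U) = blen U"
  by (simp add: blen_def sh_def)

lemma inj_sh: "inj_on (sh a) A"
  by (auto simp: inj_on_def sh_def prod_eq_iff)

lemma IP_cat:
  assumes b: "IP_of \<beta> L1" and c: "IP_of \<gamma> L2"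
  shows "IP_of (catP \<beta> \<gamma>) (L1 + L2)"
proof -
  have Lb: "IPlen \<beta> = L1" by (rule IPlen_eq[OF b])
  have L1: "0 \<le> L1" and L2: "0 \<le> L2" using IP_ofD(1)[OF b] IP_ofD(1)[OF c] .
  have bnd: "0 \<le> fst W \<and> fst W < snd W \<and> snd W \<le> L1 + L2" if W: "W \<in> catP \<beta> \<gamma>" for W
  proof (cases "W \<in> \<beta>")
    case True then show ?thesis using IP_ofD(2)[OF b True] L2 by auto
  next
    case False
    then obtain V where V: "V \<in> \<gamma>" "W = sh L1 V" using W unfolding catP_def Lb by blast
    then show ?thesis using IP_ofD(2)[OF c V(1)] L1 by (auto simp: sh_def)
  qed
  have left: "x < L1" if "x \<in> blk U" "U \<in> \<beta>" for x U
    using that IP_ofD(2)[OF b that(2)] by (auto simp: blk_def)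
  have right: "L1 < x" if "x \<in> blk (sh L1 V)" "V \<in> \<gamma>" for x V
    using that IP_ofD(2)[OF c that(2)] by (auto simp: blk_def sh_def)
  show ?thesis
  proof (rule IP_ofI)
    show "0 \<le> L1 + L2" using L1 L2 by simp
    show "\<And>U. U \<in> catP \<beta> \<gamma> \<Longrightarrow> 0 \<le> fst U \<and> fst U < snd U \<and> snd U \<le> L1 + L2" by (rule bnd)
  next
    fix W W' assume W: "W \<in> catP \<beta> \<gamma>" "W' \<in> catP \<beta> \<gamma>" "W \<noteq> W'"
    show "blk W \<inter> blk W' = {}"
    proof (rule ccontr)
      assume "blk W \<inter> blk W' \<noteq> {}"
      then obtain x where x: "x \<in> blk W" "x \<in> blk W'" by blast
      consider "W \<in> \<beta>" "W' \<in> \<beta>" | V where "W \<in> \<beta>" "V \<in> \<gamma>" "W' = sh L1 V"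
        | V where "W' \<in> \<beta>" "V \<in> \<gamma>" "W = sh L1 V"
        | V V' where "V \<in> \<gamma>" "W = sh L1 V" "V' \<in> \<gamma>" "W' = sh L1 V'"
        using W(1,2) unfolding catP_def Lb by blast
      then show False
      proof cases
        case 1 then show ?thesis using IP_ofD(3)[OF b 1 W(3)] x by blast
      next
        case (2 V) then show ?thesis using left[OF x(1) 2(1)] right[of x V] x(2) by auto
      next
        case (3 V) then show ?thesis using left[OF x(2) 3(1)] right[of x V] x(1) by auto
      next
        case (4 V V')
        then have "V \<noteq> V'" using W(3) by auto
        moreover have "x - L1 \<in> blk V" "x - L1 \<in> blk V'" using x 4 blk_sh by auto
        ultimately show ?thesis using IP_ofD(3)[OF c 4(1) 4(3)] by blast
      qed
    qed
  next
    define N where "N = {0..L1 + L2} - (\<Union>W\<in>catP \<beta> \<gamma>. blk W)"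
    have sub: "N \<subseteq> ({0..L1} - (\<Union>U\<in>\<beta>. blk U)) \<union> {x. x - L1 \<in> {0..L2} - (\<Union>U\<in>\<gamma>. blk U)} \<union> {L1}"
    proof
      fix x assume x: "x \<in> N"
      then have x0: "0 \<le> x" "x \<le> L1 + L2" and xn: "\<And>W. W \<in> catP \<beta> \<gamma> \<Longrightarrow> x \<notin> blk W"
        unfolding N_def by auto
      consider "x < L1" | "x = L1" | "L1 < x" by linarith
      then show "x \<in> ({0..L1} - (\<Union>U\<in>\<beta>. blk U)) \<union> {x. x - L1 \<in> {0..L2} - (\<Union>U\<in>\<gamma>. blk U)} \<union> {L1}"
      proof cases
        case 1
        have "x \<notin> blk U" if "U \<in> \<beta>" for U using xn[of U] that unfolding catP_def by blast
        then show ?thesis using 1 x0 by auto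
      next
        case 2 then show ?thesis by simp
      next
        case 3
        have "x - L1 \<notin> blk V" if "V \<in> \<gamma>" for V
          using xn[of "sh L1 V"] that blk_sh unfolding catP_def Lb by blast
        then show ?thesis using 3 x0 by auto
      qed
    qed
    have n1: "{x. x - L1 \<in> {0..L2} - (\<Union>U\<in>\<gamma>. blk U)} \<in> null_sets lborel"
      by (rule null_sets_translation[OF IP_ofD(4)[OF c]])
    have nn: "({0..L1} - (\<Union>U\<in>\<beta>. blk U)) \<union> {x. x - L1 \<in> {0..L2} - (\<Union>U\<in>\<gamma>. blk U)} \<union> {L1} \<in> null_sets lborel"
      using IP_ofD(4)[OF b] n1 by (intro null_sets.Un) (auto intro: countable_imp_null_set_lborel)
    have Nb: "N \<in> sets lborel" unfolding N_def by (intro sets.Diff) (auto intro!: borel_open)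
    show "{0..L1 + L2} - (\<Union>W\<in>catP \<beta> \<gamma>. blk W) \<in> null_sets lborel"
      using null_sets_subset[OF nn Nb sub] unfolding N_def .
  qed
qed

lemma IPlen_cat: "IP_of \<beta> L1 \<Longrightarrow> IP_of \<gamma> L2 \<Longrightarrow> IPlen (catP \<beta> \<gamma>) = L1 + L2"
  using IP_cat IPlen_eq by blast

lemma div_count_cat_le:
  assumes b: "IP_of \<beta> L1" and c: "IP_of \<gamma> L2" and t: "t \<le> L1"
  shows "div_count (catP \<beta> \<gamma>) t h = div_count \<beta> t h"
proof -
  have "{(a,b)\<in>catP \<beta> \<gamma>. b - a > h \<and> b \<le> t} = {(a,b)\<in>\<beta>. b - a > h \<and> b \<le> t}"
  proof (intro equalityI subsetI)
    fix W assume W: "W \<in> {(a,b)\<in>catP \<beta> \<gamma>. b - a > h \<and> b \<le> t}"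
    show "W \<in> {(a,b)\<in>\<beta>. b - a > h \<and> b \<le> t}"
    proof (cases "W \<in> \<beta>")
      case True then show ?thesis using W by auto
    next
      case False
      then obtain V where V: "V \<in> \<gamma>" "W = sh L1 V" using W unfolding catP_def IPlen_eq[OF b] by blast
      then have "L1 < snd W" using IP_ofD(2)[OF c V(1)] by (auto simp: sh_def)
      then show ?thesis using W t by (auto simp: case_prod_beta)
    qed
  qed (auto simp: catP_def)
  then show ?thesis unfolding div_count_def by simp
qed

lemma div_count_cat_ge:
  assumes b: "IP_of \<beta> L1" and c: "IP_of \<gamma> L2" and t: "L1 \<le> t" and h: "0 < h"
  shows "div_count (catP \<beta> \<gamma>) t h = div_count \<beta> L1 h + div_count \<gamma> (t - L1) h"
proof -
  define A where "A = {(a,b)\<in>\<beta>. b - a > h \<and> b \<le> L1}"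
  define B where "B = {(a,b)\<in>\<gamma>. b - a > h \<and> b \<le> t - L1}"
  have e: "{(a,b)\<in>catP \<beta> \<gamma>. b - a > h \<and> b \<le> t} = A \<union> sh L1 ` B"
  proof (intro equalityI subsetI)
    fix W assume W: "W \<in> {(a,b)\<in>catP \<beta> \<gamma>. b - a > h \<and> b \<le> t}"
    show "W \<in> A \<union> sh L1 ` B"
    proof (cases "W \<in> \<beta>")
      case True then show ?thesis using W IP_ofD(2)[OF b True] unfolding A_def by auto
    next
      case False
      then obtain V where V: "V \<in> \<gamma>" "W = sh L1 V" using W unfolding catP_def IPlen_eq[OF b] by blast
      then have "V \<in> B" using W unfolding B_def by (auto simp: sh_def case_prod_beta)
      then show ?thesis using V(2) by blast
    qed
  next
    fix W assume "W \<in> A \<union> sh L1 ` B"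
    then show "W \<in> {(a,b)\<in>catP \<beta> \<gamma>. b - a > h \<and> b \<le> t}"
      unfolding A_def B_def catP_def IPlen_eq[OF b] using t by (auto simp: sh_def case_prod_beta)
  qed
  have finA: "finite A" unfolding A_def by (rule finite_div_set[OF b h])
  have finB: "finite B" unfolding B_def by (rule finite_div_set[OF c h])
  have disj: "A \<inter> sh L1 ` B = {}"
  proof (rule ccontr)
    assume "A \<inter> sh L1 ` B \<noteq> {}"
    then obtain V where V: "V \<in> B" "sh L1 V \<in> A" by blast
    then have "sh L1 V \<in> \<beta>" "V \<in> \<gamma>" unfolding A_def B_def by auto
    then show False using IP_ofD(2)[OF b, of "sh L1 V"] IP_ofD(2)[OF c, of V] by (auto simp: sh_def)
  qed
  have "card (A \<union> sh L1 ` B) = card A + card B"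
    using finA finB disj by (simp add: card_Un_disjoint card_image[OF inj_sh])
  then show ?thesis unfolding div_count_def e A_def B_def by simp
qed

lemma ev_pos: "eventually (\<lambda>h. 0 < h) (at_right (0::real))"
  by (rule eventually_at_right_less)

lemma lim_cat_le:
  assumes b: "IP_of \<beta> L1" and c: "IP_of \<gamma> L2" and t: "t \<le> L1"
    and l: "((\<lambda>h. h powr \<alpha> * div_count \<beta> t h) \<longlongrightarrow> l) (at_right 0)"
  shows "((\<lambda>h. h powr \<alpha> * div_count (catP \<beta> \<gamma>) t h) \<longlongrightarrow> l) (at_right 0)"
  using l by (simp add: div_count_cat_le[OF b c t])

lemma lim_cat_ge:
  assumes b: "IP_of \<beta> L1" and c: "IP_of \<gamma> L2" and t: "L1 \<le> t"
    and l1: "((\<lambda>h. h powr \<alpha> * div_count \<beta> L1 h) \<longlongrightarrow> l1) (at_right 0)"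
    and l2: "((\<lambda>h. h powr \<alpha> * div_count \<gamma> (t - L1) h) \<longlongrightarrow> l2) (at_right 0)"
  shows "((\<lambda>h. h powr \<alpha> * div_count (catP \<beta> \<gamma>) t h) \<longlongrightarrow> l1 + l2) (at_right 0)"
proof -
  have "((\<lambda>h. h powr \<alpha> * div_count \<beta> L1 h + h powr \<alpha> * div_count \<gamma> (t - L1) h) \<longlongrightarrow> l1 + l2) (at_right 0)"
    by (rule tendsto_add[OF l1 l2])
  moreover have "eventually (\<lambda>h. h powr \<alpha> * div_count \<beta> L1 h + h powr \<alpha> * div_count \<gamma> (t - L1) h
      = h powr \<alpha> * div_count (catP \<beta> \<gamma>) t h) (at_right 0)"
    using ev_pos by (rule eventually_mono) (simp add: div_count_cat_ge[OF b c t] algebra_simps)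
  ultimately show ?thesis by (rule Lim_transform_eventually)
qed

lemma has_div_cat:
  assumes b: "IP_of \<beta> L1" and c: "IP_of \<gamma> L2" and hb: "has_diversity \<alpha> \<beta>" and hc: "has_diversity \<alpha> \<gamma>"
  shows "has_diversity \<alpha> (catP \<beta> \<gamma>)"
  unfolding has_diversity_def
proof
  fix t assume t: "t \<in> {0..IPlen (catP \<beta> \<gamma>)}"
  then have t0: "0 \<le> t" "t \<le> L1 + L2" using IPlen_cat[OF b c] by auto
  show "\<exists>l. ((\<lambda>h. h powr \<alpha> * div_count (catP \<beta> \<gamma>) t h) \<longlongrightarrow> l) (at_right 0)"
  proof (cases "t \<le> L1")
    case True
    then have "t \<in> {0..IPlen \<beta>}" using t0 IPlen_eq[OF b] by simp
    then show ?thesis using lim_cat_le[OF b c True has_div_lim[OF hb]] by blast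
  next
    case False
    have a1: "L1 \<in> {0..IPlen \<beta>}" using IPlen_eq[OF b] IP_ofD(1)[OF b] by simp
    have a2: "t - L1 \<in> {0..IPlen \<gamma>}" using IPlen_eq[OF c] t0 False by simp
    have tL: "L1 \<le> t" using False by simp
    show ?thesis using lim_cat_ge[OF b c tL has_div_lim[OF hb a1] has_div_lim[OF hc a2]] by blast
  qed
qed

lemma diversity_cat_le:
  assumes b: "IP_of \<beta> L1" and c: "IP_of \<gamma> L2" and hb: "has_diversity \<alpha> \<beta>" and t: "0 \<le> t" "t \<le> L1"
  shows "diversity \<alpha> (catP \<beta> \<gamma>) t = diversity \<alpha> \<beta> t"
proof -
  have "t \<in> {0..IPlen \<beta>}" using t IPlen_eq[OF b] by simp
  from lim_cat_le[OF b c t(2) has_div_lim[OF hb this]] show ?thesis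
    by (subst diversity_eq, assumption) (simp add: diversity_def)
qed

lemma diversity_cat_ge:
  assumes b: "IP_of \<beta> L1" and c: "IP_of \<gamma> L2" and hb: "has_diversity \<alpha> \<beta>" and hc: "has_diversity \<alpha> \<gamma>"
    and t: "L1 \<le> t" "t \<le> L1 + L2"
  shows "diversity \<alpha> (catP \<beta> \<gamma>) t = diversity \<alpha> \<beta> L1 + diversity \<alpha> \<gamma> (t - L1)"
proof -
  have a1: "L1 \<in> {0..IPlen \<beta>}" using IPlen_eq[OF b] IP_ofD(1)[OF b] by simp
  have a2: "t - L1 \<in> {0..IPlen \<gamma>}" using IPlen_eq[OF c] t by simp
  from lim_cat_ge[OF b c t(1) has_div_lim[OF hb a1] has_div_lim[OF hc a2]] show ?thesis
    by (subst diversity_eq, assumption) (simp add: diversity_def algebra_simps)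
qed

lemma IPalpha_cat:
  assumes "\<beta> \<in> IPalpha \<alpha>" "\<gamma> \<in> IPalpha \<alpha>"
  shows "catP \<beta> \<gamma> \<in> IPalpha \<alpha>"
  using IP_cat[OF IPalpha_IP[OF assms(1)] IPalpha_IP[OF assms(2)]]
    has_div_cat[OF IPalpha_IP[OF assms(1)] IPalpha_IP[OF assms(2)]] assms
  unfolding IPalpha_def interval_partition_def by blast

lemma div_inf_cat:
  assumes b: "IP_of \<beta> L1" and c: "IP_of \<gamma> L2" and hb: "has_diversity \<alpha> \<beta>" and hc: "has_diversity \<alpha> \<gamma>"
  shows "div_inf \<alpha> (catP \<beta> \<gamma>) = div_inf \<alpha> \<beta> + div_inf \<alpha> \<gamma>"
  unfolding div_inf_def IPlen_cat[OF b c] IPlen_eq[OF b] IPlen_eq[OF c]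
  using diversity_cat_ge[OF b c hb hc, of "L1 + L2"] IP_ofD(1)[OF c] by simp

lemma blk_in_cat1: "U \<in> \<beta> \<Longrightarrow> U \<in> catP \<beta> \<gamma>"
  by (simp add: catP_def)

lemma blk_in_cat2: "IP_of \<beta> L1 \<Longrightarrow> V \<in> \<gamma> \<Longrightarrow> sh L1 V \<in> catP \<beta> \<gamma>"
  by (simp add: catP_def IPlen_eq)

lemma div_block_cat1:
  assumes b: "IP_of \<beta> L1" and c: "IP_of \<gamma> L2" and hb: "has_diversity \<alpha> \<beta>" and U: "U \<in> \<beta>"
  shows "div_block \<alpha> (catP \<beta> \<gamma>) U = div_block \<alpha> \<beta> U"
  unfolding div_block_def using IP_ofD(2)[OF b U]
  by (intro diversity_cat_le[OF b c hb]) auto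

lemma div_block_cat2:
  assumes b: "IP_of \<beta> L1" and c: "IP_of \<gamma> L2" and hb: "has_diversity \<alpha> \<beta>" and hc: "has_diversity \<alpha> \<gamma>"
    and V: "V \<in> \<gamma>"
  shows "div_block \<alpha> (catP \<beta> \<gamma>) (sh L1 V) = div_inf \<alpha> \<beta> + div_block \<alpha> \<gamma> V"
proof -
  have m: "(fst (sh L1 V) + snd (sh L1 V)) / 2 = (fst V + snd V) / 2 + L1" by (simp add: sh_def field_simps)
  have v: "0 \<le> fst V" "fst V < snd V" "snd V \<le> L2" using IP_ofD(2)[OF c V] by auto
  show ?thesis unfolding div_block_def m div_inf_def IPlen_eq[OF b]
    using diversity_cat_ge[OF b c hb hc, of "(fst V + snd V) / 2 + L1"] v by simp
qed

lemma powr_to_zero: "0 < (\<alpha>::real) \<Longrightarrow> ((\<lambda>h. h powr \<alpha>) \<longlongrightarrow> 0) (at_right 0)"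
  by (rule tendsto_zero_powrI) (auto intro: tendsto_ident_at eventually_mono[OF ev_pos])

lemma lim_bounded_zero:
  fixes f :: "real \<Rightarrow> real" and B \<alpha> :: real
  assumes a: "0 < \<alpha>" and bd: "\<And>h. 0 < h \<Longrightarrow> 0 \<le> f h \<and> f h \<le> B"
  shows "((\<lambda>h. h powr \<alpha> * f h) \<longlongrightarrow> 0) (at_right 0)"
proof (rule tendsto_sandwich[of "\<lambda>_. 0" _ _ "\<lambda>h. h powr \<alpha> * B"])
  show "eventually (\<lambda>h. 0 \<le> h powr \<alpha> * f h) (at_right 0)"
    using ev_pos by (rule eventually_mono) (use bd in \<open>auto intro: mult_nonneg_nonneg\<close>)
  show "eventually (\<lambda>h. h powr \<alpha> * f h \<le> h powr \<alpha> * B) (at_right 0)"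
    using ev_pos by (rule eventually_mono) (use bd in \<open>simp add: mult_left_mono\<close>)
  show "((\<lambda>h. 0) \<longlongrightarrow> 0) (at_right 0)" by simp
  show "((\<lambda>h. h powr \<alpha> * B) \<longlongrightarrow> 0) (at_right 0)"
    using tendsto_mult[OF powr_to_zero[OF a] tendsto_const[of B]] by simp
qed

lemma IP_single: "0 < r \<Longrightarrow> IP_of {(0, r)} r"
proof (rule IP_ofI)
  assume r: "0 < r"
  show "0 \<le> r" using r by simp
  show "\<And>U. U \<in> {(0, r)} \<Longrightarrow> 0 \<le> fst U \<and> fst U < snd U \<and> snd U \<le> r" using r by auto
  show "\<And>U V. U \<in> {(0, r)} \<Longrightarrow> V \<in> {(0, r)} \<Longrightarrow> U \<noteq> V \<Longrightarrow> blk U \<inter> blk V = {}" by auto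
  have "{0..r} - (\<Union>U\<in>{(0, r)}. blk U) \<subseteq> {0, r}" by (auto simp: blk_def)
  moreover have "{0..r} - (\<Union>U\<in>{(0, r)}. blk U) \<in> sets lborel" by (auto simp: blk_def)
  moreover have "{0, r} \<in> null_sets lborel" by (intro countable_imp_null_set_lborel) simp
  ultimately show "{0..r} - (\<Union>U\<in>{(0, r)}. blk U) \<in> null_sets lborel"
    using null_sets_subset by blast
qed

lemma div_count_single_le: "0 \<le> div_count {(0, r)} t h \<and> div_count {(0, r)} t h \<le> 1"
proof -
  have "card {(a,b)\<in>{(0::real, r)}. b - a > h \<and> b \<le> t} \<le> card {(0::real, r)}"
    by (rule card_mono) auto
  then show ?thesis unfolding div_count_def by simp
qed

lemma lim_single: "0 < \<alpha> \<Longrightarrow> ((\<lambda>h. h powr \<alpha> * div_count {(0, r)} t h) \<longlongrightarrow> 0) (at_right 0)"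
  by (rule lim_bounded_zero[where B=1]) (use div_count_single_le in auto)

lemma IPalpha_single:
  assumes "0 < \<alpha>" "0 < r"
  shows "{(0, r)} \<in> IPalpha \<alpha>"
  unfolding IPalpha_def interval_partition_def has_diversity_def
  using IP_single[OF assms(2)] lim_single[OF assms(1)] by blast

lemma diversity_single: "0 < \<alpha> \<Longrightarrow> diversity \<alpha> {(0, r)} t = 0"
  using diversity_eq[OF lim_single] by simp

definition gl :: "real \<Rightarrow> nat \<Rightarrow> real" where
  "gl \<alpha> k = real (Suc k) powr (- (1 / \<alpha>))"

definition gs :: "real \<Rightarrow> nat \<Rightarrow> real" where
  "gs \<alpha> k = (\<Sum>j<k. gl \<alpha> j)"

definition gM :: "real \<Rightarrow> real" where
  "gM \<alpha> = suminf (gl \<alpha>)"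

definition gad :: "real \<Rightarrow> (real \<times> real) set" where
  "gad \<alpha> = (\<lambda>k. (gs \<alpha> k, gs \<alpha> (Suc k))) ` UNIV"

context
  fixes \<alpha> :: real
  assumes a0: "0 < \<alpha>" and a1: "\<alpha> < 1"
begin

lemma gl_pos: "0 < gl \<alpha> k"
  by (simp add: gl_def)

lemma gl_summable: "summable (gl \<alpha>)"
proof -
  have "- (1 / \<alpha>) < -1" using a0 a1 by (simp add: field_simps)
  then have "summable (\<lambda>n. real n powr (- (1 / \<alpha>)))" by (simp add: summable_real_powr_iff)
  then have "summable (\<lambda>n. real (Suc n) powr (- (1 / \<alpha>)))" by (subst summable_Suc_iff)
  then show ?thesis by (simp add: gl_def[abs_def])
qed

lemma gs_Suc: "gs \<alpha> (Suc k) = gs \<alpha> k + gl \<alpha> k"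
  by (simp add: gs_def)

lemma gs_0: "gs \<alpha> 0 = 0"
  by (simp add: gs_def)

lemma gs_mono: "k \<le> k' \<Longrightarrow> gs \<alpha> k \<le> gs \<alpha> k'"
  unfolding gs_def by (rule sum_mono2) (auto intro: less_imp_le[OF gl_pos])

lemma gs_less: "k < k' \<Longrightarrow> gs \<alpha> k < gs \<alpha> k'"
proof -
  assume "k < k'"
  then have "gs \<alpha> (Suc k) \<le> gs \<alpha> k'" by (intro gs_mono) simp
  then show ?thesis using gs_Suc[of k] gl_pos[of k] by simp
qed

lemma gs_le_M: "gs \<alpha> k \<le> gM \<alpha>"
  unfolding gs_def gM_def by (rule sum_le_suminf[OF gl_summable]) (auto intro: less_imp_le[OF gl_pos])

lemma gs_less_M: "gs \<alpha> k < gM \<alpha>"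
  using gs_le_M[of "Suc k"] gs_Suc[of k] gl_pos[of k] by simp

lemma gs_lim: "gs \<alpha> \<longlonglongrightarrow> gM \<alpha>"
  unfolding gs_def[abs_def] gM_def using summable_LIMSEQ[OF gl_summable] by simp

lemma gM_pos: "0 < gM \<alpha>"
  using gs_less_M[of 0] gs_0 by simp

lemma gs_eventually: "x < gM \<alpha> \<Longrightarrow> \<exists>N. \<forall>j\<ge>N. x < gs \<alpha> j"
proof -
  assume "x < gM \<alpha>"
  then have "eventually (\<lambda>j. x < gs \<alpha> j) sequentially" using order_tendstoD(1)[OF gs_lim] by blast
  then show ?thesis by (simp add: eventually_sequentially)
qed

lemma blk_gad: "blk (gs \<alpha> k, gs \<alpha> (Suc k)) = {gs \<alpha> k<..<gs \<alpha> (Suc k)}"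
  by (simp add: blk_def)

lemma IP_gad: "IP_of (gad \<alpha>) (gM \<alpha>)"
proof (rule IP_ofI)
  show "0 \<le> gM \<alpha>" using gM_pos by simp
  fix U assume "U \<in> gad \<alpha>"
  then obtain k where "U = (gs \<alpha> k, gs \<alpha> (Suc k))" unfolding gad_def by blast
  then show "0 \<le> fst U \<and> fst U < snd U \<and> snd U \<le> gM \<alpha>"
    using gs_mono[of 0 k] gs_0 gs_less[of k "Suc k"] gs_le_M[of "Suc k"] by auto
next
  fix U V assume UV: "U \<in> gad \<alpha>" "V \<in> gad \<alpha>" "U \<noteq> V"
  then obtain k k' where kk: "U = (gs \<alpha> k, gs \<alpha> (Suc k))" "V = (gs \<alpha> k', gs \<alpha> (Suc k'))"
    unfolding gad_def by blast
  then have "k \<noteq> k'" using UV(3) by auto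
  then consider "k < k'" | "k' < k" by linarith
  then show "blk U \<inter> blk V = {}"
  proof cases
    case 1 then have "gs \<alpha> (Suc k) \<le> gs \<alpha> k'" by (intro gs_mono) simp
    then show ?thesis using kk by (auto simp: blk_def)
  next
    case 2 then have "gs \<alpha> (Suc k') \<le> gs \<alpha> k" by (intro gs_mono) simp
    then show ?thesis using kk by (auto simp: blk_def)
  qed
next
  have sub: "{0..gM \<alpha>} - (\<Union>U\<in>gad \<alpha>. blk U) \<subseteq> range (gs \<alpha>) \<union> {gM \<alpha>}"
  proof
    fix x assume x: "x \<in> {0..gM \<alpha>} - (\<Union>U\<in>gad \<alpha>. blk U)"
    show "x \<in> range (gs \<alpha>) \<union> {gM \<alpha>}"
    proof (rule ccontr)
      assume nx: "x \<notin> range (gs \<alpha>) \<union> {gM \<alpha>}"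
      then have xM: "x < gM \<alpha>" using x by auto
      obtain N where N: "\<And>j. j \<ge> N \<Longrightarrow> x < gs \<alpha> j" using gs_eventually[OF xM] by blast
      define J where "J = {j. gs \<alpha> j \<le> x}"
      have finJ: "finite J"
      proof (rule finite_subset[of _ "{..<N}"])
        show "J \<subseteq> {..<N}" unfolding J_def using N by (auto simp: not_le[symmetric])
      qed simp
      have "0 \<in> J" using x gs_0 by (simp add: J_def)
      define k where "k = Max J"
      have kJ: "k \<in> J" unfolding k_def using finJ \<open>0 \<in> J\<close> by (intro Max_in) auto
      have "Suc k \<notin> J" using Max_ge[OF finJ, of "Suc k"] unfolding k_def by auto
      then have "x < gs \<alpha> (Suc k)" by (simp add: J_def)
      moreover have "gs \<alpha> k < x" using kJ nx by (auto simp: J_def order.order_iff_strict)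
      ultimately have "x \<in> blk (gs \<alpha> k, gs \<alpha> (Suc k))" by (simp add: blk_def)
      moreover have "(gs \<alpha> k, gs \<alpha> (Suc k)) \<in> gad \<alpha>" unfolding gad_def by blast
      ultimately show False using x by blast
    qed
  qed
  have "countable (range (gs \<alpha>) \<union> {gM \<alpha>})" by simp
  then have "range (gs \<alpha>) \<union> {gM \<alpha>} \<in> null_sets lborel" by (rule countable_imp_null_set_lborel)
  moreover have "{0..gM \<alpha>} - (\<Union>U\<in>gad \<alpha>. blk U) \<in> sets lborel"
    by (intro sets.Diff) (auto intro!: borel_open)
  ultimately show "{0..gM \<alpha>} - (\<Union>U\<in>gad \<alpha>. blk U) \<in> null_sets lborel"
    using sub by (rule null_sets_subset)
qed

end

lemma int_less_ceiling: "int k < \<lceil>z\<rceil> \<longleftrightarrow> real k < z"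
  using less_ceiling_iff[of "int k" z] by simp

lemma card_lt_real: "card {k::nat. real (Suc k) < y} = nat \<lceil>y - 1\<rceil>"
proof -
  have "{k::nat. real (Suc k) < y} = {..<nat \<lceil>y - 1\<rceil>}"
  proof (intro equalityI subsetI)
    fix k assume "k \<in> {k::nat. real (Suc k) < y}"
    then have "real k < y - 1" by simp
    then have "int k < \<lceil>y - 1\<rceil>" by (simp only: int_less_ceiling)
    then show "k \<in> {..<nat \<lceil>y - 1\<rceil>}" by (simp only: lessThan_iff zless_nat_eq_int_zless)
  next
    fix k assume "k \<in> {..<nat \<lceil>y - 1\<rceil>}"
    then have "int k < \<lceil>y - 1\<rceil>" by (simp only: lessThan_iff zless_nat_eq_int_zless)
    then have "real k < y - 1" by (simp only: int_less_ceiling)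
    then show "k \<in> {k::nat. real (Suc k) < y}" by simp
  qed
  then show ?thesis by simp
qed

lemma nat_ceiling_bounds:
  fixes y :: real
  shows "y - 1 \<le> real (nat \<lceil>y - 1\<rceil>)" "0 \<le> y \<Longrightarrow> real (nat \<lceil>y - 1\<rceil>) \<le> y"
proof -
  have "y - 1 \<le> real_of_int \<lceil>y - 1\<rceil>" by (rule le_of_int_ceiling)
  also have "\<dots> \<le> real (nat \<lceil>y - 1\<rceil>)" by simp
  finally show "y - 1 \<le> real (nat \<lceil>y - 1\<rceil>)" .
  assume y: "0 \<le> y"
  have "\<lceil>y - 1\<rceil> - 1 < \<lceil>y - 1\<rceil>" by simp
  then have lt: "real_of_int (\<lceil>y - 1\<rceil> - 1) < y - 1" by (simp only: less_ceiling_iff)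
  show "real (nat \<lceil>y - 1\<rceil>) \<le> y"
  proof (cases "\<lceil>y - 1\<rceil> \<le> 0")
    case True then show ?thesis using y by simp
  next
    case False
    then have "real (nat \<lceil>y - 1\<rceil>) = real_of_int \<lceil>y - 1\<rceil>" by simp
    then show ?thesis using lt by simp
  qed
qed

context
  fixes \<alpha> :: real
  assumes a0: "0 < \<alpha>" and a1: "\<alpha> < 1"
begin

lemma gl_gt_iff:
  assumes h: "0 < h"
  shows "h < gl \<alpha> k \<longleftrightarrow> real (Suc k) < h powr (- \<alpha>)"
proof -
  define X where "X = gl \<alpha> k"
  have X: "0 < X" unfolding X_def by (rule gl_pos[OF a0 a1])
  have inv: "X powr (- \<alpha>) = real (Suc k)"
    unfolding X_def gl_def using a0 by (simp add: powr_powr)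
  have na: "- \<alpha> < 0" using a0 by simp
  show ?thesis
  proof
    assume "h < gl \<alpha> k"
    then have "X powr (- \<alpha>) < h powr (- \<alpha>)" unfolding X_def[symmetric] using h na
      by (intro powr_less_mono2_neg) auto
    then show "real (Suc k) < h powr (- \<alpha>)" using inv by simp
  next
    assume r: "real (Suc k) < h powr (- \<alpha>)"
    show "h < gl \<alpha> k"
    proof (rule ccontr)
      assume "\<not> h < gl \<alpha> k"
      then have "X \<le> h" unfolding X_def by simp
      then have "h powr (- \<alpha>) \<le> X powr (- \<alpha>)" using X na by (intro powr_mono2') auto
      then show False using r inv by simp
    qed
  qed
qed

lemma gad_count_M:
  assumes h: "0 < h" and t: "gM \<alpha> \<le> t"
  shows "div_count (gad \<alpha>) t h = real (nat \<lceil>h powr (- \<alpha>) - 1\<rceil>)"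
proof -
  let ?f = "\<lambda>k. (gs \<alpha> k, gs \<alpha> (Suc k))"
  have inj: "inj_on ?f A" for A
  proof (rule inj_onI)
    fix k k' assume "?f k = ?f k'"
    then have "gs \<alpha> k = gs \<alpha> k'" by simp
    then show "k = k'" using gs_less[OF a0 a1, of k k'] gs_less[OF a0 a1, of k' k] by (metis less_irrefl nat_neq_iff)
  qed
  have "{(a,b)\<in>gad \<alpha>. b - a > h \<and> b \<le> t} = ?f ` {k. h < gl \<alpha> k}"
  proof (intro equalityI subsetI)
    fix W assume "W \<in> {(a,b)\<in>gad \<alpha>. b - a > h \<and> b \<le> t}"
    then obtain k where "W = ?f k" "gs \<alpha> (Suc k) - gs \<alpha> k > h" unfolding gad_def by auto
    then show "W \<in> ?f ` {k. h < gl \<alpha> k}" using gs_Suc[OF a0 a1, of k] by auto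
  next
    fix W assume "W \<in> ?f ` {k. h < gl \<alpha> k}"
    then obtain k where "W = ?f k" "h < gl \<alpha> k" by blast
    moreover have "gs \<alpha> (Suc k) \<le> t" using gs_le_M[OF a0 a1, of "Suc k"] t by simp
    ultimately show "W \<in> {(a,b)\<in>gad \<alpha>. b - a > h \<and> b \<le> t}"
      unfolding gad_def using gs_Suc[OF a0 a1, of k] by auto
  qed
  then have "div_count (gad \<alpha>) t h = real (card {k. h < gl \<alpha> k})"
    unfolding div_count_def by (simp add: card_image[OF inj])
  also have "{k. h < gl \<alpha> k} = {k. real (Suc k) < h powr (- \<alpha>)}" using gl_gt_iff[OF h] by auto
  finally show ?thesis by (simp only: card_lt_real)
qed

lemma lim_gad_M:
  assumes t: "gM \<alpha> \<le> t"
  shows "((\<lambda>h. h powr \<alpha> * div_count (gad \<alpha>) t h) \<longlongrightarrow> 1) (at_right 0)"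
proof (rule tendsto_sandwich[of "\<lambda>h. 1 - h powr \<alpha>" _ _ "\<lambda>_. 1"])
  have key: "h powr \<alpha> * h powr (- \<alpha>) = 1" if "0 < h" for h :: real
    using that by (simp add: powr_add[symmetric])
  show "eventually (\<lambda>h. 1 - h powr \<alpha> \<le> h powr \<alpha> * div_count (gad \<alpha>) t h) (at_right 0)"
    using ev_pos
  proof (rule eventually_mono)
    fix h :: real assume h: "0 < h"
    have "h powr (- \<alpha>) - 1 \<le> real (nat \<lceil>h powr (- \<alpha>) - 1\<rceil>)" by (rule nat_ceiling_bounds(1))
    then have "h powr \<alpha> * (h powr (- \<alpha>) - 1) \<le> h powr \<alpha> * real (nat \<lceil>h powr (- \<alpha>) - 1\<rceil>)"
      by (rule mult_left_mono) simp
    then show "1 - h powr \<alpha> \<le> h powr \<alpha> * div_count (gad \<alpha>) t h"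
      unfolding gad_count_M[OF h t] using key[OF h] by (simp add: right_diff_distrib)
  qed
  show "eventually (\<lambda>h. h powr \<alpha> * div_count (gad \<alpha>) t h \<le> 1) (at_right 0)"
    using ev_pos
  proof (rule eventually_mono)
    fix h :: real assume h: "0 < h"
    have "real (nat \<lceil>h powr (- \<alpha>) - 1\<rceil>) \<le> h powr (- \<alpha>)" by (rule nat_ceiling_bounds(2)) simp
    then have "h powr \<alpha> * real (nat \<lceil>h powr (- \<alpha>) - 1\<rceil>) \<le> h powr \<alpha> * h powr (- \<alpha>)"
      by (rule mult_left_mono) simp
    then show "h powr \<alpha> * div_count (gad \<alpha>) t h \<le> 1"
      unfolding gad_count_M[OF h t] using key[OF h] by simp
  qed
  show "((\<lambda>h. 1 - h powr \<alpha>) \<longlongrightarrow> 1) (at_right 0)"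
    using tendsto_diff[OF tendsto_const[of 1] powr_to_zero[OF a0]] by simp
  show "((\<lambda>h. 1) \<longlongrightarrow> 1) (at_right 0)" by simp
qed

lemma lim_gad_lt:
  assumes t: "t < gM \<alpha>"
  shows "((\<lambda>h. h powr \<alpha> * div_count (gad \<alpha>) t h) \<longlongrightarrow> 0) (at_right 0)"
proof -
  obtain N where N: "\<And>j. j \<ge> N \<Longrightarrow> t < gs \<alpha> j" using gs_eventually[OF a0 a1 t] by blast
  have "div_count (gad \<alpha>) t h \<le> real N" for h
  proof -
    have "{(a,b)\<in>gad \<alpha>. b - a > h \<and> b \<le> t} \<subseteq> (\<lambda>k. (gs \<alpha> k, gs \<alpha> (Suc k))) ` {..<N}"
    proof
      fix W assume "W \<in> {(a,b)\<in>gad \<alpha>. b - a > h \<and> b \<le> t}"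
      then obtain k where k: "W = (gs \<alpha> k, gs \<alpha> (Suc k))" "gs \<alpha> (Suc k) \<le> t" unfolding gad_def by auto
      then have "Suc k < N" using N[of "Suc k"] by (meson not_le)
      then show "W \<in> (\<lambda>k. (gs \<alpha> k, gs \<alpha> (Suc k))) ` {..<N}" using k(1) by auto
    qed
    then have "card {(a,b)\<in>gad \<alpha>. b - a > h \<and> b \<le> t} \<le> card ((\<lambda>k. (gs \<alpha> k, gs \<alpha> (Suc k))) ` {..<N})"
      by (rule card_mono[rotated]) simp
    also have "\<dots> \<le> N" using card_image_le[of "{..<N}"] by simp
    finally show ?thesis unfolding div_count_def by simp
  qed
  then show ?thesis
    by (intro lim_bounded_zero[OF a0, where B="real N"]) (auto simp: div_count_def)
qed

lemma has_div_gad: "has_diversity \<alpha> (gad \<alpha>)"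
  unfolding has_diversity_def
proof
  fix t assume "t \<in> {0..IPlen (gad \<alpha>)}"
  then have "t \<le> gM \<alpha>" using IPlen_eq[OF IP_gad[OF a0 a1]] by simp
  then show "\<exists>l. ((\<lambda>h. h powr \<alpha> * div_count (gad \<alpha>) t h) \<longlongrightarrow> l) (at_right 0)"
    using lim_gad_lt lim_gad_M by (cases "t < gM \<alpha>") auto
qed

lemma IPalpha_gad: "gad \<alpha> \<in> IPalpha \<alpha>"
  unfolding IPalpha_def interval_partition_def using IP_gad[OF a0 a1] has_div_gad by blast

lemma div_inf_gad: "div_inf \<alpha> (gad \<alpha>) = Gamma (1 - \<alpha>)"
  unfolding div_inf_def IPlen_eq[OF IP_gad[OF a0 a1]]
  using diversity_eq[OF lim_gad_M[OF order_refl]] by simp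

end

fun gads :: "real \<Rightarrow> real \<Rightarrow> nat \<Rightarrow> (real \<times> real) set" where
  "gads \<alpha> c 0 = {}"
| "gads \<alpha> c (Suc k) = catP (scaleP c (gad \<alpha>)) (gads \<alpha> c k)"

lemma gads_props:
  assumes a0: "0 < \<alpha>" and a1: "\<alpha> < 1" and c: "0 < c"
  shows "gads \<alpha> c k \<in> IPalpha \<alpha> \<and> IPlen (gads \<alpha> c k) = real k * (c * gM \<alpha>)
    \<and> div_inf \<alpha> (gads \<alpha> c k) = real k * (c powr \<alpha> * Gamma (1 - \<alpha>))"
proof (induction k)
  case 0
  then show ?case using IPalpha_empty IPlen_empty div_inf_empty by simp
next
  case (Suc k)
  have G: "scaleP c (gad \<alpha>) \<in> IPalpha \<alpha>" by (rule IPalpha_scale[OF IPalpha_gad[OF a0 a1] c])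
  have GI: "IP_of (scaleP c (gad \<alpha>)) (c * gM \<alpha>)" by (rule IP_scale[OF IP_gad[OF a0 a1] c])
  have KI: "IP_of (gads \<alpha> c k) (real k * (c * gM \<alpha>))" using IPalpha_IP Suc.IH by metis
  have hG: "has_diversity \<alpha> (scaleP c (gad \<alpha>))" using G by (simp add: IPalpha_def)
  have hK: "has_diversity \<alpha> (gads \<alpha> c k)" using Suc.IH by (simp add: IPalpha_def)
  have dG: "div_inf \<alpha> (scaleP c (gad \<alpha>)) = c powr \<alpha> * Gamma (1 - \<alpha>)"
    using div_inf_scale[OF IP_gad[OF a0 a1] has_div_gad[OF a0 a1] c] div_inf_gad[OF a0 a1] by simp
  show ?case
    using IPalpha_cat[OF G conjunct1[OF Suc.IH]] IPlen_cat[OF GI KI] div_inf_cat[OF GI KI hG hK] dG Suc.IH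
    by (simp add: algebra_simps)
qed

fun mk :: "real \<Rightarrow> real \<Rightarrow> (nat \<times> real) list \<Rightarrow> nat \<Rightarrow> (real \<times> real) set" where
  "mk \<alpha> c [] kf = gads \<alpha> c kf"
| "mk \<alpha> c ((k, r) # ps) kf = catP (gads \<alpha> c k) (catP {(0, r)} (mk \<alpha> c ps kf))"

lemma div_block_single: "0 < \<alpha> \<Longrightarrow> div_block \<alpha> {(0, r)} U = 0"
  by (simp add: div_block_def diversity_single)

lemma div_inf_single: "0 < \<alpha> \<Longrightarrow> div_inf \<alpha> {(0, r)} = 0"
  by (simp add: div_inf_def diversity_single)

lemma mk_props:
  assumes a0: "0 < \<alpha>" and a1: "\<alpha> < 1" and c: "0 < c"
  shows "(\<forall>p\<in>set ps. 0 < snd p) \<Longrightarrow> mk \<alpha> c ps kf \<in> IPalpha \<alpha> \<and>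
    IPlen (mk \<alpha> c ps kf) = (\<Sum>p\<leftarrow>ps. real (fst p) * (c * gM \<alpha>) + snd p) + real kf * (c * gM \<alpha>) \<and>
    div_inf \<alpha> (mk \<alpha> c ps kf) = (real (sum_list (map fst ps)) + real kf) * (c powr \<alpha> * Gamma (1 - \<alpha>)) \<and>
    (\<exists>Vs. length Vs = length ps \<and> sorted_wrt (\<lambda>V V'. fst V < fst V') Vs \<and>
      (\<forall>i<length ps. Vs ! i \<in> mk \<alpha> c ps kf \<and> blen (Vs ! i) = snd (ps ! i) \<and>
        div_block \<alpha> (mk \<alpha> c ps kf) (Vs ! i) = real (sum_list (take (Suc i) (map fst ps))) * (c powr \<alpha> * Gamma (1 - \<alpha>))))"
proof (induction ps)
  case Nil
  then show ?case using gads_props[OF a0 a1 c, of kf] by simp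
next
  case (Cons p ps)
  obtain k r where p: "p = (k, r)" by (cases p)
  have r: "0 < r" using Cons.prems p by simp
  have IH: "mk \<alpha> c ps kf \<in> IPalpha \<alpha> \<and>
    IPlen (mk \<alpha> c ps kf) = (\<Sum>p\<leftarrow>ps. real (fst p) * (c * gM \<alpha>) + snd p) + real kf * (c * gM \<alpha>) \<and>
    div_inf \<alpha> (mk \<alpha> c ps kf) = (real (sum_list (map fst ps)) + real kf) * (c powr \<alpha> * Gamma (1 - \<alpha>)) \<and>
    (\<exists>Vs. length Vs = length ps \<and> sorted_wrt (\<lambda>V V'. fst V < fst V') Vs \<and>
      (\<forall>i<length ps. Vs ! i \<in> mk \<alpha> c ps kf \<and> blen (Vs ! i) = snd (ps ! i) \<and>
        div_block \<alpha> (mk \<alpha> c ps kf) (Vs ! i) = real (sum_list (take (Suc i) (map fst ps))) * (c powr \<alpha> * Gamma (1 - \<alpha>))))"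
    using Cons.IH Cons.prems by simp
  define q where "q = c powr \<alpha> * Gamma (1 - \<alpha>)"
  define m where "m = c * gM \<alpha>"
  define G where "G = gads \<alpha> c k"
  define B where "B = {(0::real, r)}"
  define R where "R = mk \<alpha> c ps kf"
  define LR where "LR = IPlen R"
  define C where "C = catP B R"
  have X: "mk \<alpha> c (p # ps) kf = catP G C" unfolding p G_def C_def B_def R_def by simp
  have Gp: "G \<in> IPalpha \<alpha>" "IPlen G = real k * m" "div_inf \<alpha> G = real k * q"
    using gads_props[OF a0 a1 c, of k] unfolding G_def m_def q_def by auto
  have Rp: "R \<in> IPalpha \<alpha>" using IH unfolding R_def by blast
  have Bp: "B \<in> IPalpha \<alpha>" unfolding B_def by (rule IPalpha_single[OF a0 r])
  have GI: "IP_of G (real k * m)" using IPalpha_IP[OF Gp(1)] Gp(2) by simp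
  have BI: "IP_of B r" unfolding B_def by (rule IP_single[OF r])
  have RI: "IP_of R LR" unfolding LR_def by (rule IPalpha_IP[OF Rp])
  have CI: "IP_of C (r + LR)" unfolding C_def by (rule IP_cat[OF BI RI])
  have hG: "has_diversity \<alpha> G" and hB: "has_diversity \<alpha> B" and hR: "has_diversity \<alpha> R"
    using Gp(1) Bp Rp by (auto simp: IPalpha_def)
  have hC: "has_diversity \<alpha> C" unfolding C_def by (rule has_div_cat[OF BI RI hB hR])
  have Cp: "C \<in> IPalpha \<alpha>" unfolding C_def by (rule IPalpha_cat[OF Bp Rp])
  have memX: "catP G C \<in> IPalpha \<alpha>" by (rule IPalpha_cat[OF Gp(1) Cp])
  have lenX: "IPlen (catP G C) = real k * m + (r + LR)" by (rule IPlen_cat[OF GI CI])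
  have dB: "div_inf \<alpha> B = 0" unfolding B_def by (rule div_inf_single[OF a0])
  have dC: "div_inf \<alpha> C = div_inf \<alpha> R" unfolding C_def div_inf_cat[OF BI RI hB hR] dB by simp
  have dX: "div_inf \<alpha> (catP G C) = real k * q + div_inf \<alpha> R"
    unfolding div_inf_cat[OF GI CI hG hC] dC Gp(3) ..
  obtain Vs where Vs: "length Vs = length ps" "sorted_wrt (\<lambda>V V'. fst V < fst V') Vs"
    "\<And>i. i < length ps \<Longrightarrow> Vs ! i \<in> R \<and> blen (Vs ! i) = snd (ps ! i) \<and>
        div_block \<alpha> R (Vs ! i) = real (sum_list (take (Suc i) (map fst ps))) * q"
    using IH unfolding R_def q_def by blast
  define f where "f V = sh (real k * m) (sh r V)" for V
  define V0 where "V0 = sh (real k * m) (0, r)"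
  define Ws where "Ws = V0 # map f Vs"
  have V0X: "V0 \<in> catP G C" unfolding V0_def
    by (rule blk_in_cat2[OF GI]) (simp add: C_def B_def catP_def)
  have V0b: "blen V0 = r" unfolding V0_def by (simp add: sh_def blen_def)
  have V0d: "div_block \<alpha> (catP G C) V0 = real k * q"
  proof -
    have "div_block \<alpha> (catP G C) V0 = div_inf \<alpha> G + div_block \<alpha> C (0, r)"
      unfolding V0_def by (rule div_block_cat2[OF GI CI hG hC]) (simp add: C_def B_def catP_def)
    also have "div_block \<alpha> C (0, r) = div_block \<alpha> B (0, r)"
      unfolding C_def by (rule div_block_cat1[OF BI RI hB]) (simp add: B_def)
    finally show ?thesis using div_block_single[OF a0] Gp(3) unfolding B_def by simp
  qed
  have fX: "f V \<in> catP G C \<and> div_block \<alpha> (catP G C) (f V) = real k * q + div_block \<alpha> R V" if V: "V \<in> R" for V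
  proof -
    have VC: "sh r V \<in> C" unfolding C_def by (rule blk_in_cat2[OF BI V])
    have "div_block \<alpha> (catP G C) (f V) = div_inf \<alpha> G + div_block \<alpha> C (sh r V)"
      unfolding f_def by (rule div_block_cat2[OF GI CI hG hC VC])
    also have "div_block \<alpha> C (sh r V) = div_inf \<alpha> B + div_block \<alpha> R V"
      unfolding C_def by (rule div_block_cat2[OF BI RI hB hR V])
    finally show ?thesis using dB Gp(3) blk_in_cat2[OF GI VC] unfolding f_def by simp
  qed
  have sortedW: "sorted_wrt (\<lambda>V V'. fst V < fst V') Ws"
  proof -
    have "fst V0 < fst (f V)" if "V \<in> set Vs" for V
    proof -
      have "V \<in> R" using that Vs(1) Vs(3) by (metis in_set_conv_nth)
      then have "0 \<le> fst V" using IP_ofD(2)[OF RI] by blast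
      then show ?thesis using r unfolding V0_def f_def by (simp add: sh_def)
    qed
    moreover have "sorted_wrt (\<lambda>V V'. fst V < fst V') (map f Vs)"
      using Vs(2) unfolding sorted_wrt_map by (rule sorted_wrt_mono_rel[rotated]) (simp add: f_def sh_def)
    ultimately show ?thesis unfolding Ws_def by simp
  qed
  have elems: "\<forall>i<length (p # ps). Ws ! i \<in> catP G C \<and> blen (Ws ! i) = snd ((p # ps) ! i) \<and>
        div_block \<alpha> (catP G C) (Ws ! i) = real (sum_list (take (Suc i) (map fst (p # ps)))) * q"
  proof (intro allI impI)
    fix i assume i: "i < length (p # ps)"
    show "Ws ! i \<in> catP G C \<and> blen (Ws ! i) = snd ((p # ps) ! i) \<and>
        div_block \<alpha> (catP G C) (Ws ! i) = real (sum_list (take (Suc i) (map fst (p # ps)))) * q"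
    proof (cases i)
      case 0 then show ?thesis using V0X V0b V0d p unfolding Ws_def by simp
    next
      case (Suc j)
      then have j: "j < length ps" using i by simp
      have Vj: "Vs ! j \<in> R" "blen (Vs ! j) = snd (ps ! j)"
        "div_block \<alpha> R (Vs ! j) = real (sum_list (take (Suc j) (map fst ps))) * q" using Vs(3)[OF j] by auto
      have W: "Ws ! Suc j = f (Vs ! j)" unfolding Ws_def using j Vs(1) by simp
      show ?thesis using fX[OF Vj(1)] Vj(2,3) p unfolding Suc W
        by (simp add: f_def blen_sh algebra_simps)
    qed
  qed
  have lenW: "length Ws = length (p # ps)" unfolding Ws_def using Vs(1) by simp
  have sumlen: "(\<Sum>p\<leftarrow>p # ps. real (fst p) * (c * gM \<alpha>) + snd p) + real kf * (c * gM \<alpha>)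
      = real k * m + (r + LR)"
    using IH p unfolding LR_def R_def m_def by simp
  have sumdiv: "(real (sum_list (map fst (p # ps))) + real kf) * q = real k * q + div_inf \<alpha> R"
    using IH p unfolding R_def q_def by (simp add: algebra_simps)
  have e1: "IPlen (catP G C) = (\<Sum>p\<leftarrow>p # ps. real (fst p) * (c * gM \<alpha>) + snd p) + real kf * (c * gM \<alpha>)"
    by (simp only: lenX sumlen)
  have e2: "div_inf \<alpha> (catP G C) = (real (sum_list (map fst (p # ps))) + real kf) * (c powr \<alpha> * Gamma (1 - \<alpha>))"
    using dX sumdiv unfolding q_def by simp
  have e3: "\<exists>Vs. length Vs = length (p # ps) \<and> sorted_wrt (\<lambda>V V'. fst V < fst V') Vs \<and>
      (\<forall>i<length (p # ps). Vs ! i \<in> catP G C \<and> blen (Vs ! i) = snd ((p # ps) ! i) \<and>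
        div_block \<alpha> (catP G C) (Vs ! i) = real (sum_list (take (Suc i) (map fst (p # ps)))) * (c powr \<alpha> * Gamma (1 - \<alpha>)))"
    using lenW sortedW elems unfolding q_def by blast
  show ?case unfolding X using memX e1 e2 e3 by blast
qed

fun diffs :: "nat \<Rightarrow> nat list \<Rightarrow> nat list" where
  "diffs p [] = []"
| "diffs p (x # xs) = (x - p) # diffs x xs"

lemma length_diffs[simp]: "length (diffs p xs) = length xs"
  by (induction p xs rule: diffs.induct) auto

lemma diffs_sum:
  "sorted (p # xs) \<Longrightarrow> i < length xs \<Longrightarrow> p + sum_list (take (Suc i) (diffs p xs)) = xs ! i"
proof (induction p xs arbitrary: i rule: diffs.induct)
  case (1 p) then show ?case by simp
next
  case (2 p x xs)
  then have px: "p \<le> x" and s: "sorted (x # xs)" by auto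
  show ?case
  proof (cases i)
    case 0 then show ?thesis using px by simp
  next
    case (Suc j)
    then have j: "j < length xs" using "2.prems"(2) by simp
    have "x + sum_list (take (Suc j) (diffs x xs)) = xs ! j" using "2.IH"[OF s j] .
    then show ?thesis using Suc px by simp
  qed
qed

lemma sum_list_zip_split:
  "length xs = length ys \<Longrightarrow>
   (\<Sum>p\<leftarrow>zip xs ys. f (fst p) + g (snd p)) = (\<Sum>x\<leftarrow>xs. f x) + (\<Sum>y\<leftarrow>ys. g y)"
  for f g :: "_ \<Rightarrow> real"
  by (induction xs ys rule: list_induct2) auto

lemma sum_list_real_mult: "(\<Sum>k\<leftarrow>ks. real k * m) = real (sum_list ks) * m"
  by (induction ks) (auto simp: algebra_simps)

lemma floor_approx:
  fixes D q :: real
  assumes "0 \<le> D" "0 < q"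
  shows "real (nat \<lfloor>D / q\<rfloor>) * q \<le> D" "D < real (nat \<lfloor>D / q\<rfloor>) * q + q"
proof -
  have f0: "0 \<le> \<lfloor>D / q\<rfloor>" using assms by simp
  then have e: "real (nat \<lfloor>D / q\<rfloor>) = real_of_int \<lfloor>D / q\<rfloor>" by simp
  have "real_of_int \<lfloor>D / q\<rfloor> \<le> D / q" by (rule of_int_floor_le)
  then have "real_of_int \<lfloor>D / q\<rfloor> * q \<le> D" using pos_le_divide_eq[OF assms(2)] by blast
  then show "real (nat \<lfloor>D / q\<rfloor>) * q \<le> D" unfolding e .
  have "D / q < real_of_int \<lfloor>D / q\<rfloor> + 1" by (rule real_of_int_floor_add_one_gt)
  then have "D < (real_of_int \<lfloor>D / q\<rfloor> + 1) * q" using pos_divide_less_eq[OF assms(2)] by blast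
  then show "D < real (nat \<lfloor>D / q\<rfloor>) * q + q" unfolding e by (simp add: algebra_simps)
qed

lemma floor_mono_nat:
  fixes D D' q :: real
  assumes "D \<le> D'" "0 < q"
  shows "nat \<lfloor>D / q\<rfloor> \<le> nat \<lfloor>D' / q\<rfloor>"
  using assms by (intro nat_mono floor_mono divide_right_mono) auto

lemma sorted_list_exists:
  assumes b: "IP_of \<beta> L" and F: "finite F" "F \<subseteq> \<beta>"
  shows "\<exists>us. set us = F \<and> distinct us \<and> sorted_wrt (\<lambda>U V. fst U < fst V) us"
proof -
  define S where "S = (\<lambda>U. (U, U)) ` F"
  have ch: "chain S" unfolding chain_def
  proof (intro ballI impI)
    fix p q assume pq: "p \<in> S" "q \<in> S" "p \<noteq> q"
    then obtain U V where UV: "U \<in> F" "V \<in> F" "p = (U,U)" "q = (V,V)" unfolding S_def by blast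
    then have "U \<noteq> V" using pq(3) by auto
    then have "fst U \<noteq> fst V" using fst_inj[OF b] UV(1,2) F(2) by blast
    then show "(fst (fst p) < fst (fst q) \<and> fst (snd p) < fst (snd q)) \<or>
        (fst (fst q) < fst (fst p) \<and> fst (snd q) < fst (snd p))" using UV by auto
  qed
  have "good \<beta> \<beta> S" unfolding good_def S_def using ch F S_def by auto
  then obtain \<sigma> where \<sigma>: "correspondence \<beta> \<beta> \<sigma>" "set \<sigma> = S" using good_corr by blast
  define us where "us = map fst \<sigma>"
  have sw: "sorted_wrt (\<lambda>(U,V) (U',V'). fst U < fst U' \<and> fst V < fst V') \<sigma>"
    using \<sigma>(1) by (simp add: correspondence_def)
  have "sorted_wrt (\<lambda>U V. fst U < fst V) us"
    unfolding us_def sorted_wrt_map by (rule sorted_wrt_mono_rel[OF _ sw]) auto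
  moreover have "set us = F" unfolding us_def set_map \<sigma>(2) S_def by (simp add: image_image)
  moreover have "distinct us" using calculation(1) by (rule sorted_wrt_distinct_irrefl) simp
  ultimately show ?thesis by blast
qed

lemma sum_list_nth: "sum_list (map f xs) = (\<Sum>i<length xs. f (xs ! i))" for f :: "_ \<Rightarrow> real"
  by (simp add: sum_list_sum_nth atLeast0LessThan)

lemma sum_set_zip:
  fixes f :: "_ \<Rightarrow> real"
  assumes "distinct us" "length Vs = length us"
  shows "sum f (set (zip us Vs)) = (\<Sum>i<length us. f (us ! i, Vs ! i))"
proof -
  have "sum f (set (zip us Vs)) = sum_list (map f (zip us Vs))"
    by (rule sum_list_distinct_conv_sum_set[symmetric]) (rule distinct_zipI1[OF assms(1)])
  also have "\<dots> = (\<Sum>i<length us. f (us ! i, Vs ! i))"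
    unfolding sum_list_nth using assms(2) by simp
  finally show ?thesis .
qed

lemma exists_small_rat:
  fixes \<alpha> A B e1 e2 :: real
  assumes a0: "0 < \<alpha>" "\<alpha> < 1" and e: "0 < e1" "0 < e2"
  shows "\<exists>c\<in>\<rat>. 0 < c \<and> c powr \<alpha> * A < e1 \<and> B * c powr (1 - \<alpha>) < e2"
proof -
  have l1: "((\<lambda>c. c powr \<alpha> * A) \<longlongrightarrow> 0) (at_right 0)"
    using tendsto_mult[OF powr_to_zero[OF a0(1)] tendsto_const[of A]] by simp
  have l2: "((\<lambda>c. B * c powr (1 - \<alpha>)) \<longlongrightarrow> 0) (at_right 0)"
    using tendsto_mult[OF tendsto_const[of B] powr_to_zero[of "1 - \<alpha>"]] a0 by simp
  have "eventually (\<lambda>c. c powr \<alpha> * A < e1) (at_right 0)" using order_tendstoD(2)[OF l1 e(1)] .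
  moreover have "eventually (\<lambda>c. B * c powr (1 - \<alpha>) < e2) (at_right 0)" using order_tendstoD(2)[OF l2 e(2)] .
  ultimately have "eventually (\<lambda>c. c powr \<alpha> * A < e1 \<and> B * c powr (1 - \<alpha>) < e2) (at_right (0::real))"
    by (rule eventually_conj)
  then obtain b where b: "0 < b" "\<And>y. 0 < y \<Longrightarrow> y < b \<Longrightarrow> y powr \<alpha> * A < e1 \<and> B * y powr (1 - \<alpha>) < e2"
    unfolding eventually_at_right_field by blast
  obtain c where c: "c \<in> \<rat>" "0 < c" "c < b" using Rats_dense_in_real[OF b(1)] by blast
  then show ?thesis using b(2)[of c] by blast
qed

lemma exists_rat_near:
  fixes b d :: real
  assumes "0 < b" "0 < d"
  shows "\<exists>r\<in>\<rat>. 0 < r \<and> \<bar>r - b\<bar> < d"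
proof -
  have "max 0 (b - d) < b + d" using assms by simp
  then obtain r where "r \<in> \<rat>" "max 0 (b - d) < r" "r < b + d" using Rats_dense_in_real by blast
  then show ?thesis by (intro bexI[of _ r]) auto
qed

lemma approx:
  fixes \<alpha> \<epsilon> :: real
  assumes a0: "0 < \<alpha>" and a1: "\<alpha> < 1" and bm: "\<beta> \<in> IPalpha \<alpha>" and e: "0 < \<epsilon>"
  shows "\<exists>c ps kf. c \<in> \<rat> \<and> 0 < c \<and> (\<forall>p\<in>set ps. snd p \<in> \<rat> \<and> 0 < snd p) \<and>
    d_alpha \<alpha> \<beta> (mk \<alpha> c ps kf) < \<epsilon>"
proof -
  define L where "L = IPlen \<beta>"
  have b: "IP_of \<beta> L" unfolding L_def by (rule IPalpha_IP[OF bm])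
  have hd: "has_diversity \<alpha> \<beta>" using bm by (simp add: IPalpha_def)
  define \<Gamma> where "\<Gamma> = Gamma (1 - \<alpha>)"
  have \<Gamma>: "0 < \<Gamma>" unfolding \<Gamma>_def using a1 by (intro Gamma_real_pos) simp
  define M where "M = gM \<alpha>"
  have M: "0 < M" unfolding M_def by (rule gM_pos[OF a0 a1])
  define Dinf where "Dinf = div_inf \<alpha> \<beta>"
  have Dinf: "0 \<le> Dinf" unfolding Dinf_def by (rule div_inf_nonneg[OF b hd a1])
  define \<eta> where "\<eta> = \<epsilon> / 8"
  have \<eta>: "0 < \<eta>" using e by (simp add: \<eta>_def)
  obtain F where F: "finite F" "F \<subseteq> \<beta>" "L - \<eta> < (\<Sum>U\<in>F. blen U)" using coverage[OF b \<eta>] by blast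
  obtain us where us: "set us = F" "distinct us" "sorted_wrt (\<lambda>U V. fst U < fst V) us"
    using sorted_list_exists[OF b F(1,2)] by blast
  define n where "n = length us"
  have usb: "us ! i \<in> \<beta>" if "i < n" for i using that F(2) us(1) unfolding n_def by auto
  define D where "D i = div_block \<alpha> \<beta> (us ! i)" for i
  have D0: "0 \<le> D i" if "i < n" for i unfolding D_def by (rule div_block_bounds(1)[OF b hd a1 usb[OF that]])
  have Dinf_ge: "D i \<le> Dinf" if "i < n" for i unfolding D_def Dinf_def by (rule div_block_bounds(2)[OF b hd a1 usb[OF that]])
  have Dmono: "D i \<le> D j" if "i \<le> j" "j < n" for i j
  proof (cases "i = j")
    case True then show ?thesis by simp
  next
    case False
    then have ij: "i < j" using that by simp
    have lt: "fst (us ! i) < fst (us ! j)" using sorted_wrt_nth_less[OF us(3) ij] that(2) n_def by simp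
    have ui: "us ! i \<in> \<beta>" and uj: "us ! j \<in> \<beta>" using usb that ij by auto
    have "snd (us ! i) \<le> fst (us ! j)" by (rule left_of[OF b uj ui lt])
    moreover have "fst (us ! i) < snd (us ! i)" "0 \<le> fst (us ! i)" "fst (us ! j) < snd (us ! j)" "snd (us ! j) \<le> L"
      using IP_ofD(2)[OF b ui] IP_ofD(2)[OF b uj] by auto
    ultimately have m: "0 \<le> (fst (us ! i) + snd (us ! i)) / 2" "(fst (us ! i) + snd (us ! i)) / 2 \<le> (fst (us ! j) + snd (us ! j)) / 2"
        "(fst (us ! j) + snd (us ! j)) / 2 \<le> L" by auto
    show ?thesis unfolding D_def div_block_def by (rule diversity_mono(2)[OF b hd a1 m])
  qed
  obtain c where c: "c \<in> \<rat>" "0 < c" "c powr \<alpha> * \<Gamma> < \<epsilon> / 2" "Dinf * M / \<Gamma> * c powr (1 - \<alpha>) < \<eta>"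
    using exists_small_rat[OF a0 a1, of "\<epsilon> / 2" \<eta> \<Gamma> "Dinf * M / \<Gamma>"] e \<eta> by auto
  define q where "q = c powr \<alpha> * \<Gamma>"
  have q: "0 < q" unfolding q_def using c(2) \<Gamma> by simp
  define K where "K x = nat \<lfloor>x / q\<rfloor>" for x
  define Kinf where "Kinf = K Dinf"
  define Kf where "Kf i = (if i < n then K (D i) else Kinf)" for i
  define xs where "xs = map Kf [0..<Suc n]"
  have Kmono: "K x \<le> K y" if "x \<le> y" for x y unfolding K_def by (rule floor_mono_nat[OF that q])
  have xs_sorted: "sorted xs" unfolding sorted_iff_nth_mono
  proof (intro allI impI)
    fix i j assume ij: "i \<le> j" "j < length xs"
    then have jn: "j \<le> n" unfolding xs_def by simp
    have "Kf i \<le> Kf j"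
    proof (cases "j < n")
      case True then show ?thesis using ij Kmono Dmono unfolding Kf_def by simp
    next
      case False
      then have "j = n" using jn by simp
      then show ?thesis using ij Kmono Dinf_ge unfolding Kf_def Kinf_def by auto
    qed
    then show "xs ! i \<le> xs ! j" using ij unfolding xs_def by (simp del: upt_Suc)
  qed
  define ks' where "ks' = diffs 0 xs"
  have lks': "length ks' = Suc n" unfolding ks'_def xs_def by simp
  have cum': "sum_list (take (Suc i) ks') = Kf i" if "i \<le> n" for i
  proof -
    have "0 + sum_list (take (Suc i) (diffs 0 xs)) = xs ! i"
      by (rule diffs_sum) (use xs_sorted that in \<open>auto simp: xs_def\<close>)
    then show ?thesis using that unfolding ks'_def xs_def by (simp del: upt_Suc)
  qed
  define ks where "ks = take n ks'"
  define kf where "kf = ks' ! n"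
  have lks: "length ks = n" unfolding ks_def using lks' by simp
  have cum: "sum_list (take (Suc i) ks) = K (D i)" if "i < n" for i
  proof -
    have "take (Suc i) ks = take (Suc i) ks'" unfolding ks_def using that by (simp add: min_def)
    then show ?thesis using cum'[of i] that unfolding Kf_def by simp
  qed
  have total: "sum_list ks + kf = Kinf"
  proof -
    have "take (Suc n) ks' = ks @ [kf]" unfolding ks_def kf_def
      by (rule take_Suc_conv_app_nth) (simp add: lks')
    then have "sum_list (take (Suc n) ks') = sum_list ks + kf" by simp
    then show ?thesis using cum'[of n] unfolding Kf_def by simp
  qed
  define \<delta> where "\<delta> = \<eta> / (real n + 1)"
  have \<delta>: "0 < \<delta>" unfolding \<delta>_def using \<eta> by simp
  have "\<forall>i. \<exists>r. i < n \<longrightarrow> r \<in> \<rat> \<and> 0 < r \<and> \<bar>r - blen (us ! i)\<bar> < \<delta>"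
  proof
    fix i show "\<exists>r. i < n \<longrightarrow> r \<in> \<rat> \<and> 0 < r \<and> \<bar>r - blen (us ! i)\<bar> < \<delta>"
    proof (cases "i < n")
      case True
      then show ?thesis using exists_rat_near[OF blen_pos[OF b usb[OF True]] \<delta>] by blast
    qed simp
  qed
  then obtain rf where rf: "\<And>i. i < n \<Longrightarrow> rf i \<in> \<rat> \<and> 0 < rf i \<and> \<bar>rf i - blen (us ! i)\<bar> < \<delta>"
    by metis
  define rs where "rs = map rf [0..<n]"
  define ps where "ps = zip ks rs"
  have lrs: "length rs = n" unfolding rs_def by simp
  have lps: "length ps = n" unfolding ps_def using lks lrs by simp
  have ps_nth: "ps ! i = (ks ! i, rf i)" if "i < n" for i unfolding ps_def rs_def using that lks by simp
  have ps_pos: "\<forall>p\<in>set ps. snd p \<in> \<rat> \<and> 0 < snd p"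
  proof
    fix p assume "p \<in> set ps"
    then obtain i where "i < n" "p = ps ! i" using lps by (metis in_set_conv_nth)
    then show "snd p \<in> \<rat> \<and> 0 < snd p" using ps_nth rf by simp
  qed
  then have ps_pos': "\<forall>p\<in>set ps. 0 < snd p" by blast
  define \<gamma> where "\<gamma> = mk \<alpha> c ps kf"
  note mp = mk_props[OF a0 a1 c(2) ps_pos', of kf]
  have gm: "\<gamma> \<in> IPalpha \<alpha>" using mp unfolding \<gamma>_def by blast
  have map_fst: "map fst ps = ks" unfolding ps_def using lks lrs by simp
  have glen: "IPlen \<gamma> = real (sum_list ks) * (c * M) + sum_list rs + real kf * (c * M)"
  proof -
    have "(\<Sum>p\<leftarrow>ps. real (fst p) * (c * gM \<alpha>) + snd p) = (\<Sum>k\<leftarrow>ks. real k * (c * gM \<alpha>)) + (\<Sum>r\<leftarrow>rs. r)"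
      unfolding ps_def by (rule sum_list_zip_split) (simp add: lks lrs)
    then show ?thesis using mp unfolding \<gamma>_def M_def sum_list_real_mult by simp
  qed
  have gdiv: "div_inf \<alpha> \<gamma> = real Kinf * q"
    using mp total unfolding \<gamma>_def map_fst q_def \<Gamma>_def by (simp flip: of_nat_add)
  obtain Vs where Vs: "length Vs = n" "sorted_wrt (\<lambda>V V'. fst V < fst V') Vs"
    "\<And>i. i < n \<Longrightarrow> Vs ! i \<in> \<gamma> \<and> blen (Vs ! i) = rf i \<and> div_block \<alpha> \<gamma> (Vs ! i) = real (K (D i)) * q"
  proof -
    from mp obtain Vs where "length Vs = length ps" "sorted_wrt (\<lambda>V V'. fst V < fst V') Vs"
      "\<forall>i<length ps. Vs ! i \<in> mk \<alpha> c ps kf \<and> blen (Vs ! i) = snd (ps ! i) \<and>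
        div_block \<alpha> (mk \<alpha> c ps kf) (Vs ! i) = real (sum_list (take (Suc i) (map fst ps))) * (c powr \<alpha> * Gamma (1 - \<alpha>))"
      by blast
    then show ?thesis using that lps ps_nth cum unfolding \<gamma>_def map_fst q_def \<Gamma>_def by auto
  qed
  define S where "S = set (zip us Vs)"
  have lus: "length us = n" unfolding n_def ..
  have sumS: "sum f S = (\<Sum>i<n. f (us ! i, Vs ! i))" for f :: "_ \<Rightarrow> real"
    unfolding S_def using sum_set_zip[OF us(2), of Vs f] Vs(1) lus by simp
  have gS: "good \<beta> \<gamma> S"
  proof -
    have "S \<subseteq> \<beta> \<times> \<gamma>"
    proof
      fix p assume "p \<in> S"
      then obtain i where "i < n" "p = (us ! i, Vs ! i)" unfolding S_def using Vs(1) lus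
        by (auto simp: in_set_zip)
      then show "p \<in> \<beta> \<times> \<gamma>" using usb Vs(3) by auto
    qed
    moreover have "chain S" unfolding chain_def
    proof (intro ballI impI)
      fix p p' assume pp: "p \<in> S" "p' \<in> S" "p \<noteq> p'"
      then obtain i j where ij: "i < n" "p = (us ! i, Vs ! i)" "j < n" "p' = (us ! j, Vs ! j)"
        unfolding S_def using Vs(1) lus by (auto simp: in_set_zip)
      then have "i \<noteq> j" using pp(3) by auto
      then consider "i < j" | "j < i" by linarith
      then show "(fst (fst p) < fst (fst p') \<and> fst (snd p) < fst (snd p')) \<or>
          (fst (fst p') < fst (fst p) \<and> fst (snd p') < fst (snd p))"
      proof cases
        case 1 then show ?thesis using sorted_wrt_nth_less[OF us(3) 1] sorted_wrt_nth_less[OF Vs(2) 1]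
          ij Vs(1) lus by auto
      next
        case 2 then show ?thesis using sorted_wrt_nth_less[OF us(3) 2] sorted_wrt_nth_less[OF Vs(2) 2]
          ij Vs(1) lus by auto
      qed
    qed
    ultimately show ?thesis unfolding good_def S_def by simp
  qed
  have A: "(\<Sum>p\<in>S. \<bar>blen (fst p) - blen (snd p)\<bar>) \<le> \<eta>"
  proof -
    have "(\<Sum>p\<in>S. \<bar>blen (fst p) - blen (snd p)\<bar>) = (\<Sum>i<n. \<bar>blen (us ! i) - rf i\<bar>)"
      unfolding sumS using Vs(3) by simp
    also have "\<dots> \<le> (\<Sum>i<n. \<delta>)"
      by (rule sum_mono) (use rf in \<open>simp add: abs_minus_commute less_imp_le\<close>)
    also have "\<dots> = real n * \<delta>" by simp
    also have "\<dots> \<le> \<eta>" unfolding \<delta>_def using \<eta> by (simp add: field_simps)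
    finally show ?thesis .
  qed
  have S1: "(\<Sum>p\<in>S. blen (fst p)) = (\<Sum>U\<in>F. blen U)"
  proof -
    have "(\<Sum>p\<in>S. blen (fst p)) = (\<Sum>i<n. blen (us ! i))" unfolding sumS by simp
    also have "\<dots> = sum_list (map blen us)" unfolding sum_list_nth lus ..
    also have "\<dots> = (\<Sum>U\<in>F. blen U)" using sum_list_distinct_conv_sum_set[OF us(2)] us(1) by simp
    finally show ?thesis .
  qed
  have S2: "(\<Sum>p\<in>S. blen (snd p)) = sum_list rs"
  proof -
    have "(\<Sum>p\<in>S. blen (snd p)) = (\<Sum>i<n. rf i)" unfolding sumS using Vs(3) by simp
    also have "\<dots> = sum_list rs" unfolding rs_def sum_list_nth by simp
    finally show ?thesis .
  qed
  have mass: "real Kinf * (c * M) \<le> \<eta>"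
  proof -
    have Kq: "real Kinf * q \<le> Dinf" unfolding Kinf_def K_def by (rule floor_approx(1)[OF Dinf q])
    have "real Kinf * (c * M) = (real Kinf * q) * (c * M / q)" using q by simp
    also have "\<dots> \<le> Dinf * (c * M / q)" using Kq c(2) M q by (intro mult_right_mono) auto
    also have cc: "c / c powr \<alpha> = c powr (1 - \<alpha>)" using c(2) by (simp add: powr_diff)
    have "Dinf * (c * M / q) = Dinf * M / \<Gamma> * (c / c powr \<alpha>)"
      unfolding q_def using c(2) \<Gamma> by (simp add: field_simps)
    then have "Dinf * (c * M / q) = Dinf * M / \<Gamma> * c powr (1 - \<alpha>)" unfolding cc .
    finally show ?thesis using c(4) by simp
  qed
  have err: "\<bar>x - real (K x) * q\<bar> < \<epsilon> / 2" if "0 \<le> x" for x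
  proof -
    have "real (K x) * q \<le> x" "x < real (K x) * q + q" unfolding K_def using floor_approx[OF that q] by auto
    then have "\<bar>x - real (K x) * q\<bar> < q" by simp
    then show ?thesis using c(3) unfolding q_def by simp
  qed
  have "distS \<alpha> \<beta> \<gamma> S \<le> \<epsilon> / 2"
  proof (rule distS_le)
    show "finite S" using gS by (simp add: good_def)
    show "(\<Sum>p\<in>S. \<bar>blen (fst p) - blen (snd p)\<bar>) + IPlen \<beta> - (\<Sum>p\<in>S. blen (fst p)) \<le> \<epsilon> / 2"
      using A S1 F(3) e unfolding L_def[symmetric] \<eta>_def by linarith
    have "IPlen \<gamma> - sum_list rs = real Kinf * (c * M)"
    proof -
      have "real Kinf = real (sum_list ks) + real kf" using total by (metis of_nat_add)
      then show ?thesis unfolding glen by (simp add: algebra_simps)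
    qed
    then show "(\<Sum>p\<in>S. \<bar>blen (fst p) - blen (snd p)\<bar>) + IPlen \<gamma> - (\<Sum>p\<in>S. blen (snd p)) \<le> \<epsilon> / 2"
      using A S2 mass e unfolding \<eta>_def by linarith
    show "\<bar>div_inf \<alpha> \<beta> - div_inf \<alpha> \<gamma>\<bar> \<le> \<epsilon> / 2"
      using err[OF Dinf] unfolding gdiv Dinf_def Kinf_def by simp
    fix p assume "p \<in> S"
    then obtain i where i: "i < n" "p = (us ! i, Vs ! i)" unfolding S_def using Vs(1) lus
      by (auto simp: in_set_zip)
    show "\<bar>div_block \<alpha> \<beta> (fst p) - div_block \<alpha> \<gamma> (snd p)\<bar> \<le> \<epsilon> / 2"
      using err[OF D0[OF i(1)]] Vs(3)[OF i(1)] i(2) unfolding D_def by simp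
  qed
  then have "d_alpha \<alpha> \<beta> \<gamma> < \<epsilon>" using d_alpha_le[OF gS, of \<alpha>] e by simp
  then show ?thesis using c(1,2) ps_pos unfolding \<gamma>_def by blast
qed

definition Cset :: "real \<Rightarrow> (real \<times> real) set set" where
  "Cset \<alpha> = (\<lambda>(c, ps, kf). mk \<alpha> (real_of_rat c) (map (\<lambda>(k, r). (k, real_of_rat r)) ps) kf)
      ` (UNIV :: (rat \<times> (nat \<times> rat) list \<times> nat) set) \<inter> IPalpha \<alpha>"

lemma countable_Cset: "countable (Cset \<alpha>)"
  unfolding Cset_def by simp

lemma rat_list_repr:
  assumes "\<forall>p\<in>set ps. snd p \<in> \<rat>"
  shows "\<exists>ps'. ps = map (\<lambda>(k, r). (k, real_of_rat r)) ps'"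
  using assms
proof (induction ps)
  case Nil then show ?case by simp
next
  case (Cons p ps)
  then obtain ps' where ps': "ps = map (\<lambda>(k, r). (k, real_of_rat r)) ps'" by auto
  have "snd p \<in> \<rat>" using Cons.prems by simp
  then obtain q where q: "snd p = real_of_rat q" by (auto simp: Rats_def)
  have "p # ps = map (\<lambda>(k, r). (k, real_of_rat r)) ((fst p, q) # ps')" using ps' q by (cases p) simp
  then show ?case by (rule exI)
qed

lemma IPalpha_separable:
  assumes a0: "0 < \<alpha>" and a1: "\<alpha> < 1"
  shows "separable_space (Metric_space.mtopology (IPalpha \<alpha>) (d_alpha \<alpha>))"
proof -
  interpret M: Metric_space "IPalpha \<alpha>" "d_alpha \<alpha>" by (rule IPalpha_metric)
  have sub: "Cset \<alpha> \<subseteq> IPalpha \<alpha>" unfolding Cset_def by blast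
  have "M.mtopology closure_of Cset \<alpha> = IPalpha \<alpha>"
    unfolding M.metric_closure_of
  proof (intro equalityI subsetI)
    fix x assume "x \<in> {x \<in> IPalpha \<alpha>. \<forall>r>0. \<exists>y\<in>Cset \<alpha>. y \<in> M.mball x r}"
    then show "x \<in> IPalpha \<alpha>" by blast
  next
    fix \<beta> assume bm: "\<beta> \<in> IPalpha \<alpha>"
    have "\<exists>y\<in>Cset \<alpha>. y \<in> M.mball \<beta> r" if r: "0 < r" for r
    proof -
      obtain c ps kf where c: "c \<in> \<rat>" "0 < c" "\<forall>p\<in>set ps. snd p \<in> \<rat> \<and> 0 < snd p"
        "d_alpha \<alpha> \<beta> (mk \<alpha> c ps kf) < r"
        using approx[OF a0 a1 bm r] by blast
      have ym: "mk \<alpha> c ps kf \<in> IPalpha \<alpha>"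
        using mk_props[OF a0 a1 c(2), of ps kf] c(3) by blast
      obtain c' where c': "c = real_of_rat c'" using c(1) by (auto simp: Rats_def)
      obtain ps' where ps': "ps = map (\<lambda>(k, r). (k, real_of_rat r)) ps'"
        using rat_list_repr c(3) by blast
      have "mk \<alpha> c ps kf \<in> Cset \<alpha>" unfolding Cset_def c' ps' using ym c' ps'
        by (intro IntI) (auto intro!: image_eqI[of _ _ "(c', ps', kf)"])
      moreover have "mk \<alpha> c ps kf \<in> M.mball \<beta> r" using bm ym c(4) by simp
      ultimately show ?thesis by blast
    qed
    then show "\<beta> \<in> {x \<in> IPalpha \<alpha>. \<forall>r>0. \<exists>y\<in>Cset \<alpha>. y \<in> M.mball x r}" using bm by blast
  qed
  then show ?thesis unfolding separable_space_def using countable_Cset sub by auto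
qed

theorem lemma3p6:
  fixes \<alpha> :: real
  assumes "0 < \<alpha>" and "\<alpha> < 1"
  shows "Metric_space (IPalpha \<alpha>) (d_alpha \<alpha>)
    \<and> path_connected_space (Metric_space.mtopology (IPalpha \<alpha>) (d_alpha \<alpha>))
    \<and> separable_space (Metric_space.mtopology (IPalpha \<alpha>) (d_alpha \<alpha>))"
  using IPalpha_metric IPalpha_path_connected[OF assms] IPalpha_separable[OF assms] by blast

end
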